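(* Let $\mathcal{C}$ be an abelian braided monoidal category with unit object $I$ and braiding $\psi$, not necessarily symmetric. Let $H$ be a Hopf algebra in $\mathcal{C}$ (multiplication $m$, unit $\eta$, comultiplication $\Delta$, counit $\varepsilon$, antipode $S$) such that $\psi_{H, H}\psi_{H, H}=\mathrm{id}_{H\otimes H}$, and let $(\delta,\sigma)$ be a braided modular pair in involution for $H$. Define $C^0(H)=I$ and $C^n(H)=H^{\otimes n}$ for $n\ge1$, and morphisms \[\delta_i=\begin{cases}\eta\otimes 1_H\otimes\cdots\otimes 1_H, & i=0,\\ 1_H\otimes\cdots\otimes 1_H\otimes\underset{i\text{-th}}{\Delta}\otimes 1_H\otimes\cdots\otimes 1_H, & 1\le i\le n-1,\\ 1_H\otimes\cdots\otimes 1_H\otimes\sigma, & i=n,\end{cases}\qquad (\delta_i: C^{n-1}(H)\to C^n(H)),\] \[\sigma_i=1_H\otimes\cdots\otimes 1_H\otimes\underset{(i+1)\text{-th}}{\varepsilon}\otimes 1_H\otimes\cdots\otimes 1_H,\quad 0\le i\le n\qquad (\sigma_i:C^{n+1}(H)\to C^n(H)),\] \[\tau_0=\mathrm{id}_I,\qquad \tau_n=m_n\circ\big(\Delta^{n-1}\widetilde{S}\otimes 1_{H^{\otimes(n-1)}}\otimes\sigma\big)\ (n\ge1),\] where $m_1=m$ and, for $n\ge2$, $m_n=(m\otimes m\otimes\cdots\otimes m)\circ\mathcal{F}_n(\psi): H^{\otimes 2n}\to H^{\otimes n}$ ($n$ copies of $m$) with $\mathcal{F}_n(\psi)=f_1\circ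 f_2\circ\cdots\circ f_{n-1}$, $f_j=1_{H^{\otimes j}}\otimes\underbrace{\psi_{H,H}\otimes\cdots\otimes\psi_{H,H}}_{n-j}\otimes 1_{H^{\otimes j}}$. Then $(C^\bullet(H),\delta_i,\sigma_i,\tau_n)$ is a cocyclic object in $\mathcal{C}$.
   Context: A Hopf algebra $H$ in a braided monoidal category $\mathcal{C}$ is an object with morphisms $m,\eta,\Delta,\varepsilon,S$ making it an algebra and a coalgebra, with $\Delta,\varepsilon$ algebra morphisms for the braided tensor product algebra (i.e. $\Delta m=(m\otimes m)(1_H\otimes\psi_{H,H}\otimes 1_H)(\Delta\otimes\Delta)$), and with $m(S\otimes 1)\Delta=m(1\otimes S)\Delta=\eta\varepsilon$. $\Delta^{k}: H\to H^{\otimes(k+1)}$ denotes the iterated coproduct ($\Delta^0=1_H$, $\Delta^{k}=(\Delta\otimes 1_{H^{\otimes(k-1)}})\Delta^{k-1}$). A braided modular pair in involution (BMPI) $(\delta,\sigma)$ for $H$ consists of a character $\delta:H\to I$ (an algebra morphism) and a group-like element $\sigma:I\to H$ (a coalgebra morphism, i.e. $\Delta\sigma=\sigma\otimes\sigma$, $\varepsilon\sigma=\mathrm{id}_I$) with $\delta\sigma=\mathrm{id}_I$, such that the twisted antipode $\widetilde{S}=(\delta\otimes S)\Delta:H\to H$ satisfies $\widetilde{S}^2=m(m\otimes 1_H)(\sigma\otimes 1_H\otimes S\sigma)$, i.e. $\widetilde S^2(h)=\sigma h\sigma^{-1}$. A cocyclic object is a cosimplicial object (cofaces $\delta_i$,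 codegeneracies $\sigma_i$ satisfying the cosimplicial identities) together with morphisms $\tau_n$ satisfying $\tau_n\delta_i=\delta_{i-1}\tau_{n-1}$ for $1\le i\le n$, $\tau_n\delta_0=\delta_n$, $\tau_n\sigma_i=\sigma_{i-1}\tau_{n+1}$ for $1\le i\le n$, $\tau_n\sigma_0=\sigma_n\tau_{n+1}^2$, and $\tau_n^{n+1}=\mathrm{id}$. *)

theory Defs
  imports Main
begin

text \<open>Every element of 'm is a morphism with domain Dom f and codomain Cod f.
  Comp C g f is the composite g after f (only meaningful when Cod f = Dom g).\<close>

record ('o, 'm) bmcat =
  Dom   :: "'m \<Rightarrow> 'o"
  Cod   :: "'m \<Rightarrow> 'o"
  Comp  :: "'m \<Rightarrow> 'm \<Rightarrow> 'm"
  Id    :: "'o \<Rightarrow> 'm"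
  TObj  :: "'o \<Rightarrow> 'o \<Rightarrow> 'o"
  Unit  :: "'o"
  TMor  :: "'m \<Rightarrow> 'm \<Rightarrow> 'm"
  Braid :: "'o \<Rightarrow> 'o \<Rightarrow> 'm"

locale strict_braided_monoidal_cat =
  fixes C :: "('o, 'm) bmcat"
  assumes comp_dom: "Cod C f = Dom C g \<Longrightarrow> Dom C (Comp C g f) = Dom C f"
    and comp_cod: "Cod C f = Dom C g \<Longrightarrow> Cod C (Comp C g f) = Cod C g"
    and comp_assoc: "\<lbrakk>Cod C f = Dom C g; Cod C g = Dom C h\<rbrakk> \<Longrightarrow>
                        Comp C h (Comp C g f) = Comp C (Comp C h g) f"
    and id_dom: "Dom C (Id C A) = A"
    and id_cod: "Cod C (Id C A) = A"
    and comp_id_right: "Comp C f (Id C (Dom C f)) = f"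
    and comp_id_left: "Comp C (Id C (Cod C f)) f = f"
    and tobj_assoc: "TObj C (TObj C A B) D = TObj C A (TObj C B D)"
    and tobj_unit_left: "TObj C (Unit C) A = A"
    and tobj_unit_right: "TObj C A (Unit C) = A"
    and tmor_dom: "Dom C (TMor C f g) = TObj C (Dom C f) (Dom C g)"
    and tmor_cod: "Cod C (TMor C f g) = TObj C (Cod C f) (Cod C g)"
    and tmor_id: "TMor C (Id C A) (Id C B) = Id C (TObj C A B)"
    and tmor_interchange: "\<lbrakk>Cod C f = Dom C g; Cod C f' = Dom C g'\<rbrakk> \<Longrightarrow>
          Comp C (TMor C g g') (TMor C f f') = TMor C (Comp C g f) (Comp C g' f')"
    and tmor_assoc: "TMor C (TMor C f g) h = TMor C f (TMor C g h)"
    and tmor_unit_left: "TMor C (Id C (Unit C)) f = f"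
    and tmor_unit_right: "TMor C f (Id C (Unit C)) = f"
    and braid_dom: "Dom C (Braid C A B) = TObj C A B"
    and braid_cod: "Cod C (Braid C A B) = TObj C B A"
    and braid_natural: "Comp C (Braid C (Cod C f) (Cod C g)) (TMor C f g)
                        = Comp C (TMor C g f) (Braid C (Dom C f) (Dom C g))"
    and braid_invertible: "\<exists>g. Dom C g = TObj C B A \<and> Cod C g = TObj C A B \<and>
                        Comp C g (Braid C A B) = Id C (TObj C A B) \<and>
                        Comp C (Braid C A B) g = Id C (TObj C B A)"
    and braid_hexagon1: "Braid C (TObj C A B) D
          = Comp C (TMor C (Braid C A D) (Id C B)) (TMor C (Id C A) (Braid C B D))"
    and braid_hexagon2: "Braid C A (TObj C B D)
          = Comp C (TMor C (Id C B) (Braid C A D)) (TMor C (Braid C A B) (Id C D))"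

primrec tpow :: "('o, 'm, 'x) bmcat_scheme \<Rightarrow> 'o \<Rightarrow> nat \<Rightarrow> 'o" where
  "tpow C A 0 = Unit C"
| "tpow C A (Suc n) = TObj C A (tpow C A n)"

primrec tpowm :: "('o, 'm, 'x) bmcat_scheme \<Rightarrow> 'm \<Rightarrow> nat \<Rightarrow> 'm" where
  "tpowm C f 0 = Id C (Unit C)"
| "tpowm C f (Suc n) = TMor C f (tpowm C f n)"

definition idp :: "('o, 'm, 'x) bmcat_scheme \<Rightarrow> 'o \<Rightarrow> nat \<Rightarrow> 'm" where
  "idp C A n = Id C (tpow C A n)"

primrec comps :: "('o, 'm, 'x) bmcat_scheme \<Rightarrow> 'o \<Rightarrow> 'm list \<Rightarrow> 'm" where
  "comps C A [] = Id C A"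
| "comps C A (g # gs) = Comp C g (comps C A gs)"

primrec cpow :: "('o, 'm, 'x) bmcat_scheme \<Rightarrow> 'o \<Rightarrow> 'm \<Rightarrow> nat \<Rightarrow> 'm" where
  "cpow C A f 0 = Id C A"
| "cpow C A f (Suc n) = Comp C f (cpow C A f n)"

primrec iter_comult :: "('o, 'm, 'x) bmcat_scheme \<Rightarrow> 'o \<Rightarrow> 'm \<Rightarrow> nat \<Rightarrow> 'm" where
  "iter_comult C H Dl 0 = Id C H"
| "iter_comult C H Dl (Suc k) = Comp C (TMor C Dl (idp C H k)) (iter_comult C H Dl k)"

definition hopf_algebra ::
  "('o, 'm, 'x) bmcat_scheme \<Rightarrow> 'o \<Rightarrow> 'm \<Rightarrow> 'm \<Rightarrow> 'm \<Rightarrow> 'm \<Rightarrow> 'm \<Rightarrow> bool" where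
  "hopf_algebra C H m eta Dl eps S \<longleftrightarrow>
     Dom C m = TObj C H H \<and> Cod C m = H \<and>
     Dom C eta = Unit C \<and> Cod C eta = H \<and>
     Dom C Dl = H \<and> Cod C Dl = TObj C H H \<and>
     Dom C eps = H \<and> Cod C eps = Unit C \<and>
     Dom C S = H \<and> Cod C S = H \<and>
     \<comment> \<open>algebra\<close>
     Comp C m (TMor C m (Id C H)) = Comp C m (TMor C (Id C H) m) \<and>
     Comp C m (TMor C eta (Id C H)) = Id C H \<and>
     Comp C m (TMor C (Id C H) eta) = Id C H \<and>
     \<comment> \<open>coalgebra\<close>
     Comp C (TMor C Dl (Id C H)) Dl = Comp C (TMor C (Id C H) Dl) Dl \<and>
     Comp C (TMor C eps (Id C H)) Dl = Id C H \<and>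
     Comp C (TMor C (Id C H) eps) Dl = Id C H \<and>
     \<comment> \<open>Delta and eps are algebra morphisms (braided tensor product algebra)\<close>
     Comp C Dl m = Comp C (TMor C m m)
        (Comp C (TMor C (Id C H) (TMor C (Braid C H H) (Id C H))) (TMor C Dl Dl)) \<and>
     Comp C Dl eta = TMor C eta eta \<and>
     Comp C eps m = TMor C eps eps \<and>
     Comp C eps eta = Id C (Unit C) \<and>
     \<comment> \<open>antipode\<close>
     Comp C m (Comp C (TMor C S (Id C H)) Dl) = Comp C eta eps \<and>
     Comp C m (Comp C (TMor C (Id C H) S) Dl) = Comp C eta eps"

definition twisted_antipode :: "('o, 'm, 'x) bmcat_scheme \<Rightarrow> 'm \<Rightarrow> 'm \<Rightarrow> 'm \<Rightarrow> 'm" where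
  "twisted_antipode C Dl S dl = Comp C (TMor C dl S) Dl"

definition bmpi ::
  "('o, 'm, 'x) bmcat_scheme \<Rightarrow> 'o \<Rightarrow> 'm \<Rightarrow> 'm \<Rightarrow> 'm \<Rightarrow> 'm \<Rightarrow> 'm \<Rightarrow> 'm \<Rightarrow> 'm \<Rightarrow> bool" where
  "bmpi C H m eta Dl eps S dl sg \<longleftrightarrow>
     Dom C dl = H \<and> Cod C dl = Unit C \<and>
     Dom C sg = Unit C \<and> Cod C sg = H \<and>
     \<comment> \<open>delta is a character (algebra morphism)\<close>
     Comp C dl m = TMor C dl dl \<and> Comp C dl eta = Id C (Unit C) \<and>
     \<comment> \<open>sigma is group-like (coalgebra morphism)\<close>
     Comp C Dl sg = TMor C sg sg \<and> Comp C eps sg = Id C (Unit C) \<and>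
     Comp C dl sg = Id C (Unit C) \<and>
     Comp C (twisted_antipode C Dl S dl) (twisted_antipode C Dl S dl)
       = Comp C m (Comp C (TMor C m (Id C H)) (TMor C sg (TMor C (Id C H) (Comp C S sg))))"

text \<open>X n is the n-th object, d n i : X (n-1) -> X n (n \<ge> 1, i \<le> n) the cofaces,
  s n i : X (n+1) -> X n (i \<le> n) the codegeneracies, t n : X n -> X n the cyclic operators.\<close>

definition cocyclic_object ::
  "('o, 'm, 'x) bmcat_scheme \<Rightarrow> (nat \<Rightarrow> 'o) \<Rightarrow> (nat \<Rightarrow> nat \<Rightarrow> 'm) \<Rightarrow> (nat \<Rightarrow> nat \<Rightarrow> 'm)
     \<Rightarrow> (nat \<Rightarrow> 'm) \<Rightarrow> bool" where
  "cocyclic_object C X d s t \<longleftrightarrow>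
     \<comment> \<open>typing\<close>
     (\<forall>n i. 1 \<le> n \<and> i \<le> n \<longrightarrow> Dom C (d n i) = X (n - 1) \<and> Cod C (d n i) = X n) \<and>
     (\<forall>n i. i \<le> n \<longrightarrow> Dom C (s n i) = X (Suc n) \<and> Cod C (s n i) = X n) \<and>
     (\<forall>n. Dom C (t n) = X n \<and> Cod C (t n) = X n) \<and>
     \<comment> \<open>cosimplicial identities\<close>
     (\<forall>n i j. 1 \<le> n \<and> i < j \<and> j \<le> n + 1 \<longrightarrow>
        Comp C (d (n + 1) j) (d n i) = Comp C (d (n + 1) i) (d n (j - 1))) \<and>
     (\<forall>n i j. i \<le> j \<and> j \<le> n \<longrightarrow>
        Comp C (s n j) (s (n + 1) i) = Comp C (s n i) (s (n + 1) (j + 1))) \<and>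
     (\<forall>n i j. j \<le> n \<and> i \<le> n + 1 \<longrightarrow>
        Comp C (s n j) (d (n + 1) i) =
          (if i < j then Comp C (d n i) (s (n - 1) (j - 1))
           else if i = j \<or> i = j + 1 then Id C (X n)
           else Comp C (d n (i - 1)) (s (n - 1) j))) \<and>
     \<comment> \<open>cyclic identities\<close>
     (\<forall>n i. 1 \<le> i \<and> i \<le> n \<longrightarrow> Comp C (t n) (d n i) = Comp C (d n (i - 1)) (t (n - 1))) \<and>
     (\<forall>n. 1 \<le> n \<longrightarrow> Comp C (t n) (d n 0) = d n n) \<and>
     (\<forall>n i. 1 \<le> i \<and> i \<le> n \<longrightarrow> Comp C (t n) (s n i) = Comp C (s n (i - 1)) (t (n + 1))) \<and>
     (\<forall>n. Comp C (t n) (s n 0) = Comp C (s n n) (Comp C (t (n + 1)) (t (n + 1)))) \<and>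
     (\<forall>n. cpow C (X n) (t n) (n + 1) = Id C (X n))"

definition CH :: "('o, 'm, 'x) bmcat_scheme \<Rightarrow> 'o \<Rightarrow> nat \<Rightarrow> 'o" where
  "CH C H n = (if n = 0 then Unit C else tpow C H n)"

definition CH_coface ::
  "('o, 'm, 'x) bmcat_scheme \<Rightarrow> 'o \<Rightarrow> 'm \<Rightarrow> 'm \<Rightarrow> 'm \<Rightarrow> nat \<Rightarrow> nat \<Rightarrow> 'm" where
  "CH_coface C H eta Dl sg n i =
     (if i = 0 then TMor C eta (idp C H (n - 1))
      else if i = n then TMor C (idp C H (n - 1)) sg
      else TMor C (idp C H (i - 1)) (TMor C Dl (idp C H (n - 1 - i))))"

definition CH_codeg :: "('o, 'm, 'x) bmcat_scheme \<Rightarrow> 'o \<Rightarrow> 'm \<Rightarrow> nat \<Rightarrow> nat \<Rightarrow> 'm" where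
  "CH_codeg C H eps n i = TMor C (idp C H i) (TMor C eps (idp C H (n - i)))"

definition braid_f :: "('o, 'm, 'x) bmcat_scheme \<Rightarrow> 'o \<Rightarrow> nat \<Rightarrow> nat \<Rightarrow> 'm" where
  "braid_f C H n j = TMor C (idp C H j) (TMor C (tpowm C (Braid C H H) (n - j)) (idp C H j))"

definition braid_F :: "('o, 'm, 'x) bmcat_scheme \<Rightarrow> 'o \<Rightarrow> nat \<Rightarrow> 'm" where
  "braid_F C H n = comps C (tpow C H (2 * n)) (map (braid_f C H n) [1..<n])"

definition mult_n :: "('o, 'm, 'x) bmcat_scheme \<Rightarrow> 'o \<Rightarrow> 'm \<Rightarrow> nat \<Rightarrow> 'm" where
  "mult_n C H m n = (if n = 1 then m else Comp C (tpowm C m n) (braid_F C H n))"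

definition CH_cyc ::
  "('o, 'm, 'x) bmcat_scheme \<Rightarrow> 'o \<Rightarrow> 'm \<Rightarrow> 'm \<Rightarrow> 'm \<Rightarrow> 'm \<Rightarrow> 'm \<Rightarrow> nat \<Rightarrow> 'm" where
  "CH_cyc C H m Dl S dl sg n =
     (if n = 0 then Id C (Unit C)
      else Comp C (mult_n C H m n)
             (TMor C (Comp C (iter_comult C H Dl (n - 1)) (twisted_antipode C Dl S dl))
                     (TMor C (idp C H (n - 1)) sg)))"

end

theory Submission
  imports Defs
begin

declare tpow.simps[simp del]
declare One_nat_def[simp] numeral_2_eq_2[simp] numeral_3_eq_3[simp] numeral_eq_Suc[simp] pred_numeral_simps[simp]

locale bsetup = strict_braided_monoidal_cat C
  for C :: "('o,'m) bmcat" +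
  fixes H :: 'o and m eta Dl eps S dl sg :: 'm
  assumes hopf: "hopf_algebra C H m eta Dl eps S"
  and symm: "Comp C (Braid C H H) (Braid C H H) = Id C (TObj C H H)"
  and pair: "bmpi C H m eta Dl eps S dl sg"
begin

abbreviation P where "P k \<equiv> tpow C H k"
abbreviation cmp (infixr "\<bullet>" 55) where "g \<bullet> f \<equiv> Comp C g f"
abbreviation tns (infixr "\<otimes>" 70) where "f \<otimes> g \<equiv> TMor C f g"
abbreviation idn where "idn k \<equiv> Id C (P k)"
abbreviation B where "B a b \<equiv> Braid C (P a) (P b)"
abbreviation i1 where "i1 \<equiv> idn (Suc 0)"
abbreviation BH where "BH \<equiv> B (Suc 0) (Suc 0)"
abbreviation hom where "hom f a b \<equiv> Dom C f = P a \<and> Cod C f = P b"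

lemma P_add[simp]: "TObj C (P a) (P b) = P (a+b)"
  by (induction a) (simp_all add: tpow.simps tobj_assoc tobj_unit_left)

lemma P_Suc: "P (Suc n) = TObj C H (P n)" by (simp add: tpow.simps)
lemma P1: "P 1 = H" by (simp add: tpow.simps tobj_unit_right)
lemma Unit_P[simp]: "Unit C = P 0" by (simp add: tpow.simps)

lemma dom_comp[simp]: "Cod C f = Dom C g \<Longrightarrow> Dom C (g \<bullet> f) = Dom C f" by (rule comp_dom)
lemma cod_comp[simp]: "Cod C f = Dom C g \<Longrightarrow> Cod C (g \<bullet> f) = Cod C g" by (rule comp_cod)
declare tmor_dom[simp] tmor_cod[simp] id_dom[simp] id_cod[simp] braid_dom[simp] braid_cod[simp]

lemma assoc[simp]: "Cod C f = Dom C g \<Longrightarrow> Cod C g = Dom C h \<Longrightarrow> (h \<bullet> g) \<bullet> f = h \<bullet> (g \<bullet> f)"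
  by (simp add: comp_assoc)
lemma idl[simp]: "Cod C f = X \<Longrightarrow> Id C X \<bullet> f = f" using comp_id_left by blast
lemma idr[simp]: "Dom C f = X \<Longrightarrow> f \<bullet> Id C X = f" using comp_id_right by blast
lemma tid[simp]: "Id C (P a) \<otimes> Id C (P b) = idn (a+b)" using tmor_id P_add by metis
lemma tassoc[simp]: "(f \<otimes> g) \<otimes> h = f \<otimes> (g \<otimes> h)" by (rule tmor_assoc)
lemma tunitl[simp]: "idn 0 \<otimes> f = f" using tmor_unit_left by simp
lemma tunitr[simp]: "f \<otimes> idn 0 = f" using tmor_unit_right by simp
lemma idsplit[simp]: "idn (Suc (Suc k)) \<otimes> X = i1 \<otimes> (idn (Suc k) \<otimes> X)"
proof -
  have a: "(i1 \<otimes> idn (Suc k)) \<otimes> X = i1 \<otimes> (idn (Suc k) \<otimes> X)" by (rule tmor_assoc)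
  have b: "i1 \<otimes> idn (Suc k) = idn (Suc (Suc k))" using tid[of "Suc 0" "Suc k"] by simp
  show ?thesis using a b by metis
qed
lemma tidl: "idn a \<otimes> (idn b \<otimes> f) = idn (a+b) \<otimes> f"
  by (subst tassoc[symmetric]) (simp only: tid)

lemma inter: "Cod C f = Dom C g \<Longrightarrow> Cod C f' = Dom C g' \<Longrightarrow> (g \<otimes> g') \<bullet> (f \<otimes> f') = (g \<bullet> f) \<otimes> (g' \<bullet> f')"
  by (rule tmor_interchange)
lemma inter'[simp]: "Cod C f = Dom C g \<Longrightarrow> Cod C f' = Dom C g' \<Longrightarrow> (g \<otimes> g') \<bullet> (f \<otimes> f') = (g \<bullet> f) \<otimes> (g' \<bullet> f')"
  by (rule tmor_interchange)
lemma inter2[simp]: "Cod C f = Dom C g \<Longrightarrow> Cod C f' = Dom C g' \<Longrightarrow> Cod C k = TObj C (Dom C f) (Dom C f') \<Longrightarrow>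
  (g \<otimes> g') \<bullet> ((f \<otimes> f') \<bullet> k) = ((g \<bullet> f) \<otimes> (g' \<bullet> f')) \<bullet> k"
  using comp_assoc[of k "f \<otimes> f'" "g \<otimes> g'"] tmor_interchange[of f g f' g'] by simp



lemma hopf1: "hopf_algebra C (P 1) m eta Dl eps S" by (simp only: P1 hopf)
lemma pair1: "bmpi C (P 1) m eta Dl eps S dl sg" by (simp only: P1 pair)
lemma symm1: "Comp C (B 1 1) (B 1 1) = Id C (TObj C (P 1) (P 1))" by (simp only: P1 symm)

lemma hopf_facts:
  "Dom C m = P 2" "Cod C m = P 1" "Dom C eta = P 0" "Cod C eta = P 1"
  "Dom C Dl = P 1" "Cod C Dl = P 2" "Dom C eps = P 1" "Cod C eps = P 0"
  "Dom C S = P 1" "Cod C S = P 1"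
  using hopf1 unfolding hopf_algebra_def by simp_all
declare hopf_facts[simp]

lemma bmpi_facts: "Dom C dl = P 1" "Cod C dl = P 0" "Dom C sg = P 0" "Cod C sg = P 1"
  using pair1 unfolding bmpi_def by simp_all
declare bmpi_facts[simp]

lemma m_assoc: "m \<bullet> (m \<otimes> i1) = m \<bullet> (i1 \<otimes> m)"
  and m_unitl: "m \<bullet> (eta \<otimes> i1) = i1"
  and m_unitr: "m \<bullet> (i1 \<otimes> eta) = i1"
  and Dl_coassoc: "(Dl \<otimes> i1) \<bullet> Dl = (i1 \<otimes> Dl) \<bullet> Dl"
  and counitl: "(eps \<otimes> i1) \<bullet> Dl = i1"
  and counitr: "(i1 \<otimes> eps) \<bullet> Dl = i1"
  and Dl_m: "Dl \<bullet> m = (m \<otimes> m) \<bullet> ((i1 \<otimes> BH \<otimes> i1) \<bullet> (Dl \<otimes> Dl))"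
  and Dl_eta: "Dl \<bullet> eta = eta \<otimes> eta"
  and eps_m: "eps \<bullet> m = eps \<otimes> eps"
  and eps_eta: "eps \<bullet> eta = idn 0"
  and antiL: "m \<bullet> ((S \<otimes> i1) \<bullet> Dl) = eta \<bullet> eps"
  and antiR: "m \<bullet> ((i1 \<otimes> S) \<bullet> Dl) = eta \<bullet> eps"
  using hopf1 unfolding hopf_algebra_def by simp_all

lemma symm'[simp]: "BH \<bullet> BH = idn (Suc (Suc 0))" using symm1 by simp

lemma dl_m: "dl \<bullet> m = dl \<otimes> dl" and dl_eta: "dl \<bullet> eta = idn 0"
  and Dl_sg: "Dl \<bullet> sg = sg \<otimes> sg" and eps_sg: "eps \<bullet> sg = idn 0"
  and dl_sg: "dl \<bullet> sg = idn 0"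
  and mpi: "twisted_antipode C Dl S dl \<bullet> twisted_antipode C Dl S dl
       = m \<bullet> ((m \<otimes> i1) \<bullet> (sg \<otimes> i1 \<otimes> (S \<bullet> sg)))"
  using pair1 unfolding bmpi_def by simp_all

lemma dom_cod_B[simp]: "Dom C (B a b) = P (a+b)" "Cod C (B a b) = P (b+a)" by simp_all

lemma split_l: "Cod C f = P b \<Longrightarrow> Dom C f = P a \<Longrightarrow> Dom C g = P c \<Longrightarrow> Cod C g = P d \<Longrightarrow>
   f \<otimes> g = (f \<otimes> idn d) \<bullet> (idn a \<otimes> g)"
  by (simp add: inter)
lemma split_r: "Cod C f = P b \<Longrightarrow> Dom C f = P a \<Longrightarrow> Dom C g = P c \<Longrightarrow> Cod C g = P d \<Longrightarrow>
   f \<otimes> g = (idn b \<otimes> g) \<bullet> (f \<otimes> idn c)"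
  by (simp add: inter)

lemma hex1: "B (a+b) c = (B a c \<otimes> idn b) \<bullet> (idn a \<otimes> B b c)"
  using braid_hexagon1[of "P a" "P b" "P c"] by simp
lemma hex2: "B a (b+c) = (idn b \<otimes> B a c) \<bullet> (B a b \<otimes> idn c)"
  using braid_hexagon2[of "P a" "P b" "P c"] by simp
lemma nat_B: "Dom C f = P a \<Longrightarrow> Cod C f = P c \<Longrightarrow> Dom C g = P b \<Longrightarrow> Cod C g = P d \<Longrightarrow>
   B c d \<bullet> (f \<otimes> g) = (g \<otimes> f) \<bullet> B a b"
  using braid_natural[of f g] by simp

lemma B0l[simp]: "B 0 a = idn a"
proof -
  have e: "B 0 a = B 0 a \<bullet> B 0 a" using hex1[of 0 0 a] by simp
  obtain g where g: "Dom C g = P a" "Cod C g = P a" "g \<bullet> B 0 a = idn a"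
    using braid_invertible[where A="P 0" and B="P a"] by auto
  have "B 0 a = idn a \<bullet> B 0 a" by simp
  also have "\<dots> = (g \<bullet> B 0 a) \<bullet> B 0 a" using g by simp
  also have "\<dots> = g \<bullet> (B 0 a \<bullet> B 0 a)" using g by (simp del: assoc add: comp_assoc)
  also have "\<dots> = idn a" using g e by simp
  finally show ?thesis .
qed
lemma B0r[simp]: "B a 0 = idn a"
proof -
  have e: "B a 0 = B a 0 \<bullet> B a 0" using hex2[of a 0 0] by simp
  obtain g where g: "Dom C g = P a" "Cod C g = P a" "g \<bullet> B a 0 = idn a"
    using braid_invertible[where A="P a" and B="P 0"] by auto
  have "B a 0 = idn a \<bullet> B a 0" by simp
  also have "\<dots> = (g \<bullet> B a 0) \<bullet> B a 0" using g by simp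
  also have "\<dots> = g \<bullet> (B a 0 \<bullet> B a 0)" using g by (simp del: assoc add: comp_assoc)
  also have "\<dots> = idn a" using g e by simp
  finally show ?thesis .
qed

lemma sym1: "B b 1 \<bullet> B 1 b = idn (1+b)"
proof (induction b)
  case 0 then show ?case by simp
next
  case (Suc b)
  have h2: "B 1 (1+b) = (i1 \<otimes> B 1 b) \<bullet> (BH \<otimes> idn b)" using hex2[of 1 1 b] by simp
  have h1: "B (1+b) 1 = (BH \<otimes> idn b) \<bullet> (i1 \<otimes> B b 1)" using hex1[of 1 b 1] by simp
  have "B (1+b) 1 \<bullet> B 1 (1+b) = (BH \<otimes> idn b) \<bullet> ((i1 \<otimes> B b 1) \<bullet> ((i1 \<otimes> B 1 b) \<bullet> (BH \<otimes> idn b)))"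
    unfolding h1 h2 by (simp add: ac_simps)
  also have "\<dots> = (BH \<otimes> idn b) \<bullet> ((i1 \<otimes> (B b 1 \<bullet> B 1 b)) \<bullet> (BH \<otimes> idn b))"
    by (simp add: ac_simps)
  also have "\<dots> = idn (2+b)" using Suc by (simp add: ac_simps symm')
  finally show ?case by (simp add: ac_simps)
qed

end

context bsetup begin

lemma BHH[simp]: "Braid C H H = BH" by (metis P1 One_nat_def)
lemma idnH[simp]: "Id C H = i1" by (metis P1 One_nat_def)
lemma HH[simp]: "TObj C H H = P (Suc (Suc 0))" by (metis P1 P_add One_nat_def one_add_one numeral_2_eq_2)

lemma idn_split: "idn (a+b) = idn a \<otimes> idn b" by simp

lemma symB: "B b a \<bullet> B a b = idn (a+b)"
proof (induction a)
  case 0 then show ?case by simp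
next
  case (Suc a)
  have h1: "B (1+a) b = (B 1 b \<otimes> idn a) \<bullet> (i1 \<otimes> B a b)" using hex1[of 1 a b] by simp
  have h2: "B b (1+a) = (i1 \<otimes> B b a) \<bullet> (B b 1 \<otimes> idn a)" using hex2[of b 1 a] by simp
  have "B b (1+a) \<bullet> B (1+a) b = (i1 \<otimes> B b a) \<bullet> ((B b 1 \<otimes> idn a) \<bullet> ((B 1 b \<otimes> idn a) \<bullet> (i1 \<otimes> B a b)))"
    unfolding h1 h2 by (simp add: ac_simps)
  also have "\<dots> = (i1 \<otimes> B b a) \<bullet> (((B b 1 \<bullet> B 1 b) \<otimes> idn a) \<bullet> (i1 \<otimes> B a b))"
    by (simp add: ac_simps)
  also have "\<dots> = idn (1+a+b)" using Suc sym1[of b] by (simp add: ac_simps)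
  finally show ?case by (simp add: ac_simps)
qed

lemma dom_tpowm[simp]: "Dom C f = P x \<Longrightarrow> Dom C (tpowm C f k) = P (k*x)"
  by (induction k) simp_all
lemma cod_tpowm[simp]: "Cod C f = P x \<Longrightarrow> Cod C (tpowm C f k) = P (k*x)"
  by (induction k) simp_all
lemma tpowm_add: "tpowm C f (a+b) = tpowm C f a \<otimes> tpowm C f b"
  by (induction a) simp_all

abbreviation F where "F n \<equiv> braid_F C H n"
abbreviation M where "M n \<equiv> mult_n C H m n"
abbreviation TP where "TP n \<equiv> tpowm C BH n"

lemma braid_f_typ[simp]: "j \<le> n \<Longrightarrow> Dom C (braid_f C H n j) = P (2*n)"
  "j \<le> n \<Longrightarrow> Cod C (braid_f C H n j) = P (2*n)"
  unfolding braid_f_def idp_def by simp_all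

lemma comps_typ: "(\<forall>g\<in>set gs. Dom C g = X \<and> Cod C g = X) \<Longrightarrow> Dom C (comps C X gs) = X \<and> Cod C (comps C X gs) = X"
  by (induction gs) auto

lemma F_typ[simp]: "Dom C (F n) = P (2*n)" "Cod C (F n) = P (2*n)"
  using comps_typ[of "map (braid_f C H n) [1..<n]" "P (2*n)"]
  unfolding braid_F_def by auto

lemma comps_wrap: "(\<forall>g\<in>set gs. Dom C g = P k \<and> Cod C g = P k) \<Longrightarrow>
   comps C (P (Suc (k + 1))) (map (\<lambda>g. i1 \<otimes> g \<otimes> i1) gs) = i1 \<otimes> comps C (P k) gs \<otimes> i1"
proof (induction gs)
  case Nil then show ?case by simp
next
  case (Cons g gs)
  then have t: "Dom C (comps C (P k) gs) = P k \<and> Cod C (comps C (P k) gs) = P k"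
    using comps_typ[of gs "P k"] by auto
  show ?case using Cons t by simp
qed

lemma F_outer: "F (Suc n) = (i1 \<otimes> TP n \<otimes> i1) \<bullet> (i1 \<otimes> F n \<otimes> i1)"
proof (cases n)
  case 0 then show ?thesis unfolding braid_F_def by simp
next
  case (Suc k)
  have l: "[1..<Suc n] = 1 # map Suc [1..<n]" using Suc by (simp add: upt_conv_Cons map_Suc_upt)
  have eq: "map (braid_f C H (Suc n)) (map Suc [1..<n]) = map (\<lambda>g. i1 \<otimes> g \<otimes> i1) (map (braid_f C H n) [1..<n])"
    by (auto simp: braid_f_def idp_def tidl)
  have ty: "\<forall>g\<in>set (map (braid_f C H n) [1..<n]). Dom C g = P (2*n) \<and> Cod C g = P (2*n)" by auto
  have "F (Suc n) = braid_f C H (Suc n) 1 \<bullet> comps C (P (2 * Suc n)) (map (braid_f C H (Suc n)) (map Suc [1..<n]))"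
    unfolding braid_F_def l by simp
  also have "\<dots> = (i1 \<otimes> TP n \<otimes> i1) \<bullet> (i1 \<otimes> F n \<otimes> i1)"
    unfolding eq using comps_wrap[OF ty] by (simp add: braid_f_def idp_def braid_F_def)
  finally show ?thesis .
qed


lemma TP_typ[simp]: "Dom C (TP n) = P (2*n)" "Cod C (TP n) = P (2*n)" by simp_all

definition W where "W k f r = idn k \<otimes> f \<otimes> idn r"

lemma W_typ[simp]: "Dom C (W k f r) = TObj C (P k) (TObj C (Dom C f) (P r))"
  "Cod C (W k f r) = TObj C (P k) (TObj C (Cod C f) (P r))"
  unfolding W_def by simp_all

lemma W_split: "Cod C f = Dom C g \<Longrightarrow> W k (g \<bullet> f) r = W k g r \<bullet> W k f r"
  unfolding W_def by simp
lemma W_nest: "W k (W k' f r') r = W (k+k') f (r'+r)"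
  unfolding W_def by (simp add: tidl)
lemma W_tensor: "Dom C f = P p \<Longrightarrow> Cod C f = P q \<Longrightarrow> Dom C g = P p' \<Longrightarrow> Cod C g = P q' \<Longrightarrow>
   W k (f \<otimes> g) r = W k f (q'+r) \<bullet> W (k+p) g r"
  unfolding W_def by (simp add: tidl[symmetric])
lemma W_tensor': "Dom C f = P p \<Longrightarrow> Cod C f = P q \<Longrightarrow> Dom C g = P p' \<Longrightarrow> Cod C g = P q' \<Longrightarrow>
   W k (f \<otimes> g) r = W (k+q) g r \<bullet> W k f (p'+r)"
  unfolding W_def by (simp add: tidl[symmetric])
lemma W_comm: "Dom C f = P p \<Longrightarrow> Cod C f = P q \<Longrightarrow> Dom C g = P p' \<Longrightarrow> Cod C g = P q' \<Longrightarrow>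
   W k f (j+q'+r) \<bullet> W (k+p+j) g r = W (k+q+j) g r \<bullet> W k f (j+p'+r)"
proof -
  assume a: "Dom C f = P p" "Cod C f = P q" "Dom C g = P p'" "Cod C g = P q'"
  have "W k f (j+q'+r) \<bullet> W (k+p+j) g r = W k (f \<otimes> (idn j \<otimes> g)) r"
    using a W_tensor[of f p q "idn j \<otimes> g" "j+p'" "j+q'" k r] by (simp add: W_nest ac_simps W_def tidl)
  also have "\<dots> = W (k+q+j) g r \<bullet> W k f (j+p'+r)"
    using a W_tensor'[of f p q "idn j \<otimes> g" "j+p'" "j+q'" k r] by (simp add: W_nest ac_simps W_def tidl)
  finally show ?thesis .
qed
lemma W_id[simp]: "W k (idn p) r = idn (k+p+r)" unfolding W_def by (simp add: tidl ac_simps)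
lemma W0[simp]: "W 0 f 0 = f" unfolding W_def by simp
lemma W_conv: "idn k \<otimes> f \<otimes> idn r = W k f r" "f \<otimes> idn r = W 0 f r" "idn k \<otimes> f = W k f 0"
  unfolding W_def by simp_all

lemma ctxE: "g \<bullet> f = e \<Longrightarrow> g' = g \<Longrightarrow> f' = f \<Longrightarrow> Cod C h = Dom C f \<Longrightarrow> Cod C f = Dom C g \<Longrightarrow> g' \<bullet> (f' \<bullet> h) = e \<bullet> h"
  by (metis comp_assoc)
lemma ctxT: "g \<bullet> f = e \<Longrightarrow> g' = g \<Longrightarrow> f' = f \<Longrightarrow> g' \<bullet> f' = e"
  by simp

lemma ctx: "g \<bullet> f = e \<Longrightarrow> Cod C h = Dom C f \<Longrightarrow> Cod C f = Dom C g \<Longrightarrow> g \<bullet> (f \<bullet> h) = e \<bullet> h"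
  by (metis comp_assoc)


lemma F_in: "F (Suc n) = W 1 (TP n \<bullet> F n) 1"
  using F_outer[of n] unfolding W_def by simp

lemma F_front: "F (Suc n) = W 2 (F n) 0 \<bullet> W 1 (B n 1) n"
proof (induction n)
  case 0 then show ?case using F_outer[of 0] unfolding braid_F_def W_def by simp
next
  case (Suc n)
  have h1: "B (Suc n) 1 = W 0 BH n \<bullet> W 1 (B n 1) 0" using hex1[of 1 n 1] unfolding W_def by simp
  have t1: "W 1 (BH \<otimes> TP n) 1 = W 1 BH (2*n+1) \<bullet> W 3 (TP n) 1"
    using W_tensor[of BH 2 2 "TP n" "2*n" "2*n" 1 1] by simp
  have c1: "W 1 BH (0+2*n+1) \<bullet> W (1+2+0) (TP n \<bullet> F n) 1 = W (1+2+0) (TP n \<bullet> F n) 1 \<bullet> W 1 BH (0+2*n+1)"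
    by (rule W_comm) (simp_all add: ac_simps)
  have "F (Suc (Suc n)) = W 1 (TP (Suc n)) 1 \<bullet> W 1 (F (Suc n)) 1" using F_outer[of "Suc n"] unfolding W_def by simp
  also have "\<dots> = (W 1 BH (2*n+1) \<bullet> W 3 (TP n) 1) \<bullet> (W 3 (F n) 1 \<bullet> W 2 (B n 1) (n+1))"
    unfolding Suc using t1 by (simp add: W_split W_nest ac_simps)
  also have "\<dots> = W 1 BH (2*n+1) \<bullet> W 3 (TP n \<bullet> F n) 1 \<bullet> W 2 (B n 1) (n+1)"
    by (simp add: W_split)
  also have "\<dots> = W 3 (TP n \<bullet> F n) 1 \<bullet> W 1 BH (2*n+1) \<bullet> W 2 (B n 1) (n+1)"
    using c1 by (simp add: ctx[OF c1[simplified]])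
  also have "\<dots> = W 2 (F (Suc n)) 0 \<bullet> W 1 (B (Suc n) 1) (Suc n)"
    unfolding F_in h1 by (simp add: W_split W_nest ac_simps)
  finally show ?case .
qed


lemma F0: "F 0 = idn 0" unfolding braid_F_def by simp
lemma F1: "F (Suc 0) = idn (Suc (Suc 0))" unfolding braid_F_def by simp

lemma hex1W: "B (a+b) c = W 0 (B a c) b \<bullet> W a (B b c) 0" using hex1 unfolding W_def by simp
lemma hex2W: "B a (b+c) = W b (B a c) 0 \<bullet> W 0 (B a b) c" using hex2 unfolding W_def by simp


lemma F_add: "F (a+b) = W 0 (F a) (2*b) \<bullet> W (2*a) (F b) 0 \<bullet> W a (B b a) b"
proof (induction a)
  case 0 then show ?case by (simp add: F0 W_def)
next
  case (Suc a)
  have h2: "W (Suc a) (B b (Suc a)) b = W (a+2) (B b a) b \<bullet> W (a+1) (B b 1) (a+b)"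
    using hex2W[of b 1 a] by (simp add: W_split W_nest ac_simps)
  have h1: "W 1 (B (a+b) 1) (a+b) = W 1 (B a 1) (b+a+b) \<bullet> W (1+a) (B b 1) (a+b)"
    using hex1W[of a b 1] by (simp add: W_split W_nest ac_simps)
  have c1: "W 1 (B a 1) (a+2*b+0) \<bullet> W (1+(a+1)+a) (F b) 0 = W (1+(a+1)+a) (F b) 0 \<bullet> W 1 (B a 1) (a+2*b+0)"
    by (rule W_comm) (simp_all add: ac_simps)
  have c2: "W 1 (B a 1) (0+(a+b)+b) \<bullet> W (1+(a+1)+0) (B b a) b = W (1+(a+1)+0) (B b a) b \<bullet> W 1 (B a 1) (0+(a+b)+b)"
    by (rule W_comm) (simp_all add: ac_simps)
  have "F (Suc a + b) = W 2 (F (a+b)) 0 \<bullet> W 1 (B (a+b) 1) (a+b)" using F_front[of "a+b"] by simp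
  also have "\<dots> = W 2 (F a) (2*b) \<bullet> W (2+2*a) (F b) 0 \<bullet> W (2+a) (B b a) b \<bullet> W 1 (B a 1) (b+a+b) \<bullet> W (1+a) (B b 1) (a+b)"
    unfolding Suc h1 by (simp add: W_split W_nest ac_simps)
  also have "\<dots> = W 2 (F a) (2*b) \<bullet> W (2+2*a) (F b) 0 \<bullet> W 1 (B a 1) (b+a+b) \<bullet> W (a+2) (B b a) b \<bullet> W (1+a) (B b 1) (a+b)"
    by (simp add: ctxE[OF c2[symmetric]] ac_simps)
  also have "\<dots> = W 2 (F a) (2*b) \<bullet> W 1 (B a 1) (b+a+b) \<bullet> W (2+2*a) (F b) 0 \<bullet> W (a+2) (B b a) b \<bullet> W (1+a) (B b 1) (a+b)"
    by (simp add: ctxE[OF c1] ac_simps)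
  also have "\<dots> = W 0 (F (Suc a)) (2*b) \<bullet> W (2*Suc a) (F b) 0 \<bullet> W (Suc a) (B b (Suc a)) b"
    unfolding h2 F_front by (simp add: W_split W_nest ac_simps)
  finally show ?case .
qed

lemma M_def': "M n = tpowm C m n \<bullet> F n"
  unfolding mult_n_def by (simp add: F1)

lemma M_typ[simp]: "Dom C (M n) = P (2*n)" "Cod C (M n) = P n"
  unfolding M_def' by simp_all

lemma M0: "M 0 = idn 0" unfolding M_def' by (simp add: F0)
lemma M1: "M (Suc 0) = m" unfolding mult_n_def by simp

lemma M_add: "M (a+b) = (M a \<otimes> M b) \<bullet> W a (B b a) b"
proof -
  have "M (a+b) = (tpowm C m a \<otimes> tpowm C m b) \<bullet> (W 0 (F a) (2*b) \<bullet> W (2*a) (F b) 0) \<bullet> W a (B b a) b"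
    unfolding M_def' F_add tpowm_add by (simp add: ac_simps)
  also have "\<dots> = (tpowm C m a \<otimes> tpowm C m b) \<bullet> (F a \<otimes> F b) \<bullet> W a (B b a) b"
    using W_tensor[of "F a" "2*a" "2*a" "F b" "2*b" "2*b" 0 0] by simp
  also have "\<dots> = (M a \<otimes> M b) \<bullet> W a (B b a) b"
    unfolding M_def' by (simp add: inter ac_simps)
  finally show ?thesis .
qed

end

context bsetup begin
declare idp_def[simp] iter_comult.simps(2)[simp del]

lemma W_comm2: "Dom C f = P p \<Longrightarrow> Cod C f = P q \<Longrightarrow> Dom C g = P p' \<Longrightarrow> Cod C g = P q' \<Longrightarrow>
   W (k+q+j) g r \<bullet> W k f (j+p'+r) = W k f (j+q'+r) \<bullet> W (k+p+j) g r"
  using W_comm by metis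

lemma natW: "Dom C f = P p \<Longrightarrow> Cod C f = P q \<Longrightarrow> Dom C g = P p' \<Longrightarrow> Cod C g = P q' \<Longrightarrow>
   W k (B q q') r \<bullet> W k (f \<otimes> g) r = W k (g \<otimes> f) r \<bullet> W k (B p p') r"
  using nat_B[of f p q g p' q'] by (simp add: W_split[symmetric])

lemma W_merge: "Cod C f = Dom C g \<Longrightarrow> W k g r \<bullet> W k f r = W k (g \<bullet> f) r"
  by (simp add: W_split)

abbreviation u where "u n \<equiv> tpowm C eta n"

declare add_ac[simp]

lemma M_assoc_add:
  assumes A: "M a \<bullet> W 0 (M a) a = M a \<bullet> W a (M a) 0"
      and Bb: "M b \<bullet> W 0 (M b) b = M b \<bullet> W b (M b) 0"
  shows "M (a+b) \<bullet> W 0 (M (a+b)) (a+b) = M (a+b) \<bullet> W (a+b) (M (a+b)) 0"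
proof -
  have Mab: "M (a+b) = W 0 (M a) b \<bullet> W (2*a) (M b) 0 \<bullet> W a (B b a) b"
    using M_add[of a b] W_tensor[of "M a" "2*a" a "M b" "2*b" b 0 0] by simp
  have c1: "W (0+a+0) (B b a) b \<bullet> W 0 (M a) (0+(a+b)+b) = W 0 (M a) (0+(a+b)+b) \<bullet> W (0+2*a+0) (B b a) b"
    by (rule W_comm2) (simp_all add: ac_simps)
  have n1: "W (2*a) (B b a) b \<bullet> W (2*a) (M b) (a+b) = W (3*a) (M b) b \<bullet> W (2*a) (B (2*b) a) b"
  proof -
    have "W (2*a) (M b) (a+b) = W (2*a) (M b \<otimes> idn a) b" by (simp add: W_def ac_simps)
    moreover have "W (2*a) (B b a) b \<bullet> W (2*a) (M b \<otimes> idn a) b = W (2*a) (idn a \<otimes> M b) b \<bullet> W (2*a) (B (2*b) a) b"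
      using natW[of "M b" "2*b" b "idn a" a a "2*a" b] by simp
    moreover have "W (2*a) (idn a \<otimes> M b) b = W (3*a) (M b) b" by (simp add: W_def ac_simps tidl)
    ultimately show ?thesis by simp
  qed
  have c2: "W (0+a+a) (M b) 0 \<bullet> W 0 (M a) (a+2*b+0) = W 0 (M a) (a+b+0) \<bullet> W (0+2*a+a) (M b) 0"
    by (rule W_comm2) (simp_all add: ac_simps)
  have "M (a+b) \<bullet> W 0 (M (a+b)) (a+b) =
     W 0 (M a) b \<bullet> W (2*a) (M b) 0 \<bullet> W a (B b a) b \<bullet> W 0 (M a) (b+(a+b)) \<bullet> W (2*a) (M b) (a+b) \<bullet> W a (B b a) (b+(a+b))"
    unfolding Mab by (simp add: W_split W_nest ac_simps)
  also have "\<dots> = W 0 (M a) b \<bullet> W (2*a) (M b) 0 \<bullet> W 0 (M a) (a+2*b) \<bullet> W (2*a) (B b a) b \<bullet> W (2*a) (M b) (a+b) \<bullet> W a (B b a) (a+2*b)"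
    by (simp add: ctxE[OF c1] ac_simps)
  also have "\<dots> = W 0 (M a) b \<bullet> W (2*a) (M b) 0 \<bullet> W 0 (M a) (a+2*b) \<bullet> W (3*a) (M b) b \<bullet> W (2*a) (B (2*b) a) b \<bullet> W a (B b a) (a+2*b)"
    by (simp add: ctxE[OF n1] ac_simps)
  also have "\<dots> = W 0 (M a) b \<bullet> W 0 (M a) (a+b) \<bullet> W (3*a) (M b) 0 \<bullet> W (3*a) (M b) b \<bullet> W (2*a) (B (2*b) a) b \<bullet> W a (B b a) (a+2*b)"
    by (simp add: ctxE[OF c2] ac_simps)
  also have "\<dots> = W 0 (M a \<bullet> W 0 (M a) a) b \<bullet> W (3*a) (M b \<bullet> W 0 (M b) b) 0 \<bullet> W (2*a) (B (2*b) a) b \<bullet> W a (B b a) (a+2*b)"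
    by (simp add: W_split W_nest ac_simps)
  finally have L: "M (a+b) \<bullet> W 0 (M (a+b)) (a+b) = W 0 (M a \<bullet> W 0 (M a) a) b \<bullet> W (3*a) (M b \<bullet> W 0 (M b) b) 0 \<bullet> W (2*a) (B (2*b) a) b \<bullet> W a (B b a) (a+2*b)" .

  have n2: "W a (B b a) b \<bullet> W (a+b) (M a) b = W a (M a) (b+b) \<bullet> W a (B b (2*a)) b"
  proof -
    have "W (a+b) (M a) b = W a (idn b \<otimes> M a) b" by (simp add: W_def ac_simps tidl)
    moreover have "W a (B b a) b \<bullet> W a (idn b \<otimes> M a) b = W a (M a \<otimes> idn b) b \<bullet> W a (B b (2*a)) b"
      using natW[of "idn b" b b "M a" "2*a" a a b] by simp
    moreover have "W a (M a \<otimes> idn b) b = W a (M a) (b+b)" by (simp add: W_def ac_simps tidl)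
    ultimately show ?thesis by simp
  qed
  have c3: "W (a+a+0) (M b) 0 \<bullet> W a (M a) (0+2*b+0) = W a (M a) (0+b+0) \<bullet> W (a+2*a+0) (M b) 0"
    by (rule W_comm2) (simp_all add: ac_simps)
  have c4: "W a (B b (2*a)) (0+b+0) \<bullet> W (a+(b+2*a)+0) (M b) 0 = W (a+(2*a+b)+0) (M b) 0 \<bullet> W a (B b (2*a)) (0+2*b+0)"
    by (rule W_comm) (simp_all add: ac_simps)
  have "M (a+b) \<bullet> W (a+b) (M (a+b)) 0 =
     W 0 (M a) b \<bullet> W (2*a) (M b) 0 \<bullet> W a (B b a) b \<bullet> W (a+b) (M a) b \<bullet> W (a+b+2*a) (M b) 0 \<bullet> W (a+b+a) (B b a) b"
    unfolding Mab by (simp add: W_split W_nest ac_simps)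
  also have "\<dots> = W 0 (M a) b \<bullet> W (2*a) (M b) 0 \<bullet> W a (M a) (b+b) \<bullet> W a (B b (2*a)) b \<bullet> W (a+b+2*a) (M b) 0 \<bullet> W (a+b+a) (B b a) b"
    by (simp add: ctxE[OF n2] ac_simps)
  also have "\<dots> = W 0 (M a) b \<bullet> W a (M a) b \<bullet> W (3*a) (M b) 0 \<bullet> W a (B b (2*a)) b \<bullet> W (a+b+2*a) (M b) 0 \<bullet> W (a+b+a) (B b a) b"
    by (simp add: ctxE[OF c3] ac_simps)
  also have "\<dots> = W 0 (M a) b \<bullet> W a (M a) b \<bullet> W (3*a) (M b) 0 \<bullet> W (3*a+b) (M b) 0 \<bullet> W a (B b (2*a)) (2*b) \<bullet> W (a+b+a) (B b a) b"
    by (simp add: ctxE[OF c4] ac_simps)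
  also have "\<dots> = W 0 (M a \<bullet> W a (M a) 0) b \<bullet> W (3*a) (M b \<bullet> W b (M b) 0) 0 \<bullet> W a (B b (2*a)) (2*b) \<bullet> W (a+b+a) (B b a) b"
    by (simp add: W_split W_nest ac_simps)
  finally have R: "M (a+b) \<bullet> W (a+b) (M (a+b)) 0 = W 0 (M a \<bullet> W a (M a) 0) b \<bullet> W (3*a) (M b \<bullet> W b (M b) 0) 0 \<bullet> W a (B b (2*a)) (2*b) \<bullet> W (a+b+a) (B b a) b" .

  have bl: "W (2*a) (B (2*b) a) b \<bullet> W a (B b a) (a+2*b) = W (2*a) (B b a) (2*b) \<bullet> W (2*a+b) (B b a) b \<bullet> W a (B b a) (a+2*b)"
    using hex1W[of b b a] by (simp add: W_split W_nest ac_simps)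
  have br: "W a (B b (2*a)) (2*b) \<bullet> W (a+b+a) (B b a) b = W (2*a) (B b a) (2*b) \<bullet> W a (B b a) (a+2*b) \<bullet> W (2*a+b) (B b a) b"
    using hex2W[of b a a] by (simp add: W_split W_nest ac_simps)
  have c5: "W a (B b a) (0+(a+b)+b) \<bullet> W (a+(a+b)+0) (B b a) b = W (a+(a+b)+0) (B b a) b \<bullet> W a (B b a) (0+(a+b)+b)"
    by (rule W_comm) (simp_all add: ac_simps)
  have brr: "W (2*a) (B (2*b) a) b \<bullet> W a (B b a) (a+2*b) = W a (B b (2*a)) (2*b) \<bullet> W (a+b+a) (B b a) b"
    unfolding bl br by (simp add: ctxE[OF c5[symmetric]] ctxT[OF c5[symmetric]] ac_simps)
  show ?thesis unfolding L R A Bb using brr by (simp add: ac_simps)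
qed


lemma M_assoc: "M n \<bullet> W 0 (M n) n = M n \<bullet> W n (M n) 0"
proof (induction n)
  case 0 then show ?case by (simp add: M0)
next
  case (Suc n)
  have m1: "M 1 \<bullet> W 0 (M 1) 1 = M 1 \<bullet> W 1 (M 1) 0" using m_assoc by (simp add: M1 W_def)
  show ?case using M_assoc_add[OF m1 Suc] by simp
qed

lemma u_typ[simp]: "Dom C (u n) = P 0" "Cod C (u n) = P n" by simp_all
lemma u_add: "u (a+b) = u a \<otimes> u b" by (rule tpowm_add)

lemma M_unit_add:
  assumes A: "M a \<bullet> W 0 (u a) a = idn a" "M a \<bullet> W a (u a) 0 = idn a"
      and Bb: "M b \<bullet> W 0 (u b) b = idn b" "M b \<bullet> W b (u b) 0 = idn b"
  shows "M (a+b) \<bullet> W 0 (u (a+b)) (a+b) = idn (a+b)" "M (a+b) \<bullet> W (a+b) (u (a+b)) 0 = idn (a+b)"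
proof -
  have Mab: "M (a+b) = W 0 (M a) b \<bullet> W (2*a) (M b) 0 \<bullet> W a (B b a) b"
    using M_add[of a b] W_tensor[of "M a" "2*a" a "M b" "2*b" b 0 0] by simp
  have u1: "W 0 (u (a+b)) (a+b) = W 0 (u a) (b+(a+b)) \<bullet> W 0 (u b) (a+b)"
    using W_tensor[of "u a" 0 a "u b" 0 b 0 "a+b"] by (simp add: u_add)
  have c1: "W (0+a+0) (B b a) b \<bullet> W 0 (u a) (0+(a+b)+b) = W 0 (u a) (0+(a+b)+b) \<bullet> W (0+0+0) (B b a) b"
    by (rule W_comm2) simp_all
  have n1: "W 0 (B b a) b \<bullet> W 0 (u b) (a+b) = W a (u b) b"
  proof -
    have "W 0 (u b) (a+b) = W 0 (u b \<otimes> idn a) b" by (simp add: W_def)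
    moreover have "W 0 (B b a) b \<bullet> W 0 (u b \<otimes> idn a) b = W 0 (idn a \<otimes> u b) b \<bullet> W 0 (B 0 a) b"
      using natW[of "u b" 0 b "idn a" a a 0 b] by simp
    moreover have "W 0 (idn a \<otimes> u b) b = W a (u b) b" by (simp add: W_def tidl)
    ultimately show ?thesis by simp
  qed
  have c2: "W (0+a+a) (M b) 0 \<bullet> W 0 (u a) (a+2*b+0) = W 0 (u a) (a+b+0) \<bullet> W (0+0+a) (M b) 0"
    by (rule W_comm2) simp_all
  have "M (a+b) \<bullet> W 0 (u (a+b)) (a+b) = W 0 (M a) b \<bullet> W (2*a) (M b) 0 \<bullet> W a (B b a) b \<bullet> W 0 (u a) (b+(a+b)) \<bullet> W 0 (u b) (a+b)"
    unfolding Mab u1 by simp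
  also have "\<dots> = W 0 (M a) b \<bullet> W (2*a) (M b) 0 \<bullet> W 0 (u a) (b+(a+b)) \<bullet> W 0 (B b a) b \<bullet> W 0 (u b) (a+b)"
    by (simp add: ctxE[OF c1] ctxT[OF c1])
  also have "\<dots> = W 0 (M a) b \<bullet> W (2*a) (M b) 0 \<bullet> W 0 (u a) (b+(a+b)) \<bullet> W a (u b) b"
    by (simp add: ctxE[OF n1] ctxT[OF n1])
  also have "\<dots> = W 0 (M a) b \<bullet> W 0 (u a) (a+b) \<bullet> W a (M b) 0 \<bullet> W a (u b) b"
    by (simp add: ctxE[OF c2] ctxT[OF c2])
  also have "\<dots> = W 0 (M a \<bullet> W 0 (u a) a) b \<bullet> W a (M b \<bullet> W 0 (u b) b) 0"
    by (simp add: W_split W_nest)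
  also have "\<dots> = idn (a+b)" unfolding A Bb by simp
  finally show "M (a+b) \<bullet> W 0 (u (a+b)) (a+b) = idn (a+b)" .

  have u2: "W (a+b) (u (a+b)) 0 = W (a+b) (u a) b \<bullet> W (a+b) (u b) 0"
    using W_tensor[of "u a" 0 a "u b" 0 b "a+b" 0] by (simp add: u_add)
  have n2: "W a (B b a) b \<bullet> W (a+b) (u a) b = W a (u a) (b+b)"
  proof -
    have "W (a+b) (u a) b = W a (idn b \<otimes> u a) b" by (simp add: W_def tidl)
    moreover have "W a (B b a) b \<bullet> W a (idn b \<otimes> u a) b = W a (u a \<otimes> idn b) b \<bullet> W a (B b 0) b"
      using natW[of "idn b" b b "u a" 0 a a b] by simp
    moreover have "W a (u a \<otimes> idn b) b = W a (u a) (b+b)" by (simp add: W_def)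
    ultimately show ?thesis by simp
  qed
  have c3: "W (a+a+0) (M b) 0 \<bullet> W a (u a) (0+2*b+0) = W a (u a) (0+b+0) \<bullet> W (a+0+0) (M b) 0"
    by (rule W_comm2) simp_all
  have "M (a+b) \<bullet> W (a+b) (u (a+b)) 0 = W 0 (M a) b \<bullet> W (2*a) (M b) 0 \<bullet> W a (B b a) b \<bullet> W (a+b) (u a) b \<bullet> W (a+b) (u b) 0"
    unfolding Mab u2 by simp
  also have "\<dots> = W 0 (M a) b \<bullet> W (2*a) (M b) 0 \<bullet> W a (u a) (b+b) \<bullet> W (a+b) (u b) 0"
    by (simp add: ctxE[OF n2] ctxT[OF n2])
  also have "\<dots> = W 0 (M a) b \<bullet> W a (u a) b \<bullet> W a (M b) 0 \<bullet> W (a+b) (u b) 0"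
    by (simp add: ctxE[OF c3] ctxT[OF c3])
  also have "\<dots> = W 0 (M a \<bullet> W a (u a) 0) b \<bullet> W a (M b \<bullet> W b (u b) 0) 0"
    by (simp add: W_split W_nest)
  also have "\<dots> = idn (a+b)" unfolding A Bb by simp
  finally show "M (a+b) \<bullet> W (a+b) (u (a+b)) 0 = idn (a+b)" .
qed

lemma M_unit: "M n \<bullet> W 0 (u n) n = idn n \<and> M n \<bullet> W n (u n) 0 = idn n"
proof (induction n)
  case 0 then show ?case by (simp add: M0)
next
  case (Suc n)
  have m1: "M 1 \<bullet> W 0 (u 1) 1 = idn 1" "M 1 \<bullet> W 1 (u 1) 0 = idn 1"
    using m_unitl m_unitr by (simp_all add: M1 W_def)
  show ?case using M_unit_add[OF m1 conjunct1[OF Suc] conjunct2[OF Suc]] by simp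
qed

definition AM where "AM f a c \<longleftrightarrow> Dom C f = P a \<and> Cod C f = P c \<and> f \<bullet> M a = M c \<bullet> (f \<otimes> f) \<and> f \<bullet> u a = u c"

lemma mid: "Cod C x = P c \<Longrightarrow> Cod C w = P d \<Longrightarrow> Cod C Z = Dom C Y \<Longrightarrow>
   (idn c \<otimes> (Y \<otimes> idn d)) \<bullet> (x \<otimes> (Z \<otimes> w)) = x \<otimes> ((Y \<bullet> Z) \<otimes> w)"
  by (simp add: inter)

lemma mid2: "Dom C x = P c \<Longrightarrow> Dom C w = P d \<Longrightarrow> Cod C Z = Dom C Y \<Longrightarrow>
   (x \<otimes> (Y \<otimes> w)) \<bullet> (idn c \<otimes> (Z \<otimes> idn d)) = x \<otimes> ((Y \<bullet> Z) \<otimes> w)"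
  by (simp add: inter)

lemma AM_tensor: assumes f: "AM f a c" and g: "AM g b d" shows "AM (f \<otimes> g) (a+b) (c+d)"
proof -
  have tf: "Dom C f = P a" "Cod C f = P c" and mf: "f \<bullet> M a = M c \<bullet> (f \<otimes> f)" and uf: "f \<bullet> u a = u c"
    using f unfolding AM_def by auto
  have tg: "Dom C g = P b" "Cod C g = P d" and mg: "g \<bullet> M b = M d \<bullet> (g \<otimes> g)" and ug: "g \<bullet> u b = u d"
    using g unfolding AM_def by auto
  have e1: "W c (B d c) d \<bullet> (f \<otimes> ((g \<otimes> f) \<otimes> g)) = f \<otimes> ((B d c \<bullet> (g \<otimes> f)) \<otimes> g)"
    unfolding W_def by (rule mid) (simp_all add: tf tg)
  have e2: "(f \<otimes> ((f \<otimes> g) \<otimes> g)) \<bullet> W a (B b a) b = f \<otimes> (((f \<otimes> g) \<bullet> B b a) \<otimes> g)"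
    unfolding W_def by (rule mid2) (simp_all add: tf tg)
  have nn: "B d c \<bullet> (g \<otimes> f) = (f \<otimes> g) \<bullet> B b a" using nat_B[of g b d f a c] tf tg by simp
  have key: "W c (B d c) d \<bullet> ((f \<otimes> g) \<otimes> (f \<otimes> g)) = ((f \<otimes> f) \<otimes> (g \<otimes> g)) \<bullet> W a (B b a) b"
  proof -
    have "(f \<otimes> g) \<otimes> (f \<otimes> g) = f \<otimes> ((g \<otimes> f) \<otimes> g)" by simp
    moreover have "(f \<otimes> f) \<otimes> (g \<otimes> g) = f \<otimes> ((f \<otimes> g) \<otimes> g)" by simp
    ultimately show ?thesis using e1 e2 nn by metis
  qed
  have "(f \<otimes> g) \<bullet> M (a+b) = ((f \<otimes> g) \<bullet> (M a \<otimes> M b)) \<bullet> W a (B b a) b"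
    unfolding M_add using tf tg by simp
  also have "\<dots> = ((M c \<bullet> (f \<otimes> f)) \<otimes> (M d \<bullet> (g \<otimes> g))) \<bullet> W a (B b a) b"
    using tf tg by (simp add: inter mf[symmetric] mg[symmetric])
  also have "\<dots> = ((M c \<otimes> M d) \<bullet> ((f \<otimes> f) \<otimes> (g \<otimes> g))) \<bullet> W a (B b a) b"
  proof -
    have "(M c \<otimes> M d) \<bullet> ((f \<otimes> f) \<otimes> (g \<otimes> g)) = (M c \<bullet> (f \<otimes> f)) \<otimes> (M d \<bullet> (g \<otimes> g))"
      by (rule inter) (simp_all add: tf tg)
    then show ?thesis by simp
  qed
  also have "\<dots> = (M c \<otimes> M d) \<bullet> ((f \<otimes> f) \<otimes> (g \<otimes> g)) \<bullet> W a (B b a) b"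
    by (rule comp_assoc[symmetric]) (simp_all add: tf tg)
  also have "\<dots> = (M c \<otimes> M d) \<bullet> W c (B d c) d \<bullet> ((f \<otimes> g) \<otimes> (f \<otimes> g))"
    using key tf tg by (metis (no_types) assoc W_typ)
  also have "\<dots> = M (c+d) \<bullet> ((f \<otimes> g) \<otimes> (f \<otimes> g))"
    unfolding M_add using tf tg by simp
  finally have m: "(f \<otimes> g) \<bullet> M (a+b) = M (c+d) \<bullet> ((f \<otimes> g) \<otimes> (f \<otimes> g))" .
  have "(f \<otimes> g) \<bullet> u (a+b) = u (c+d)" unfolding u_add using tf tg uf ug by (simp add: inter)
  then show ?thesis using m tf tg unfolding AM_def by simp
qed


lemma AM_comp: assumes f: "AM f a b" and g: "AM g b c" shows "AM (g \<bullet> f) a c"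
proof -
  have tf: "Dom C f = P a" "Cod C f = P b" and mf: "f \<bullet> M a = M b \<bullet> (f \<otimes> f)" and uf: "f \<bullet> u a = u b"
    using f unfolding AM_def by auto
  have tg: "Dom C g = P b" "Cod C g = P c" and mg: "g \<bullet> M b = M c \<bullet> (g \<otimes> g)" and ug: "g \<bullet> u b = u c"
    using g unfolding AM_def by auto
  have "(g \<bullet> f) \<bullet> M a = g \<bullet> (M b \<bullet> (f \<otimes> f))" using tf tg mf by simp
  also have "\<dots> = (g \<bullet> M b) \<bullet> (f \<otimes> f)" using tf tg by simp
  also have "\<dots> = M c \<bullet> ((g \<otimes> g) \<bullet> (f \<otimes> f))" using tf tg mg by simp
  also have "\<dots> = M c \<bullet> ((g \<bullet> f) \<otimes> (g \<bullet> f))" using tf tg by (simp add: inter)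
  finally show ?thesis using tf tg uf ug unfolding AM_def by simp
qed

lemma AM_id: "AM (idn a) a a" unfolding AM_def by simp

lemma AM_Dl: "AM Dl 1 2"
proof -
  have "M 2 = (m \<otimes> m) \<bullet> W 1 BH 1" using M_add[of 1 1] by (simp add: M1)
  then show ?thesis unfolding AM_def using Dl_m Dl_eta by (simp add: M1 W_def)
qed
lemma AM_eps: "AM eps 1 0" unfolding AM_def using eps_m eps_eta by (simp add: M1 M0)
lemma AM_dl: "AM dl 1 0" unfolding AM_def using dl_m dl_eta by (simp add: M1 M0)
lemma AM_eta: "AM eta 0 1"
proof -
  have e: "(eta \<otimes> i1) \<bullet> eta = eta \<otimes> eta" using inter[of "idn 0" eta eta i1] by simp
  have "m \<bullet> (eta \<otimes> eta) = (m \<bullet> (eta \<otimes> i1)) \<bullet> eta" unfolding e[symmetric] by simp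
  then have "m \<bullet> (eta \<otimes> eta) = eta" using m_unitl by simp
  then show ?thesis unfolding AM_def by (simp add: M1 M0)
qed

lemma AM_W: "AM f p q \<Longrightarrow> AM (W k f r) (k+p+r) (k+q+r)"
  unfolding W_def using AM_tensor AM_id by (metis add.assoc)

abbreviation D where "D n \<equiv> iter_comult C H Dl n"

lemma D_typ[simp]: "Dom C (D n) = P 1" "Cod C (D n) = P (Suc n)"
  by (induction n) (simp_all add: iter_comult.simps(2))

lemma D_Suc: "D (Suc k) = W 0 Dl k \<bullet> D k" by (simp add: W_def iter_comult.simps(2))
lemma D0: "D 0 = i1" by simp

lemma AM_D: "AM (D n) 1 (Suc n)"
proof (induction n)
  case 0 then show ?case using AM_id[of 1] by simp
next
  case (Suc n)
  have "AM (W 0 Dl n) (Suc n) (Suc (Suc n))" using AM_W[OF AM_Dl, of 0 n] by simp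
  then show ?case unfolding D_Suc using AM_comp[OF Suc] by simp
qed

lemma coassW: "W 0 Dl 1 \<bullet> Dl = W 1 Dl 0 \<bullet> Dl" using Dl_coassoc by (simp add: W_def)

lemma D_front: "D (Suc k) = W 1 (D k) 0 \<bullet> Dl"
proof (induction k)
  case 0 then show ?case by (simp add: D_Suc W_def)
next
  case (Suc k)
  have c: "W 0 Dl (Suc k) \<bullet> W 1 (D k) 0 = W 2 (D k) 0 \<bullet> W 0 Dl 1"
    using W_comm[where f=Dl and p=1 and q=2 and g="D k" and p'=1 and q'="Suc k" and k=0 and j=0 and r=0] by simp
  have "D (Suc (Suc k)) = W 0 Dl (Suc k) \<bullet> W 1 (D k) 0 \<bullet> Dl" using Suc by (simp add: D_Suc)
  also have "\<dots> = W 2 (D k) 0 \<bullet> W 0 Dl 1 \<bullet> Dl" by (simp add: ctxE[OF c] ctxT[OF c])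
  also have "\<dots> = W 2 (D k) 0 \<bullet> W 1 Dl 0 \<bullet> Dl" using coassW by simp
  also have "\<dots> = W 1 (D (Suc k)) 0 \<bullet> Dl" unfolding Suc by (simp add: W_split W_nest)
  finally show ?case .
qed

lemma D_slot: "W j Dl r \<bullet> D (j+r) = D (Suc (j+r))"
proof (induction j)
  case 0 then show ?case by (simp add: D_Suc)
next
  case (Suc j)
  have "W (Suc j) Dl r \<bullet> D (Suc j + r) = W 1 (W j Dl r \<bullet> D (j+r)) 0 \<bullet> Dl"
    using D_front[of "j+r"] by (simp add: W_split W_nest)
  also have "\<dots> = D (Suc (Suc j + r))" unfolding Suc using D_front[of "Suc (j+r)"] by simp
  finally show ?case .
qed

lemma counitW: "W 0 eps 1 \<bullet> Dl = i1" "W 1 eps 0 \<bullet> Dl = i1" using counitl counitr by (simp_all add: W_def)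

lemma D_eps: "W j eps (Suc r) \<bullet> D (Suc (j+r)) = D (j+r)"
proof (induction j)
  case 0
  have "W 0 eps (Suc r) \<bullet> W 0 Dl r \<bullet> D r = W 0 (W 0 eps 1 \<bullet> Dl) r \<bullet> D r" by (simp add: W_split W_nest)
  then have "W 0 eps (Suc r) \<bullet> W 0 Dl r \<bullet> D r = D r" using counitW by simp
  then show ?case by (simp add: D_Suc)
next
  case (Suc j)
  have "W (Suc j) eps (Suc r) \<bullet> D (Suc (Suc j + r)) = W 1 (W j eps (Suc r) \<bullet> D (Suc (j+r))) 0 \<bullet> Dl"
    using D_front[of "Suc (j+r)"] by (simp add: W_split W_nest)
  also have "\<dots> = D (Suc j + r)" unfolding Suc using D_front[of "j+r"] by simp
  finally show ?case .
qed

lemma D_eta: "D n \<bullet> eta = u (Suc n)"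
  using AM_D[of n] unfolding AM_def by simp

abbreviation sgp where "sgp n \<equiv> tpowm C sg n"
lemma D_sg: "D n \<bullet> sg = sgp (Suc n)"
proof (induction n)
  case 0 then show ?case by simp
next
  case (Suc n)
  have "D (Suc n) \<bullet> sg = W 0 Dl n \<bullet> sgp (Suc n)" using Suc by (simp add: D_Suc)
  also have "\<dots> = sgp (Suc (Suc n))" using Dl_sg by (simp add: W_def inter)
  finally show ?case .
qed


lemma D_eps_last: "W (Suc k) eps 0 \<bullet> D (Suc k) = D k"
proof -
  have "W (Suc k) eps 0 \<bullet> D (Suc k) = W k (W 1 eps 0 \<bullet> Dl) 0 \<bullet> D k"
    using D_slot[of k 0] by (simp add: W_split W_nest)
  then show ?thesis using counitW by simp
qed

end

context bsetup begin

lemma ctx3E: "g \<bullet> (f \<bullet> e) = r \<Longrightarrow> g' = g \<Longrightarrow> f' = f \<Longrightarrow> e' = e \<Longrightarrow> Cod C h = Dom C e \<Longrightarrow> Cod C e = Dom C f \<Longrightarrow> Cod C f = Dom C g \<Longrightarrow>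
  g' \<bullet> (f' \<bullet> (e' \<bullet> h)) = r \<bullet> h"
proof -
  assume a: "g \<bullet> (f \<bullet> e) = r" "g' = g" "f' = f" "e' = e" "Cod C h = Dom C e" "Cod C e = Dom C f" "Cod C f = Dom C g"
  have "(g \<bullet> (f \<bullet> e)) \<bullet> h = g \<bullet> (f \<bullet> (e \<bullet> h))" using a(5-7) by simp
  then show ?thesis using a(1-4) by simp
qed
lemma ctx3T: "g \<bullet> (f \<bullet> e) = r \<Longrightarrow> g' = g \<Longrightarrow> f' = f \<Longrightarrow> e' = e \<Longrightarrow> g' \<bullet> (f' \<bullet> e') = r"
  by simp
lemma ctx4E: "g \<bullet> (f \<bullet> (e \<bullet> d)) = r \<Longrightarrow> g' = g \<Longrightarrow> f' = f \<Longrightarrow> e' = e \<Longrightarrow> d' = d \<Longrightarrow> Cod C h = Dom C d \<Longrightarrow> Cod C d = Dom C e \<Longrightarrow> Cod C e = Dom C f \<Longrightarrow> Cod C f = Dom C g \<Longrightarrow>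
  g' \<bullet> (f' \<bullet> (e' \<bullet> (d' \<bullet> h))) = r \<bullet> h"
proof -
  assume a: "g \<bullet> (f \<bullet> (e \<bullet> d)) = r" "g' = g" "f' = f" "e' = e" "d' = d" "Cod C h = Dom C d" "Cod C d = Dom C e" "Cod C e = Dom C f" "Cod C f = Dom C g"
  have "(g \<bullet> (f \<bullet> (e \<bullet> d))) \<bullet> h = g \<bullet> (f \<bullet> (e \<bullet> (d \<bullet> h)))" using a(6-9) by simp
  then show ?thesis using a(1-5) by simp
qed
lemma ctx4T: "g \<bullet> (f \<bullet> (e \<bullet> d)) = r \<Longrightarrow> g' = g \<Longrightarrow> f' = f \<Longrightarrow> e' = e \<Longrightarrow> d' = d \<Longrightarrow> g' \<bullet> (f' \<bullet> (e' \<bullet> d')) = r"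
  by simp

lemma pt_tensor: "Dom C x = P 0 \<Longrightarrow> Dom C y = P 0 \<Longrightarrow> Cod C y = P b \<Longrightarrow> x \<otimes> y = (x \<otimes> idn b) \<bullet> y"
  using inter[of "idn 0" x y "idn b"] by simp

lemma antiW: "m \<bullet> W 0 S 1 \<bullet> Dl = eta \<bullet> eps" "m \<bullet> W 1 S 0 \<bullet> Dl = eta \<bullet> eps"
  using antiL antiR by (simp_all add: W_def)
lemma m_assocW: "m \<bullet> W 0 m 1 = m \<bullet> W 1 m 0" using m_assoc by (simp add: W_def)
lemma m_unitW: "m \<bullet> W 0 eta 1 = i1" "m \<bullet> W 1 eta 0 = i1" using m_unitl m_unitr by (simp_all add: W_def)
lemma Dl_mW: "Dl \<bullet> m = W 0 m 1 \<bullet> W 2 m 0 \<bullet> W 1 BH 1 \<bullet> W 0 Dl 2 \<bullet> W 1 Dl 0"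
proof -
  have "m \<otimes> m = W 0 m 1 \<bullet> W 2 m 0" using W_tensor[of m 2 1 m 2 1 0 0] by simp
  moreover have "Dl \<otimes> Dl = W 0 Dl 2 \<bullet> W 1 Dl 0" using W_tensor[of Dl 1 2 Dl 1 2 0 0] by simp
  ultimately show ?thesis using Dl_m by (simp add: W_def)
qed

lemma pts: "Dom C x = P 0 \<Longrightarrow> Cod C x = P a \<Longrightarrow> Dom C y = P 0 \<Longrightarrow> Cod C y = P b \<Longrightarrow>
  W 0 x b \<bullet> y = W a y 0 \<bullet> x"
  using W_comm[where f=x and p=0 and q=a and g=y and p'=0 and q'=b and k=0 and j=0 and r=0] by simp

lemma Dl_etaW: "Dl \<bullet> eta = W 0 eta 1 \<bullet> eta" using Dl_eta pt_tensor[of eta eta 1] by (simp add: W_def)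
lemma Dl_sgW: "Dl \<bullet> sg = W 0 sg 1 \<bullet> sg" using Dl_sg pt_tensor[of sg sg 1] by (simp add: W_def)

lemma S_eta: "S \<bullet> eta = eta"
proof -
  have "eta = m \<bullet> W 0 S 1 \<bullet> Dl \<bullet> eta" using eps_eta by (simp add: ctx3E[OF antiW(1)])
  also have "\<dots> = m \<bullet> W 0 (S \<bullet> eta) 1 \<bullet> eta" using Dl_etaW by (simp add: W_split)
  also have "\<dots> = m \<bullet> W 1 eta 0 \<bullet> S \<bullet> eta" using pts[of "S \<bullet> eta" 1 eta 1] by simp
  also have "\<dots> = S \<bullet> eta" by (simp add: ctxE[OF m_unitW(2)])
  finally show ?thesis by simp
qed


lemma KS: "W 0 m 1 \<bullet> W 1 BH 0 \<bullet> W 0 (Dl \<bullet> S) 1 \<bullet> Dl = W 0 eta 1 \<bullet> S"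
proof -
  define Z0 where "Z0 = Dl \<bullet> m \<bullet> W 0 S 1 \<bullet> Dl"
  have tZ: "Dom C Z0 = P 1" "Cod C Z0 = P 2" unfolding Z0_def by simp_all
  define E where "E = W 1 m 0 \<bullet> W 0 Z0 1 \<bullet> W 1 S 0 \<bullet> Dl"
  have zA: "Z0 = W 0 eta 1 \<bullet> eta \<bullet> eps" unfolding Z0_def
    by (simp add: ctx3T[OF antiW(1)] ctxE[OF Dl_etaW])
  have a1: "W 0 eps 1 \<bullet> W 1 S 0 = S \<bullet> W 0 eps 1"
    using W_comm[where f=eps and p=1 and q=0 and g=S and p'=1 and q'=1 and k=0 and j=0 and r=0] by simp
  have a2: "W 1 m 0 \<bullet> W 0 eta 2 = W 0 eta 1 \<bullet> m"
    using W_comm2[where f=eta and p=0 and q=1 and g=m and p'=2 and q'=1 and k=0 and j=0 and r=0] by simp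
  have "E = W 1 m 0 \<bullet> W 0 eta 2 \<bullet> W 0 eta 1 \<bullet> W 0 eps 1 \<bullet> W 1 S 0 \<bullet> Dl"
    unfolding E_def zA by (simp add: W_split W_nest)
  also have "\<dots> = W 1 m 0 \<bullet> W 0 eta 2 \<bullet> W 0 eta 1 \<bullet> S \<bullet> W 0 eps 1 \<bullet> Dl"
    by (simp add: ctxE[OF a1])
  also have "\<dots> = W 0 eta 1 \<bullet> m \<bullet> W 0 eta 1 \<bullet> S"
    using counitW by (simp add: ctxE[OF a2])
  also have "\<dots> = W 0 eta 1 \<bullet> S"
    by (simp add: ctxE[OF m_unitW(1)])
  finally have EA: "E = W 0 eta 1 \<bullet> S" .
  have b1: "W 1 Dl 0 \<bullet> W 0 S 1 = W 0 S 2 \<bullet> W 1 Dl 0"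
    using W_comm[where f=S and p=1 and q=1 and g=Dl and p'=1 and q'=2 and k=0 and j=0 and r=0] by simp
  have zB: "Z0 = W 0 m 1 \<bullet> W 2 m 0 \<bullet> W 1 BH 1 \<bullet> W 0 (Dl \<bullet> S) 2 \<bullet> W 1 Dl 0 \<bullet> Dl"
  proof -
    have "Z0 = W 0 m 1 \<bullet> W 2 m 0 \<bullet> W 1 BH 1 \<bullet> W 0 Dl 2 \<bullet> W 1 Dl 0 \<bullet> W 0 S 1 \<bullet> Dl"
      unfolding Z0_def by (simp add: ctxE[OF Dl_mW])
    also have "\<dots> = W 0 m 1 \<bullet> W 2 m 0 \<bullet> W 1 BH 1 \<bullet> W 0 Dl 2 \<bullet> W 0 S 2 \<bullet> W 1 Dl 0 \<bullet> Dl"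
      by (simp add: ctxE[OF b1])
    also have "\<dots> = W 0 m 1 \<bullet> W 2 m 0 \<bullet> W 1 BH 1 \<bullet> W 0 (Dl \<bullet> S) 2 \<bullet> W 1 Dl 0 \<bullet> Dl"
      by (simp add: W_split)
    finally show ?thesis .
  qed
  have c1: "W 1 m 0 \<bullet> W 0 m 2 = W 0 m 1 \<bullet> W 2 m 0"
    using W_comm2[where f=m and p=2 and q=1 and g=m and p'=2 and q'=1 and k=0 and j=0 and r=0] by simp
  have c2: "W 2 m 0 \<bullet> W 2 m 1 = W 2 m 0 \<bullet> W 3 m 0"
  proof -
    have "W 2 m 0 \<bullet> W 2 m 1 = W 2 (m \<bullet> W 0 m 1) 0" by (simp add: W_split W_nest)
    also have "\<dots> = W 2 (m \<bullet> W 1 m 0) 0" using m_assocW by simp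
    also have "\<dots> = W 2 m 0 \<bullet> W 3 m 0" by (simp add: W_split W_nest)
    finally show ?thesis .
  qed
  have c3: "W 3 m 0 \<bullet> W 1 BH 2 = W 1 BH 1 \<bullet> W 3 m 0"
    using W_comm[where f=BH and p=2 and q=2 and g=m and p'=2 and q'=1 and k=1 and j=0 and r=0] by simp
  have c4: "W 3 m 0 \<bullet> W 0 (Dl \<bullet> S) 3 = W 0 (Dl \<bullet> S) 2 \<bullet> W 2 m 0"
    using W_comm[where f="Dl \<bullet> S" and p=1 and q=2 and g=m and p'=2 and q'=1 and k=0 and j=1 and r=0] by simp
  have c5: "W 0 Dl 1 \<bullet> W 1 S 0 = W 2 S 0 \<bullet> W 0 Dl 1"
    using W_comm[where f=Dl and p=1 and q=2 and g=S and p'=1 and q'=1 and k=0 and j=0 and r=0] by simp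
  have c6: "W 1 Dl 1 \<bullet> W 2 S 0 = W 3 S 0 \<bullet> W 1 Dl 1"
    using W_comm[where f=Dl and p=1 and q=2 and g=S and p'=1 and q'=1 and k=1 and j=0 and r=0] by simp
  have d2: "W 0 Dl 1 \<bullet> Dl = D 2" by (simp add: D_Suc)
  have d3: "W 1 Dl 1 \<bullet> D 2 = W 2 Dl 0 \<bullet> D 2" using D_slot[of 1 1] D_slot[of 2 0] by simp
  have tail: "W 2 m 0 \<bullet> W 3 S 0 \<bullet> W 2 Dl 0 \<bullet> D 2 = W 2 eta 0 \<bullet> Dl"
  proof -
    have "W 2 m 0 \<bullet> W 3 S 0 \<bullet> W 2 Dl 0 \<bullet> D 2 = W 2 (m \<bullet> W 1 S 0 \<bullet> Dl) 0 \<bullet> D 2"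
      by (simp add: W_split W_nest)
    also have "\<dots> = W 2 eta 0 \<bullet> W 2 eps 0 \<bullet> D 2" using antiW(2) by (simp add: W_split)
    also have "\<dots> = W 2 eta 0 \<bullet> Dl" using D_eps_last[of 1] by (simp add: D_Suc)
    finally show ?thesis .
  qed
  have c7: "W 0 (Dl \<bullet> S) 2 \<bullet> W 2 eta 0 = W 3 eta 0 \<bullet> W 0 (Dl \<bullet> S) 1"
    using W_comm2[where f="Dl \<bullet> S" and p=1 and q=2 and g=eta and p'=0 and q'=1 and k=0 and j=1 and r=0] by simp
  have c8: "W 1 BH 1 \<bullet> W 3 eta 0 = W 3 eta 0 \<bullet> W 1 BH 0"
    using W_comm[where f=BH and p=2 and q=2 and g=eta and p'=0 and q'=1 and k=1 and j=0 and r=0] by simp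
  have c9: "W 2 m 0 \<bullet> W 3 eta 0 = idn 3"
  proof -
    have "W 2 m 0 \<bullet> W 3 eta 0 = W 2 (m \<bullet> W 1 eta 0) 0" by (simp add: W_split W_nest)
    then show ?thesis using m_unitW by simp
  qed
  have "E = W 1 m 0 \<bullet> W 0 m 2 \<bullet> W 2 m 1 \<bullet> W 1 BH 2 \<bullet> W 0 (Dl \<bullet> S) 3 \<bullet> W 1 Dl 1 \<bullet> W 0 Dl 1 \<bullet> W 1 S 0 \<bullet> Dl"
    unfolding E_def zB by (simp add: W_split W_nest)
  also have "\<dots> = W 0 m 1 \<bullet> W 2 m 0 \<bullet> W 3 m 0 \<bullet> W 1 BH 2 \<bullet> W 0 (Dl \<bullet> S) 3 \<bullet> W 1 Dl 1 \<bullet> W 0 Dl 1 \<bullet> W 1 S 0 \<bullet> Dl"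
    by (simp add: ctxE[OF c1] ctxE[OF c2])
  also have "\<dots> = W 0 m 1 \<bullet> W 2 m 0 \<bullet> W 1 BH 1 \<bullet> W 0 (Dl \<bullet> S) 2 \<bullet> W 2 m 0 \<bullet> W 1 Dl 1 \<bullet> W 0 Dl 1 \<bullet> W 1 S 0 \<bullet> Dl"
    by (simp add: ctxE[OF c3] ctxE[OF c4])
  also have "\<dots> = W 0 m 1 \<bullet> W 2 m 0 \<bullet> W 1 BH 1 \<bullet> W 0 (Dl \<bullet> S) 2 \<bullet> W 2 m 0 \<bullet> W 3 S 0 \<bullet> W 2 Dl 0 \<bullet> D 2"
    by (simp add: ctxE[OF c5] ctxE[OF c6] ctxT[OF d2] ctxT[OF d3])
  also have "\<dots> = W 0 m 1 \<bullet> W 2 m 0 \<bullet> W 1 BH 1 \<bullet> W 0 (Dl \<bullet> S) 2 \<bullet> W 2 eta 0 \<bullet> Dl"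
    by (simp add: ctx4T[OF tail])
  also have "\<dots> = W 0 m 1 \<bullet> W 1 BH 0 \<bullet> W 0 (Dl \<bullet> S) 1 \<bullet> Dl"
    by (simp add: ctxE[OF c7] ctxE[OF c8] ctxE[OF c9])
  finally show ?thesis using EA by simp
qed


definition D2 where "D2 = W 1 BH 1 \<bullet> W 0 Dl 2 \<bullet> W 1 Dl 0"
lemma D2_typ[simp]: "Dom C D2 = P 2" "Cod C D2 = P 4" unfolding D2_def by simp_all

lemma epsBH: "W 0 eps 1 \<bullet> BH = W 1 eps 0" "W 1 eps 0 \<bullet> BH = W 0 eps 1"
  using nat_B[of i1 1 1 eps 1 0] nat_B[of eps 1 0 i1 1 1] by (simp_all add: W_def)

lemma hexBH: "B 1 2 = W 1 BH 0 \<bullet> W 0 BH 1" "B 2 1 = W 0 BH 1 \<bullet> W 1 BH 0"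
  using hex2W[of 1 1 1] hex1W[of 1 1 1] by simp_all

lemma D2_coassoc: "W 0 D2 2 \<bullet> D2 = W 2 D2 0 \<bullet> D2"
proof -
  have n1: "W 1 Dl 2 \<bullet> W 1 BH 1 = W 1 (B 1 2) 1 \<bullet> W 2 Dl 1"
  proof -
    have "W 0 Dl 1 \<bullet> BH = B 1 2 \<bullet> W 1 Dl 0" using nat_B[of i1 1 1 Dl 1 2] by (simp add: W_def)
    then have "W 1 (W 0 Dl 1 \<bullet> BH) 1 = W 1 (B 1 2 \<bullet> W 1 Dl 0) 1" by simp
    then show ?thesis by (simp add: W_split W_nest)
  qed
  have c1: "W 0 Dl 4 \<bullet> W 1 (B 1 2) 1 = W 2 (B 1 2) 1 \<bullet> W 0 Dl 4"
    using W_comm[where f=Dl and p=1 and q=2 and g="B 1 2" and p'=3 and q'=3 and k=0 and j=0 and r=1] by simp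
  have c2: "W 2 Dl 1 \<bullet> W 0 Dl 2 = W 0 Dl 3 \<bullet> W 1 Dl 1"
    using W_comm2[where f=Dl and p=1 and q=2 and g=Dl and p'=1 and q'=2 and k=0 and j=0 and r=1] by simp
  have d2: "W 0 Dl 1 \<bullet> Dl = D 2" "W 1 Dl 0 \<bullet> Dl = D 2" using D_slot[of 1 0] by (simp_all add: D_Suc)
  have "W 0 D2 2 \<bullet> D2 = W 1 BH 3 \<bullet> W 0 Dl 4 \<bullet> W 1 Dl 2 \<bullet> W 1 BH 1 \<bullet> W 0 Dl 2 \<bullet> W 1 Dl 0"
    unfolding D2_def by (simp add: W_split W_nest)
  also have "\<dots> = W 1 BH 3 \<bullet> W 2 (B 1 2) 1 \<bullet> W 0 Dl 4 \<bullet> W 0 Dl 3 \<bullet> W 1 Dl 1 \<bullet> W 1 Dl 0"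
    by (simp add: ctxE[OF n1] ctxE[OF c1] ctxE[OF c2])
  also have "\<dots> = W 1 BH 3 \<bullet> W 3 BH 1 \<bullet> W 2 BH 2 \<bullet> W 0 (D 2) 3 \<bullet> W 1 (D 2) 0"
    unfolding hexBH d2[symmetric] by (simp add: W_split W_nest)
  finally have L: "W 0 D2 2 \<bullet> D2 = W 1 BH 3 \<bullet> W 3 BH 1 \<bullet> W 2 BH 2 \<bullet> W 0 (D 2) 3 \<bullet> W 1 (D 2) 0" .
  have c3: "W 3 Dl 0 \<bullet> W 1 BH 1 = W 1 BH 2 \<bullet> W 3 Dl 0"
    using W_comm2[where f=BH and p=2 and q=2 and g=Dl and p'=1 and q'=2 and k=1 and j=0 and r=0] by simp
  have n2: "W 2 Dl 2 \<bullet> W 1 BH 2 = W 1 (B 2 1) 2 \<bullet> W 1 Dl 3"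
  proof -
    have "W 1 Dl 0 \<bullet> BH = B 2 1 \<bullet> W 0 Dl 1" using nat_B[of Dl 1 2 i1 1 1] by (simp add: W_def)
    then have "W 1 (W 1 Dl 0 \<bullet> BH) 2 = W 1 (B 2 1 \<bullet> W 0 Dl 1) 2" by simp
    then show ?thesis by (simp add: W_split W_nest)
  qed
  have c4: "W 3 Dl 0 \<bullet> W 0 Dl 2 = W 0 Dl 3 \<bullet> W 2 Dl 0"
    using W_comm2[where f=Dl and p=1 and q=2 and g=Dl and p'=1 and q'=2 and k=0 and j=1 and r=0] by simp
  have "W 2 D2 0 \<bullet> D2 = W 3 BH 1 \<bullet> W 2 Dl 2 \<bullet> W 3 Dl 0 \<bullet> W 1 BH 1 \<bullet> W 0 Dl 2 \<bullet> W 1 Dl 0"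
    unfolding D2_def by (simp add: W_split W_nest)
  also have "\<dots> = W 3 BH 1 \<bullet> W 1 (B 2 1) 2 \<bullet> W 1 Dl 3 \<bullet> W 0 Dl 3 \<bullet> W 2 Dl 0 \<bullet> W 1 Dl 0"
    by (simp add: ctxE[OF c3] ctxE[OF n2] ctxE[OF c4])
  also have "\<dots> = W 3 BH 1 \<bullet> W 1 BH 3 \<bullet> W 2 BH 2 \<bullet> W 0 (D 2) 3 \<bullet> W 1 (D 2) 0"
    unfolding hexBH d2(2)[symmetric] by (simp add: W_split W_nest)
  finally have R: "W 2 D2 0 \<bullet> D2 = W 3 BH 1 \<bullet> W 1 BH 3 \<bullet> W 2 BH 2 \<bullet> W 0 (D 2) 3 \<bullet> W 1 (D 2) 0" .
  have c5: "W 1 BH 3 \<bullet> W 3 BH 1 = W 3 BH 1 \<bullet> W 1 BH 3"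
    using W_comm[where f=BH and p=2 and q=2 and g=BH and p'=2 and q'=2 and k=1 and j=0 and r=1] by simp
  show ?thesis unfolding L R by (simp add: ctxE[OF c5])
qed

definition e2 where "e2 = eps \<bullet> W 0 eps 1"
lemma e2_typ[simp]: "Dom C e2 = P 2" "Cod C e2 = P 0" unfolding e2_def by simp_all

lemma D2_counit: "W 0 e2 2 \<bullet> D2 = idn 2" "W 2 e2 0 \<bullet> D2 = idn 2"
proof -
  have c1: "W 0 eps 3 \<bullet> W 1 BH 1 = W 0 BH 1 \<bullet> W 0 eps 3"
    using W_comm[where f=eps and p=1 and q=0 and g=BH and p'=2 and q'=2 and k=0 and j=0 and r=1] by simp
  have a1: "W 0 eps 2 \<bullet> W 0 BH 1 = W 1 eps 1"
  proof -
    have "W 0 (W 0 eps 1 \<bullet> BH) 1 = W 0 (W 1 eps 0) 1" using epsBH by simp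
    then show ?thesis by (simp add: W_split W_nest)
  qed
  have a2: "W 0 eps 3 \<bullet> W 0 Dl 2 = idn 3"
  proof -
    have "W 0 (W 0 eps 1 \<bullet> Dl) 2 = idn 3" using counitW by simp
    then show ?thesis by (simp add: W_split W_nest)
  qed
  have a3: "W 1 eps 1 \<bullet> W 1 Dl 0 = idn 2"
  proof -
    have "W 1 (W 0 eps 1 \<bullet> Dl) 0 = idn 2" using counitW by simp
    then show ?thesis by (simp add: W_split W_nest)
  qed
  have "W 0 e2 2 \<bullet> D2 = W 0 eps 2 \<bullet> W 0 eps 3 \<bullet> W 1 BH 1 \<bullet> W 0 Dl 2 \<bullet> W 1 Dl 0"
    unfolding e2_def D2_def by (simp add: W_split W_nest)
  also have "\<dots> = idn 2" by (simp add: ctxE[OF c1] ctxE[OF a1] ctxE[OF a2] ctxT[OF a3])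
  finally show "W 0 e2 2 \<bullet> D2 = idn 2" .
  have b1: "W 2 eps 1 \<bullet> W 1 BH 1 = W 1 eps 2"
  proof -
    have "W 1 (W 1 eps 0 \<bullet> BH) 1 = W 1 (W 0 eps 1) 1" using epsBH by simp
    then show ?thesis by (simp add: W_split W_nest)
  qed
  have c2: "W 2 eps 0 \<bullet> W 1 eps 2 = W 1 eps 1 \<bullet> W 3 eps 0"
    using W_comm2[where f=eps and p=1 and q=0 and g=eps and p'=1 and q'=0 and k=1 and j=1 and r=0] by simp
  have c3: "W 3 eps 0 \<bullet> W 0 Dl 2 = W 0 Dl 1 \<bullet> W 2 eps 0"
    using W_comm2[where f=Dl and p=1 and q=2 and g=eps and p'=1 and q'=0 and k=0 and j=1 and r=0] by simp
  have b2: "W 2 eps 0 \<bullet> W 1 Dl 0 = idn 2"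
  proof -
    have "W 1 (W 1 eps 0 \<bullet> Dl) 0 = idn 2" using counitW by simp
    then show ?thesis by (simp add: W_split W_nest)
  qed
  have b3: "W 1 eps 1 \<bullet> W 0 Dl 1 = idn 2"
  proof -
    have "W 0 (W 1 eps 0 \<bullet> Dl) 1 = idn 2" using counitW by simp
    then show ?thesis by (simp add: W_split W_nest)
  qed
  have "W 2 e2 0 \<bullet> D2 = W 2 eps 0 \<bullet> W 2 eps 1 \<bullet> W 1 BH 1 \<bullet> W 0 Dl 2 \<bullet> W 1 Dl 0"
    unfolding e2_def D2_def by (simp add: W_split W_nest)
  also have "\<dots> = idn 2" by (simp add: ctxE[OF b1] ctxE[OF c2] ctxE[OF c3] ctxE[OF b3] ctxT[OF b3] ctxT[OF b2])
  finally show "W 2 e2 0 \<bullet> D2 = idn 2" .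
qed


lemma Dl_mD2: "Dl \<bullet> m = W 0 m 1 \<bullet> W 2 m 0 \<bullet> D2" unfolding D2_def using Dl_mW by simp
lemma eps_mW: "eps \<bullet> m = e2"
  using eps_m W_tensor'[of eps 1 0 eps 1 0 0 0] unfolding e2_def by (simp add: W_def)

definition cv where "cv f g = m \<bullet> W 0 f 1 \<bullet> W 2 g 0 \<bullet> D2"

lemma cv_unit_r: "Dom C f = P 2 \<Longrightarrow> Cod C f = P 1 \<Longrightarrow> cv f (eta \<bullet> e2) = f"
proof -
  assume t: "Dom C f = P 2" "Cod C f = P 1"
  have c: "W 0 f 1 \<bullet> W 2 eta 0 = W 1 eta 0 \<bullet> f"
    using W_comm[where f=f and p=2 and q=1 and g=eta and p'=0 and q'=1 and k=0 and j=0 and r=0] t by simp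
  have "cv f (eta \<bullet> e2) = m \<bullet> W 0 f 1 \<bullet> W 2 eta 0 \<bullet> W 2 e2 0 \<bullet> D2"
    unfolding cv_def using t by (simp add: W_split)
  also have "\<dots> = m \<bullet> W 1 eta 0 \<bullet> f" using t D2_counit by (simp add: ctxE[OF c] ctxT[OF c])
  also have "\<dots> = f" using t m_unitW by (simp add: ctxE[OF m_unitW(2)])
  finally show ?thesis .
qed

lemma cv_unit_l: "Dom C g = P 2 \<Longrightarrow> Cod C g = P 1 \<Longrightarrow> cv (eta \<bullet> e2) g = g"
proof -
  assume t: "Dom C g = P 2" "Cod C g = P 1"
  have c: "W 0 e2 1 \<bullet> W 2 g 0 = g \<bullet> W 0 e2 2"
    using W_comm[where f=e2 and p=2 and q=0 and g=g and p'=2 and q'=1 and k=0 and j=0 and r=0] t by simp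
  have "cv (eta \<bullet> e2) g = m \<bullet> W 0 eta 1 \<bullet> W 0 e2 1 \<bullet> W 2 g 0 \<bullet> D2"
    unfolding cv_def using t by (simp add: W_split)
  also have "\<dots> = m \<bullet> W 0 eta 1 \<bullet> g" using t D2_counit by (simp add: ctxE[OF c] ctxT[OF c])
  also have "\<dots> = g" using t m_unitW by (simp add: ctxE[OF m_unitW(1)])
  finally show ?thesis .
qed

lemma cv_assoc:
  assumes t: "Dom C f = P 2" "Cod C f = P 1" "Dom C g = P 2" "Cod C g = P 1" "Dom C h = P 2" "Cod C h = P 1"
  shows "cv (cv f g) h = cv f (cv g h)"
proof -
  have c1: "W 0 D2 1 \<bullet> W 2 h 0 = W 4 h 0 \<bullet> W 0 D2 2"
    using W_comm[where f=D2 and p=2 and q=4 and g=h and p'=2 and q'=1 and k=0 and j=0 and r=0] t by simp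
  have c2: "W 0 f 1 \<bullet> W 2 m 0 = W 1 m 0 \<bullet> W 0 f 2"
    using W_comm[where f=f and p=2 and q=1 and g=m and p'=2 and q'=1 and k=0 and j=0 and r=0] t by simp
  have "cv (cv f g) h = m \<bullet> W 0 m 1 \<bullet> W 0 f 2 \<bullet> W 2 g 1 \<bullet> W 0 D2 1 \<bullet> W 2 h 0 \<bullet> D2"
    unfolding cv_def using t by (simp add: W_split W_nest)
  also have "\<dots> = m \<bullet> W 1 m 0 \<bullet> W 0 f 2 \<bullet> W 2 g 1 \<bullet> W 4 h 0 \<bullet> W 0 D2 2 \<bullet> D2"
    using t by (simp add: ctxE[OF c1] ctxE[OF m_assocW])
  also have "\<dots> = m \<bullet> W 1 m 0 \<bullet> W 0 f 2 \<bullet> W 2 g 1 \<bullet> W 4 h 0 \<bullet> W 2 D2 0 \<bullet> D2"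
    using D2_coassoc by simp
  also have "\<dots> = m \<bullet> W 0 f 1 \<bullet> W 2 m 0 \<bullet> W 2 g 1 \<bullet> W 4 h 0 \<bullet> W 2 D2 0 \<bullet> D2"
    using t by (simp add: ctxE[OF c2[symmetric]])
  also have "\<dots> = cv f (cv g h)"
    unfolding cv_def using t by (simp add: W_split W_nest)
  finally show ?thesis .
qed

lemma cv_R: "cv m (S \<bullet> m) = eta \<bullet> e2"
proof -
  have c: "W 0 m 1 \<bullet> W 2 S 0 = W 1 S 0 \<bullet> W 0 m 1"
    using W_comm[where f=m and p=2 and q=1 and g=S and p'=1 and q'=1 and k=0 and j=0 and r=0] by simp
  have "cv m (S \<bullet> m) = m \<bullet> W 1 S 0 \<bullet> W 0 m 1 \<bullet> W 2 m 0 \<bullet> D2"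
    unfolding cv_def by (simp add: W_split ctxE[OF c])
  also have "\<dots> = m \<bullet> W 1 S 0 \<bullet> Dl \<bullet> m" using Dl_mD2 by simp
  also have "\<dots> = eta \<bullet> eps \<bullet> m" by (simp add: ctx3E[OF antiW(2)])
  finally show ?thesis using eps_mW by simp
qed

definition Lm where "Lm = m \<bullet> W 0 S 1 \<bullet> W 1 S 0 \<bullet> BH"
lemma Lm_typ[simp]: "Dom C Lm = P 2" "Cod C Lm = P 1" unfolding Lm_def by simp_all

lemma cv_L: "cv Lm m = eta \<bullet> e2"
proof -
  have e1: "W 0 BH 1 \<bullet> W 2 m 0 = W 2 m 0 \<bullet> W 0 BH 2"
    using W_comm[where f=BH and p=2 and q=2 and g=m and p'=2 and q'=1 and k=0 and j=0 and r=0] by simp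
  have e2': "W 1 S 1 \<bullet> W 2 m 0 = W 2 m 0 \<bullet> W 1 S 2"
    using W_comm[where f=S and p=1 and q=1 and g=m and p'=2 and q'=1 and k=1 and j=0 and r=0] by simp
  have e3: "W 0 S 2 \<bullet> W 2 m 0 = W 2 m 0 \<bullet> W 0 S 3"
    using W_comm[where f=S and p=1 and q=1 and g=m and p'=2 and q'=1 and k=0 and j=1 and r=0] by simp
  have as: "m \<bullet> W 0 m 1 \<bullet> W 2 m 0 = m \<bullet> W 1 m 0 \<bullet> W 1 m 1"
  proof -
    have "m \<bullet> W 0 m 1 \<bullet> W 2 m 0 = m \<bullet> W 1 m 0 \<bullet> W 2 m 0" by (simp add: ctxE[OF m_assocW])
    also have "\<dots> = m \<bullet> W 1 (m \<bullet> W 1 m 0) 0" by (simp add: W_split W_nest)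
    also have "\<dots> = m \<bullet> W 1 (m \<bullet> W 0 m 1) 0" using m_assocW by simp
    also have "\<dots> = m \<bullet> W 1 m 0 \<bullet> W 1 m 1" by (simp add: W_split W_nest)
    finally show ?thesis .
  qed
  have e5: "W 1 m 1 \<bullet> W 0 S 3 = W 0 S 2 \<bullet> W 1 m 1"
    using W_comm2[where f=S and p=1 and q=1 and g=m and p'=2 and q'=1 and k=0 and j=0 and r=1] by simp
  have br: "W 0 BH 2 \<bullet> W 1 BH 1 \<bullet> W 0 Dl 2 = W 1 Dl 1 \<bullet> W 0 BH 1"
  proof -
    have n: "B 2 1 \<bullet> W 0 Dl 1 = W 1 Dl 0 \<bullet> BH" using nat_B[of Dl 1 2 i1 1 1] by (simp add: W_def)
    have "W 0 BH 2 \<bullet> W 1 BH 1 \<bullet> W 0 Dl 2 = W 0 (B 2 1 \<bullet> W 0 Dl 1) 1"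
      unfolding hexBH by (simp add: W_split W_nest)
    also have "\<dots> = W 1 Dl 1 \<bullet> W 0 BH 1" unfolding n by (simp add: W_split W_nest)
    finally show ?thesis .
  qed
  have ant: "W 1 m 1 \<bullet> W 1 S 2 \<bullet> W 1 Dl 1 = W 1 eta 1 \<bullet> W 1 eps 1"
  proof -
    have "W 1 m 1 \<bullet> W 1 S 2 \<bullet> W 1 Dl 1 = W 1 (m \<bullet> W 0 S 1 \<bullet> Dl) 1" by (simp add: W_split W_nest)
    also have "\<dots> = W 1 eta 1 \<bullet> W 1 eps 1" using antiW by (simp add: W_split)
    finally show ?thesis .
  qed
  have e6: "W 0 S 2 \<bullet> W 1 eta 1 = W 1 eta 1 \<bullet> W 0 S 1"
    using W_comm[where f=S and p=1 and q=1 and g=eta and p'=0 and q'=1 and k=0 and j=0 and r=1] by simp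
  have un: "W 1 m 0 \<bullet> W 1 eta 1 = idn 2"
  proof -
    have "W 1 m 0 \<bullet> W 1 eta 1 = W 1 (m \<bullet> W 0 eta 1) 0" by (simp add: W_split W_nest)
    then show ?thesis using m_unitW by simp
  qed
  have eb: "W 1 eps 1 \<bullet> W 0 BH 1 = W 0 eps 2"
  proof -
    have "W 0 (W 1 eps 0 \<bullet> BH) 1 = W 0 (W 0 eps 1) 1" using epsBH by simp
    then show ?thesis by (simp add: W_split W_nest)
  qed
  have e7: "W 0 eps 2 \<bullet> W 1 Dl 0 = Dl \<bullet> W 0 eps 1"
    using W_comm[where f=eps and p=1 and q=0 and g=Dl and p'=1 and q'=2 and k=0 and j=0 and r=0] by simp
  have "cv Lm m = m \<bullet> W 0 m 1 \<bullet> W 0 S 2 \<bullet> W 1 S 1 \<bullet> W 0 BH 1 \<bullet> W 2 m 0 \<bullet> W 1 BH 1 \<bullet> W 0 Dl 2 \<bullet> W 1 Dl 0"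
    unfolding cv_def Lm_def D2_def by (simp add: W_split W_nest)
  also have "\<dots> = m \<bullet> W 0 m 1 \<bullet> W 2 m 0 \<bullet> W 0 S 3 \<bullet> W 1 S 2 \<bullet> W 0 BH 2 \<bullet> W 1 BH 1 \<bullet> W 0 Dl 2 \<bullet> W 1 Dl 0"
    by (simp add: ctxE[OF e1] ctxE[OF e2'] ctxE[OF e3])
  also have "\<dots> = m \<bullet> W 1 m 0 \<bullet> W 1 m 1 \<bullet> W 0 S 3 \<bullet> W 1 S 2 \<bullet> W 0 BH 2 \<bullet> W 1 BH 1 \<bullet> W 0 Dl 2 \<bullet> W 1 Dl 0"
    by (simp add: ctx3E[OF as])
  also have "\<dots> = m \<bullet> W 1 m 0 \<bullet> W 0 S 2 \<bullet> W 1 m 1 \<bullet> W 1 S 2 \<bullet> W 1 Dl 1 \<bullet> W 0 BH 1 \<bullet> W 1 Dl 0"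
    by (simp add: ctxE[OF e5] ctx3E[OF br])
  also have "\<dots> = m \<bullet> W 1 m 0 \<bullet> W 0 S 2 \<bullet> W 1 eta 1 \<bullet> W 1 eps 1 \<bullet> W 0 BH 1 \<bullet> W 1 Dl 0"
    by (simp add: ctx3E[OF ant])
  also have "\<dots> = m \<bullet> W 0 S 1 \<bullet> W 1 eps 1 \<bullet> W 0 BH 1 \<bullet> W 1 Dl 0"
    by (simp add: ctxE[OF e6] ctxE[OF un])
  also have "\<dots> = m \<bullet> W 0 S 1 \<bullet> Dl \<bullet> W 0 eps 1"
    by (simp add: ctxE[OF eb] ctxT[OF e7])
  also have "\<dots> = eta \<bullet> e2" unfolding e2_def by (simp add: ctx3E[OF antiW(1)])
  finally show ?thesis .
qed

lemma S_anti: "S \<bullet> m = m \<bullet> W 0 S 1 \<bullet> W 1 S 0 \<bullet> BH"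
proof -
  have "Lm = cv Lm (eta \<bullet> e2)" using cv_unit_r[of Lm] by simp
  also have "\<dots> = cv Lm (cv m (S \<bullet> m))" using cv_R by simp
  also have "\<dots> = cv (cv Lm m) (S \<bullet> m)" using cv_assoc[of Lm m "S \<bullet> m"] by simp
  also have "\<dots> = S \<bullet> m" using cv_L cv_unit_l[of "S \<bullet> m"] by simp
  finally show ?thesis unfolding Lm_def by simp
qed


abbreviation St where "St \<equiv> twisted_antipode C Dl S dl"
definition X where "X = W 0 dl 1 \<bullet> Dl"
lemma X_typ[simp]: "Dom C X = P 1" "Cod C X = P 1" unfolding X_def by simp_all
lemma St_X: "St = S \<bullet> X"
  unfolding twisted_antipode_def X_def
  using W_tensor'[of dl 1 0 S 1 1 0 0] by (simp add: W_def)
lemma St_typ[simp]: "Dom C St = P 1" "Cod C St = P 1" unfolding St_X by simp_all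

lemma dlBH: "W 0 dl 1 \<bullet> BH = W 1 dl 0" "W 1 dl 0 \<bullet> BH = W 0 dl 1"
  using nat_B[of i1 1 1 dl 1 0] nat_B[of dl 1 0 i1 1 1] by (simp_all add: W_def)
lemma dl_mW: "dl \<bullet> m = dl \<bullet> W 0 dl 1"
  using dl_m W_tensor'[of dl 1 0 dl 1 0 0 0] by (simp add: W_def)

lemma X_m: "X \<bullet> m = m \<bullet> W 0 X 1 \<bullet> W 1 X 0"
proof -
  have a: "W 0 dl 1 \<bullet> W 0 m 1 = W 0 dl 1 \<bullet> W 0 dl 2"
  proof -
    have "W 0 (dl \<bullet> m) 1 = W 0 (dl \<bullet> W 0 dl 1) 1" using dl_mW by simp
    then show ?thesis by (simp add: W_split W_nest)
  qed
  have c1: "W 0 dl 2 \<bullet> W 2 m 0 = W 1 m 0 \<bullet> W 0 dl 3"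
    using W_comm[where f=dl and p=1 and q=0 and g=m and p'=2 and q'=1 and k=0 and j=1 and r=0] by simp
  have c2: "W 0 dl 1 \<bullet> W 1 m 0 = m \<bullet> W 0 dl 2"
    using W_comm[where f=dl and p=1 and q=0 and g=m and p'=2 and q'=1 and k=0 and j=0 and r=0] by simp
  have c3: "W 0 dl 3 \<bullet> W 1 BH 1 = W 0 BH 1 \<bullet> W 0 dl 3"
    using W_comm[where f=dl and p=1 and q=0 and g=BH and p'=2 and q'=2 and k=0 and j=0 and r=1] by simp
  have b: "W 0 dl 2 \<bullet> W 0 BH 1 = W 1 dl 1"
  proof -
    have "W 0 (W 0 dl 1 \<bullet> BH) 1 = W 0 (W 1 dl 0) 1" using dlBH by simp
    then show ?thesis by (simp add: W_split W_nest)
  qed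
  have c4': "W 1 dl 1 \<bullet> W 0 (W 0 dl 1 \<bullet> Dl) 2 = W 0 (W 0 dl 1 \<bullet> Dl) 1 \<bullet> W 1 dl 1"
    using W_comm2[where f="W 0 dl 1 \<bullet> Dl" and p=1 and q=1 and g=dl and p'=1 and q'=0 and k=0 and j=0 and r=1] by simp
  have c4: "W 1 dl 1 \<bullet> W 0 dl 3 \<bullet> W 0 Dl 2 = W 0 dl 2 \<bullet> W 0 Dl 1 \<bullet> W 1 dl 1"
    using c4' by (simp add: W_split W_nest)
  have "X \<bullet> m = W 0 dl 1 \<bullet> W 0 dl 2 \<bullet> W 2 m 0 \<bullet> W 1 BH 1 \<bullet> W 0 Dl 2 \<bullet> W 1 Dl 0"
    unfolding X_def by (simp add: Dl_mW ctxE[OF a])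
  also have "\<dots> = m \<bullet> W 0 dl 2 \<bullet> W 0 dl 3 \<bullet> W 1 BH 1 \<bullet> W 0 Dl 2 \<bullet> W 1 Dl 0"
    by (simp add: ctxE[OF c1] ctxE[OF c2])
  also have "\<dots> = m \<bullet> W 1 dl 1 \<bullet> W 0 dl 3 \<bullet> W 0 Dl 2 \<bullet> W 1 Dl 0"
    by (simp add: ctxE[OF c3] ctxE[OF b])
  also have "\<dots> = m \<bullet> W 0 X 1 \<bullet> W 1 X 0"
    unfolding X_def by (simp add: ctx3E[OF c4] W_split W_nest)
  finally show ?thesis .
qed

lemma St_anti: "St \<bullet> m = m \<bullet> W 0 St 1 \<bullet> W 1 St 0 \<bullet> BH"
proof -
  have n: "BH \<bullet> W 0 X 1 \<bullet> W 1 X 0 = W 0 X 1 \<bullet> W 1 X 0 \<bullet> BH"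
  proof -
    have t: "X \<otimes> X = W 0 X 1 \<bullet> W 1 X 0" using W_tensor[of X 1 1 X 1 1 0 0] by simp
    have nb: "BH \<bullet> (X \<otimes> X) = (X \<otimes> X) \<bullet> BH" using nat_B[of X 1 1 X 1 1] by simp
    show ?thesis using nb[unfolded t] by simp
  qed
  have c: "W 1 S 0 \<bullet> W 0 X 1 = W 0 X 1 \<bullet> W 1 S 0"
    using W_comm2[where f=X and p=1 and q=1 and g=S and p'=1 and q'=1 and k=0 and j=0 and r=0] by simp
  have "St \<bullet> m = S \<bullet> m \<bullet> W 0 X 1 \<bullet> W 1 X 0" unfolding St_X by (simp add: X_m)
  also have "\<dots> = m \<bullet> W 0 S 1 \<bullet> W 1 S 0 \<bullet> BH \<bullet> W 0 X 1 \<bullet> W 1 X 0" by (simp add: ctxE[OF S_anti])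
  also have "\<dots> = m \<bullet> W 0 S 1 \<bullet> W 1 S 0 \<bullet> W 0 X 1 \<bullet> W 1 X 0 \<bullet> BH" by (simp add: ctx3T[OF n])
  also have "\<dots> = m \<bullet> W 0 St 1 \<bullet> W 1 St 0 \<bullet> BH" unfolding St_X by (simp add: ctxE[OF c] W_split)
  finally show ?thesis .
qed

lemma X_Dl: "W 0 X 1 \<bullet> Dl = Dl \<bullet> X"
proof -
  have c: "W 0 dl 2 \<bullet> W 1 Dl 0 = Dl \<bullet> W 0 dl 1"
    using W_comm[where f=dl and p=1 and q=0 and g=Dl and p'=1 and q'=2 and k=0 and j=0 and r=0] by simp
  have "W 0 X 1 \<bullet> Dl = W 0 dl 2 \<bullet> W 0 Dl 1 \<bullet> Dl" unfolding X_def by (simp add: W_split W_nest)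
  also have "\<dots> = W 0 dl 2 \<bullet> W 1 Dl 0 \<bullet> Dl" using coassW by simp
  also have "\<dots> = Dl \<bullet> X" unfolding X_def by (simp add: ctxE[OF c])
  finally show ?thesis .
qed

lemma K: "W 0 m 1 \<bullet> W 1 BH 0 \<bullet> W 0 (Dl \<bullet> St) 1 \<bullet> Dl = W 0 eta 1 \<bullet> St"
proof -
  have "W 0 m 1 \<bullet> W 1 BH 0 \<bullet> W 0 (Dl \<bullet> St) 1 \<bullet> Dl = W 0 m 1 \<bullet> W 1 BH 0 \<bullet> W 0 (Dl \<bullet> S) 1 \<bullet> W 0 X 1 \<bullet> Dl"
    unfolding St_X by (simp add: W_split)
  also have "\<dots> = W 0 m 1 \<bullet> W 1 BH 0 \<bullet> W 0 (Dl \<bullet> S) 1 \<bullet> Dl \<bullet> X" using X_Dl by simp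
  also have "\<dots> = W 0 eta 1 \<bullet> S \<bullet> X" by (simp add: ctx4E[OF KS])
  finally show ?thesis unfolding St_X by simp
qed

lemma X_eta: "X \<bullet> eta = eta"
proof -
  have a: "W 0 dl 1 \<bullet> W 0 eta 1 = i1" using dl_eta by (simp add: W_merge)
  show ?thesis unfolding X_def using Dl_etaW by (simp add: ctxE[OF a])
qed
lemma X_sg: "X \<bullet> sg = sg"
proof -
  have a: "W 0 dl 1 \<bullet> W 0 sg 1 = i1" using dl_sg by (simp add: W_merge)
  show ?thesis unfolding X_def using Dl_sgW by (simp add: ctxE[OF a])
qed
lemma St_eta: "St \<bullet> eta = eta" unfolding St_X using X_eta S_eta by simp
lemma St_sg: "St \<bullet> sg = S \<bullet> sg" unfolding St_X using X_sg by simp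

lemma Ssg_inv: "m \<bullet> W 0 (S \<bullet> sg) 1 \<bullet> sg = eta" "m \<bullet> W 1 (S \<bullet> sg) 0 \<bullet> sg = eta"
proof -
  have "m \<bullet> W 0 S 1 \<bullet> Dl \<bullet> sg = eta" using eps_sg by (simp add: ctx3E[OF antiW(1)])
  then show "m \<bullet> W 0 (S \<bullet> sg) 1 \<bullet> sg = eta" using Dl_sgW by (simp add: W_split)
  have c: "W 1 S 0 \<bullet> W 0 sg 1 = W 0 sg 1 \<bullet> S"
    using W_comm2[where f=sg and p=0 and q=1 and g=S and p'=1 and q'=1 and k=0 and j=0 and r=0] by simp
  have "m \<bullet> W 1 S 0 \<bullet> Dl \<bullet> sg = eta" using eps_sg by (simp add: ctx3E[OF antiW(2)])
  then have "m \<bullet> W 0 sg 1 \<bullet> S \<bullet> sg = eta" using Dl_sgW by (simp add: ctxE[OF c])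
  then show "m \<bullet> W 1 (S \<bullet> sg) 0 \<bullet> sg = eta" using pts[of sg 1 "S \<bullet> sg" 1] by simp
qed

end

context bsetup begin

definition act where "act k = M (Suc k) \<bullet> W 0 (D k) (Suc k)"
lemma act_typ[simp]: "Dom C (act k) = P (Suc (Suc k))" "Cod C (act k) = P (Suc k)"
  unfolding act_def by simp_all

lemma D_back: "D (Suc j) = W 0 (D j) 1 \<bullet> Dl"
proof (induction j)
  case 0 then show ?case by (simp add: D_Suc)
next
  case (Suc j)
  have "D (Suc (Suc j)) = W j Dl 1 \<bullet> D (Suc j)" using D_slot[of j 1] by simp
  also have "\<dots> = W 0 (W j Dl 0 \<bullet> D j) 1 \<bullet> Dl" unfolding Suc by (simp add: W_split W_nest)
  also have "\<dots> = W 0 (D (Suc j)) 1 \<bullet> Dl" using D_slot[of j 0] by simp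
  finally show ?case .
qed

lemma M_front: "M (Suc k) = W 0 m k \<bullet> W 2 (M k) 0 \<bullet> W 1 (B k 1) k"
  using M_add[of 1 k] W_tensor[of m 2 1 "M k" "2*k" k 0 0] by (simp add: M1)
lemma M_back: "M (Suc k) = W 0 (M k) 1 \<bullet> W (2*k) m 0 \<bullet> W k (B 1 k) 1"
  using M_add[of k 1] W_tensor[of "M k" "2*k" k m 2 1 0 0] by (simp add: M1)

lemma act_front: "act (Suc j) = W 1 (act j) 0 \<bullet> W 0 m (Suc (Suc j)) \<bullet> W 1 BH (Suc j) \<bullet> W 0 Dl (Suc (Suc j))"
proof -
  define k where "k = Suc j"
  have n: "W 1 (B k 1) k \<bullet> W 1 (D j) (Suc k) = W 2 (D j) k \<bullet> W 1 BH k"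
  proof -
    have "B k 1 \<bullet> W 0 (D j) 1 = W 1 (D j) 0 \<bullet> BH" using nat_B[of "D j" 1 k i1 1 1] by (simp add: W_def k_def)
    then have "W 1 (B k 1 \<bullet> W 0 (D j) 1) k = W 1 (W 1 (D j) 0 \<bullet> BH) k" by simp
    then show ?thesis by (simp add: W_split W_nest k_def)
  qed
  have c: "W 0 m k \<bullet> W 2 (act j) 0 = W 1 (act j) 0 \<bullet> W 0 m (Suc k)"
    using W_comm[where f=m and p=2 and q=1 and g="act j" and p'="Suc k" and q'=k and k=0 and j=0 and r=0] by (simp add: k_def)
  have "act k = W 0 m k \<bullet> W 2 (M k) 0 \<bullet> W 1 (B k 1) k \<bullet> W 1 (D j) (Suc k) \<bullet> W 0 Dl (Suc k)"
    unfolding act_def M_front k_def D_front by (simp add: W_split W_nest)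
  also have "\<dots> = W 0 m k \<bullet> W 2 (M k) 0 \<bullet> W 2 (D j) k \<bullet> W 1 BH k \<bullet> W 0 Dl (Suc k)"
    by (simp add: ctxE[OF n] k_def)
  also have "\<dots> = W 0 m k \<bullet> W 2 (act j) 0 \<bullet> W 1 BH k \<bullet> W 0 Dl (Suc k)"
    unfolding act_def k_def by (simp add: W_split W_nest)
  also have "\<dots> = W 1 (act j) 0 \<bullet> W 0 m (Suc k) \<bullet> W 1 BH k \<bullet> W 0 Dl (Suc k)"
    by (simp add: ctxE[OF c] k_def)
  finally show ?thesis unfolding k_def .
qed

lemma act_assoc: "act k \<bullet> W 0 m (Suc k) = act k \<bullet> W 1 (act k) 0"
proof -
  have dm: "D k \<bullet> m = M (Suc k) \<bullet> (D k \<otimes> D k)" using AM_D[of k] unfolding AM_def by (simp add: M1)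
  have dd: "D k \<otimes> D k = W 0 (D k) (Suc k) \<bullet> W 1 (D k) 0" using W_tensor[of "D k" 1 "Suc k" "D k" 1 "Suc k" 0 0] by simp
  have ma: "M (Suc k) \<bullet> W 0 (M (Suc k)) (Suc k) = M (Suc k) \<bullet> W (Suc k) (M (Suc k)) 0" by (rule M_assoc)
  have c: "W 0 (D k) (Suc k) \<bullet> W 1 (M (Suc k)) 0 = W (Suc k) (M (Suc k)) 0 \<bullet> W 0 (D k) (Suc k + Suc k)"
    using W_comm[where f="D k" and p=1 and q="Suc k" and g="M (Suc k)" and p'="2 * Suc k" and q'="Suc k" and k=0 and j=0 and r=0] by simp
  have "act k \<bullet> W 0 m (Suc k) = M (Suc k) \<bullet> W 0 (D k \<bullet> m) (Suc k)"
    unfolding act_def by (simp add: W_split)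
  also have "\<dots> = M (Suc k) \<bullet> W 0 (M (Suc k)) (Suc k) \<bullet> W 0 (D k) (Suc k + Suc k) \<bullet> W 1 (D k) (Suc k)"
    unfolding dm dd by (simp add: W_split W_nest)
  also have "\<dots> = M (Suc k) \<bullet> W (Suc k) (M (Suc k)) 0 \<bullet> W 0 (D k) (Suc k + Suc k) \<bullet> W 1 (D k) (Suc k)"
    by (simp add: ctxE[OF ma])
  also have "\<dots> = act k \<bullet> W 1 (act k) 0"
    unfolding act_def by (simp add: W_split W_nest ctxE[OF c[symmetric]])
  finally show ?thesis .
qed

lemma mpiW: "St \<bullet> St = m \<bullet> W 0 m 1 \<bullet> W 0 sg 2 \<bullet> W 1 (S \<bullet> sg) 0"
proof -
  have "sg \<otimes> i1 \<otimes> (S \<bullet> sg) = W 0 sg 2 \<bullet> W 1 (S \<bullet> sg) 0"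
    using W_tensor[of sg 0 1 "i1 \<otimes> (S \<bullet> sg)" 1 2 0 0] by (simp add: W_def)
  then show ?thesis using mpi by (simp add: W_def)
qed

lemma MPIW: "m \<bullet> W 0 (St \<bullet> St) 1 \<bullet> W 1 sg 0 = m \<bullet> W 0 sg 1"
proof -
  have c1: "W 1 m 0 \<bullet> W 0 m 2 = W 0 m 1 \<bullet> W 2 m 0"
    using W_comm2[where f=m and p=2 and q=1 and g=m and p'=2 and q'=1 and k=0 and j=0 and r=0] by simp
  have c2: "W 2 m 0 \<bullet> W 0 sg 3 = W 0 sg 2 \<bullet> W 1 m 0"
    using W_comm2[where f=sg and p=0 and q=1 and g=m and p'=2 and q'=1 and k=0 and j=1 and r=0] by simp
  have iv: "W 1 m 0 \<bullet> W 1 (S \<bullet> sg) 1 \<bullet> W 1 sg 0 = W 1 eta 0"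
  proof -
    have "W 1 m 0 \<bullet> W 1 (S \<bullet> sg) 1 \<bullet> W 1 sg 0 = W 1 (m \<bullet> W 0 (S \<bullet> sg) 1 \<bullet> sg) 0" by (simp add: W_split W_nest)
    then show ?thesis using Ssg_inv by simp
  qed
  have c3: "W 0 sg 2 \<bullet> W 1 eta 0 = W 2 eta 0 \<bullet> W 0 sg 1"
    using W_comm[where f=sg and p=0 and q=1 and g=eta and p'=0 and q'=1 and k=0 and j=1 and r=0] by simp
  have un: "m \<bullet> W 0 m 1 \<bullet> W 2 eta 0 = m"
  proof -
    have "m \<bullet> W 0 m 1 \<bullet> W 2 eta 0 = m \<bullet> W 1 m 0 \<bullet> W 2 eta 0" by (simp add: ctxE[OF m_assocW])
    also have "\<dots> = m \<bullet> W 1 (m \<bullet> W 1 eta 0) 0" by (simp add: W_split W_nest)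
    finally show ?thesis using m_unitW by simp
  qed
  have "m \<bullet> W 0 (St \<bullet> St) 1 \<bullet> W 1 sg 0 = m \<bullet> W 0 m 1 \<bullet> W 0 m 2 \<bullet> W 0 sg 3 \<bullet> W 1 (S \<bullet> sg) 1 \<bullet> W 1 sg 0"
    unfolding mpiW by (simp add: W_split W_nest)
  also have "\<dots> = m \<bullet> W 0 m 1 \<bullet> W 2 m 0 \<bullet> W 0 sg 3 \<bullet> W 1 (S \<bullet> sg) 1 \<bullet> W 1 sg 0"
    by (simp add: ctxE[OF m_assocW] ctxE[OF c1])
  also have "\<dots> = m \<bullet> W 0 m 1 \<bullet> W 0 sg 2 \<bullet> W 1 eta 0"
    by (simp add: ctxE[OF c2] ctx3T[OF iv])
  also have "\<dots> = m \<bullet> W 0 sg 1"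
    by (simp add: ctxT[OF c3] ctx3E[OF un])
  finally show ?thesis .
qed


lemma M_unit1: "M k \<bullet> W 0 (u k) k = idn k" using M_unit by blast

lemma E_lem: "M (Suc k) \<bullet> W 0 (u k) (Suc (Suc k)) = W k m 0 \<bullet> W 0 (B 1 k) 1"
proof -
  have c1: "W k (B 1 k) 1 \<bullet> W 0 (u k) (Suc (Suc k)) = W 0 (u k) (Suc (Suc k)) \<bullet> W 0 (B 1 k) 1"
    using W_comm2[where f="u k" and p=0 and q=k and g="B 1 k" and p'="Suc k" and q'="Suc k" and k=0 and j=0 and r=1] by simp
  have c2: "W (2*k) m 0 \<bullet> W 0 (u k) (Suc (Suc k)) = W 0 (u k) (Suc k) \<bullet> W k m 0"
    using W_comm2[where f="u k" and p=0 and q=k and g=m and p'=2 and q'=1 and k=0 and j=k and r=0] by simp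
  have c3: "W 0 (M k) 1 \<bullet> W 0 (u k) (Suc k) = idn (Suc k)"
  proof -
    have "W 0 (M k) 1 \<bullet> W 0 (u k) (Suc k) = W 0 (M k \<bullet> W 0 (u k) k) 1" by (simp add: W_split W_nest)
    then show ?thesis using M_unit1[of k] by simp
  qed
  show ?thesis unfolding M_back by (simp add: ctxE[OF c1] ctxE[OF c2] ctxE[OF c3] ctxT[OF c1] ctxT[OF c2] ctxT[OF c3])
qed

lemma SE_lem: "W k sg 0 \<bullet> M k = M (Suc k) \<bullet> W (Suc (2*k)) sg 0 \<bullet> W k eta k"
proof -
  have c1: "W k (B 1 k) 1 \<bullet> W (Suc (2*k)) sg 0 = W (Suc (2*k)) sg 0 \<bullet> W k (B 1 k) 0"
    using W_comm[where f="B 1 k" and p="Suc k" and q="Suc k" and g=sg and p'=0 and q'=1 and k=k and j=0 and r=0] by simp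
  have n: "W k (B 1 k) 0 \<bullet> W k eta k = W (2*k) eta 0"
  proof -
    have "B 1 k \<bullet> W 0 eta k = W k eta 0" using nat_B[of eta 0 1 "idn k" k k] by (simp add: W_def)
    then have "W k (B 1 k \<bullet> W 0 eta k) 0 = W k (W k eta 0) 0" by simp
    then show ?thesis by (simp add: W_split W_nest)
  qed
  have u: "W (2*k) m 0 \<bullet> W (Suc (2*k)) sg 0 \<bullet> W (2*k) eta 0 = W (2*k) sg 0"
  proof -
    have a: "m \<bullet> W 1 sg 0 \<bullet> eta = sg"
      by (simp add: pts[of eta "Suc 0" sg "Suc 0", symmetric] ctxE[OF m_unitW(1)])
    have "W (2*k) m 0 \<bullet> W (Suc (2*k)) sg 0 \<bullet> W (2*k) eta 0 = W (2*k) (m \<bullet> W 1 sg 0 \<bullet> eta) 0"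
      by (simp add: W_split W_nest)
    then show ?thesis using a by simp
  qed
  have c2: "W 0 (M k) 1 \<bullet> W (2*k) sg 0 = W k sg 0 \<bullet> M k"
    using W_comm[where f="M k" and p="2*k" and q=k and g=sg and p'=0 and q'=1 and k=0 and j=0 and r=0] by simp
  show ?thesis unfolding M_back by (simp add: ctxE[OF c1] ctxT[OF n] ctx3T[OF u] ctxT[OF c2])
qed

definition Npre where "Npre j = W 0 (D (Suc j)) (Suc (Suc j)) \<bullet> W (Suc (Suc j)) eta 0 \<bullet> W 1 (D j) 0"

lemma Npre_typ[simp]: "Dom C (Npre j) = P 2" "Cod C (Npre j) = P (2 * Suc (Suc j))"
  unfolding Npre_def by simp_all

lemma N_lem: "M (Suc (Suc j)) \<bullet> Npre j = W 0 (D j) 1 \<bullet> W 0 m 1 \<bullet> W 1 BH 0 \<bullet> W 0 Dl 1"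
proof -
  have e1: "W 0 Dl (Suc (Suc j)) \<bullet> W (Suc (Suc j)) eta 0 = W (Suc (Suc (Suc j))) eta 0 \<bullet> W 0 Dl (Suc j)"
    using W_comm[where f=Dl and p=1 and q=2 and g=eta and p'=0 and q'=1 and k=0 and j="Suc j" and r=0] by simp
  have e2: "W 0 (D j) (Suc (Suc (Suc j))) \<bullet> W (Suc (Suc (Suc j))) eta 0 = W (Suc (2*(Suc j))) eta 0 \<bullet> W 0 (D j) (Suc (Suc j))"
    using W_comm[where f="D j" and p=1 and q="Suc j" and g=eta and p'=0 and q'=1 and k=0 and j="Suc (Suc j)" and r=0] by (simp add:)
  have e3: "W (Suc j) (B 1 (Suc j)) 1 \<bullet> W (Suc (2*(Suc j))) eta 0 = W (Suc (2*(Suc j))) eta 0 \<bullet> W (Suc j) (B 1 (Suc j)) 0"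
    using W_comm[where f="B 1 (Suc j)" and p="Suc (Suc j)" and q="Suc (Suc j)" and g=eta and p'=0 and q'=1 and k="Suc j" and j=0 and r=0] by simp
  have e4: "W (2*(Suc j)) m 0 \<bullet> W (Suc (2*(Suc j))) eta 0 = idn (Suc (2*(Suc j)))"
  proof -
    have "W (2*(Suc j)) m 0 \<bullet> W (Suc (2*(Suc j))) eta 0 = W (2*(Suc j)) (m \<bullet> W 1 eta 0) 0" by (simp add: W_split W_nest)
    then show ?thesis using m_unitW by simp
  qed
  have f1: "W 0 Dl (Suc j) \<bullet> W 1 (D j) 0 = W 2 (D j) 0 \<bullet> W 0 Dl 1"
    using W_comm[where f=Dl and p=1 and q=2 and g="D j" and p'=1 and q'="Suc j" and k=0 and j=0 and r=0] by (simp add:)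
  have f2: "W 0 (D j) (Suc (Suc j)) \<bullet> W 2 (D j) 0 = W (Suc (Suc j)) (D j) 0 \<bullet> W 0 (D j) 2"
    using W_comm[where f="D j" and p=1 and q="Suc j" and g="D j" and p'=1 and q'="Suc j" and k=0 and j=1 and r=0] by (simp add:)
  have f3: "W (Suc j) (B 1 (Suc j)) 0 \<bullet> W (Suc (Suc j)) (D j) 0 = W (Suc j) (D j) 1 \<bullet> W (Suc j) BH 0"
  proof -
    have "B 1 (Suc j) \<bullet> W 1 (D j) 0 = W 0 (D j) 1 \<bullet> BH" using nat_B[of i1 1 1 "D j" 1 "Suc j"] by (simp add: W_def)
    then have "W (Suc j) (B 1 (Suc j) \<bullet> W 1 (D j) 0) 0 = W (Suc j) (W 0 (D j) 1 \<bullet> BH) 0" by simp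
    then show ?thesis by (simp add: W_split W_nest)
  qed
  have f4: "W (Suc j) BH 0 \<bullet> W 0 (D j) 2 = W 0 (D j) 2 \<bullet> W 1 BH 0"
    using W_comm2[where f="D j" and p=1 and q="Suc j" and g=BH and p'=2 and q'=2 and k=0 and j=0 and r=0] by (simp add:)
  have f5: "W 0 (M (Suc j)) 1 \<bullet> W (Suc j) (D j) 1 \<bullet> W 0 (D j) 2 = W 0 (D j) 1 \<bullet> W 0 m 1"
  proof -
    have dm: "D j \<bullet> m = M (Suc j) \<bullet> (D j \<otimes> D j)" using AM_D[of j] unfolding AM_def by (simp add: M1)
    have dd: "D j \<otimes> D j = W (Suc j) (D j) 0 \<bullet> W 0 (D j) 1"
      using W_tensor'[of "D j" 1 "Suc j" "D j" 1 "Suc j" 0 0] by (simp add:)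
    have "W 0 (M (Suc j) \<bullet> (D j \<otimes> D j)) 1 = W 0 (D j \<bullet> m) 1" using dm by simp
    then show ?thesis unfolding dd by (simp add: W_split W_nest)
  qed
  have "M (Suc (Suc j)) \<bullet> Npre j = W 0 (M (Suc j)) 1 \<bullet> W (2*(Suc j)) m 0 \<bullet> W (Suc j) (B 1 (Suc j)) 1 \<bullet> W 0 (D j) (Suc (Suc (Suc j))) \<bullet> W 0 Dl (Suc (Suc j)) \<bullet> W (Suc (Suc j)) eta 0 \<bullet> W 1 (D j) 0"
    unfolding M_back Npre_def D_back by (simp add: W_split W_nest)
  also have "\<dots> = W 0 (M (Suc j)) 1 \<bullet> W (Suc j) (B 1 (Suc j)) 0 \<bullet> W 0 (D j) (Suc (Suc j)) \<bullet> W 0 Dl (Suc j) \<bullet> W 1 (D j) 0"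
    by (simp add: ctxE[OF e1] ctxE[OF e2] ctxE[OF e3] ctxE[OF e4])
  also have "\<dots> = W 0 (M (Suc j)) 1 \<bullet> W (Suc j) (D j) 1 \<bullet> W 0 (D j) 2 \<bullet> W 1 BH 0 \<bullet> W 0 Dl 1"
    by (simp add: ctxE[OF f1] ctxE[OF f2] ctxE[OF f3] ctxE[OF f4] ctxT[OF f1] ctxT[OF f2] ctxT[OF f3] ctxT[OF f4])
  also have "\<dots> = W 0 (D j) 1 \<bullet> W 0 m 1 \<bullet> W 1 BH 0 \<bullet> W 0 Dl 1"
    by (simp add: ctx3E[OF f5])
  finally show ?thesis .
qed

lemma Kb: "M (Suc (Suc j)) \<bullet> Npre j \<bullet> W 0 St 1 \<bullet> Dl = W 0 (u (Suc j)) 1 \<bullet> St"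
proof -
  have "M (Suc (Suc j)) \<bullet> Npre j \<bullet> W 0 St 1 \<bullet> Dl = W 0 (D j) 1 \<bullet> W 0 m 1 \<bullet> W 1 BH 0 \<bullet> W 0 (Dl \<bullet> St) 1 \<bullet> Dl"
    using N_lem[of j] by (simp add: ctxE[OF N_lem] W_split)
  also have "\<dots> = W 0 (D j) 1 \<bullet> W 0 eta 1 \<bullet> St" by (simp add: ctx4T[OF K])
  also have "\<dots> = W 0 (u (Suc j)) 1 \<bullet> St"
  proof -
    have a: "W 0 (D j) 1 \<bullet> W 0 eta 1 = W 0 (u (Suc j)) 1" using D_eta[of j] by (simp add: W_merge del: tpowm.simps)
    show ?thesis by (simp add: ctxE[OF a] del: tpowm.simps)
  qed
  finally show ?thesis .
qed


lemma Z_lem: "act (Suc j) \<bullet> W 1 (W (Suc j) sg 0 \<bullet> act j) 0 \<bullet> W 0 St (Suc (Suc j)) \<bullet> W 0 Dl (Suc j) = W (Suc j) (m \<bullet> W 1 sg 0 \<bullet> St) 0 \<bullet> B 1 (Suc j)"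
proof -
  have s1: "W (Suc j) sg 0 \<bullet> act j = M (Suc (Suc j)) \<bullet> W (Suc (2*(Suc j))) sg 0 \<bullet> W (Suc j) eta (Suc j) \<bullet> W 0 (D j) (Suc j)"
    unfolding act_def by (simp add: ctxE[OF SE_lem] ctxT[OF SE_lem])
  have c: "W 0 (D (Suc j)) (Suc (Suc j)) \<bullet> W 1 (M (Suc (Suc j))) 0 = W (Suc (Suc j)) (M (Suc (Suc j))) 0 \<bullet> W 0 (D (Suc j)) (Suc (Suc j) + Suc (Suc j))"
    using W_comm[where f="D (Suc j)" and p=1 and q="Suc (Suc j)" and g="M (Suc (Suc j))" and p'="2 * Suc (Suc j)" and q'="Suc (Suc j)" and k=0 and j=0 and r=0] by simp
  have ma: "M (Suc (Suc j)) \<bullet> W (Suc (Suc j)) (M (Suc (Suc j))) 0 = M (Suc (Suc j)) \<bullet> W 0 (M (Suc (Suc j))) (Suc (Suc j))" using M_assoc by simp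
  have s2: "act (Suc j) \<bullet> W 1 (M (Suc (Suc j))) 0 = M (Suc (Suc j)) \<bullet> W 0 (M (Suc (Suc j))) (Suc (Suc j)) \<bullet> W 0 (D (Suc j)) (Suc (Suc j) + Suc (Suc j))"
    unfolding act_def by (simp add: ctxE[OF c] ctxE[OF ma] ctxT[OF c] ctxT[OF ma])
  have s3: "W 0 (D (Suc j)) (Suc (Suc (2*(Suc j)))) \<bullet> W (Suc (Suc (2*(Suc j)))) sg 0 = W (Suc (Suc (3*(Suc j)))) sg 0 \<bullet> W 0 (D (Suc j)) (Suc (2*(Suc j)))"
    using W_comm[where f="D (Suc j)" and p=1 and q="Suc (Suc j)" and g=sg and p'=0 and q'=1 and k=0 and j="Suc (2*(Suc j))" and r=0] by simp
  have s4: "W 0 (M (Suc (Suc j))) (Suc (Suc j)) \<bullet> W (Suc (Suc (3*(Suc j)))) sg 0 = W (Suc (2*(Suc j))) sg 0 \<bullet> W 0 (M (Suc (Suc j))) (Suc j)"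
    using W_comm[where f="M (Suc (Suc j))" and p="2 * Suc (Suc j)" and q="Suc (Suc j)" and g=sg and p'=0 and q'=1 and k=0 and j="Suc j" and r=0] by simp
  have s5: "W 0 (M (Suc (Suc j))) (Suc j) \<bullet> W 0 (D (Suc j)) (Suc (2*(Suc j))) \<bullet> W (Suc (Suc j)) eta (Suc j) \<bullet> W 1 (D j) (Suc j) \<bullet> W 0 St (Suc (Suc j)) \<bullet> W 0 Dl (Suc j)
      = W 0 (u (Suc j)) (Suc (Suc j)) \<bullet> W 0 St (Suc j)"
  proof -
    have "W 0 (M (Suc (Suc j))) (Suc j) \<bullet> W 0 (D (Suc j)) (Suc (2*(Suc j))) \<bullet> W (Suc (Suc j)) eta (Suc j) \<bullet> W 1 (D j) (Suc j) \<bullet> W 0 St (Suc (Suc j)) \<bullet> W 0 Dl (Suc j)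
       = W 0 (M (Suc (Suc j)) \<bullet> Npre j \<bullet> W 0 St 1 \<bullet> Dl) (Suc j)"
      unfolding Npre_def by (simp add: W_split W_nest)
    also have "\<dots> = W 0 (W 0 (u (Suc j)) 1 \<bullet> St) (Suc j)" using Kb[of j] by simp
    also have "\<dots> = W 0 (u (Suc j)) (Suc (Suc j)) \<bullet> W 0 St (Suc j)" by (simp add: W_split W_nest del: tpowm.simps)
    finally show ?thesis .
  qed
  have s6: "W (Suc (2*(Suc j))) sg 0 \<bullet> W 0 (u (Suc j)) (Suc (Suc j)) = W 0 (u (Suc j)) (Suc (Suc (Suc j))) \<bullet> W (Suc (Suc j)) sg 0"
    using W_comm[where f="u (Suc j)" and p=0 and q="Suc j" and g=sg and p'=0 and q'=1 and k=0 and j="Suc (Suc j)" and r=0] by (simp del: tpowm.simps)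
  have s7: "W 0 (B 1 (Suc j)) 1 \<bullet> W (Suc (Suc j)) sg 0 = W (Suc (Suc j)) sg 0 \<bullet> B 1 (Suc j)"
    using W_comm[where f="B 1 (Suc j)" and p="Suc (Suc j)" and q="Suc (Suc j)" and g=sg and p'=0 and q'=1 and k=0 and j=0 and r=0] by simp
  have s8: "B 1 (Suc j) \<bullet> W 0 St (Suc j) = W (Suc j) St 0 \<bullet> B 1 (Suc j)"
    using nat_B[of St 1 1 "idn (Suc j)" "Suc j" "Suc j"] by (simp add: W_def)
  have "act (Suc j) \<bullet> W 1 (W (Suc j) sg 0 \<bullet> act j) 0 \<bullet> W 0 St (Suc (Suc j)) \<bullet> W 0 Dl (Suc j)
      = act (Suc j) \<bullet> W 1 (M (Suc (Suc j))) 0 \<bullet> W (Suc (Suc (2*(Suc j)))) sg 0 \<bullet> W (Suc (Suc j)) eta (Suc j) \<bullet> W 1 (D j) (Suc j) \<bullet> W 0 St (Suc (Suc j)) \<bullet> W 0 Dl (Suc j)"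
    unfolding s1 by (simp add: W_split W_nest)
  also have "\<dots> = M (Suc (Suc j)) \<bullet> W 0 (M (Suc (Suc j))) (Suc (Suc j)) \<bullet> W 0 (D (Suc j)) (Suc (Suc j) + Suc (Suc j)) \<bullet> W (Suc (Suc (2*(Suc j)))) sg 0 \<bullet> W (Suc (Suc j)) eta (Suc j) \<bullet> W 1 (D j) (Suc j) \<bullet> W 0 St (Suc (Suc j)) \<bullet> W 0 Dl (Suc j)"
    by (simp add: ctxE[OF s2] ctxT[OF s2])
  also have "\<dots> = M (Suc (Suc j)) \<bullet> W (Suc (2*(Suc j))) sg 0 \<bullet> W 0 (M (Suc (Suc j))) (Suc j) \<bullet> W 0 (D (Suc j)) (Suc (2*(Suc j))) \<bullet> W (Suc (Suc j)) eta (Suc j) \<bullet> W 1 (D j) (Suc j) \<bullet> W 0 St (Suc (Suc j)) \<bullet> W 0 Dl (Suc j)"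
    by (simp add: ctxE[OF s3] ctxE[OF s4] ctxT[OF s3] ctxT[OF s4])
  also have "\<dots> = M (Suc (Suc j)) \<bullet> W (Suc (2*(Suc j))) sg 0 \<bullet> W 0 (u (Suc j)) (Suc (Suc j)) \<bullet> W 0 St (Suc j)"
    using s5 by (simp del: tpowm.simps)
  also have "\<dots> = W (Suc j) m 0 \<bullet> W 0 (B 1 (Suc j)) 1 \<bullet> W (Suc (Suc j)) sg 0 \<bullet> W 0 St (Suc j)"
    by (simp add: ctxE[OF s6] ctxE[OF E_lem] ctxT[OF s6] ctxT[OF E_lem] del: tpowm.simps)
  also have "\<dots> = W (Suc j) (m \<bullet> W 1 sg 0 \<bullet> St) 0 \<bullet> B 1 (Suc j)"
    by (simp add: ctxE[OF s7] ctxT[OF s8] W_split W_nest ctxT[OF s7])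
  finally show ?thesis .
qed


definition Q where "Q k = act k \<bullet> W 0 St (Suc k)"
definition T where "T k = W (Suc k) m 0 \<bullet> W (Suc k) sg 1 \<bullet> B 1 (Suc k)"
definition tau where "tau k = Q k \<bullet> W (Suc k) sg 0"
lemma Q_typ[simp]: "Dom C (Q k) = P (Suc (Suc k))" "Cod C (Q k) = P (Suc k)" unfolding Q_def by simp_all
lemma T_typ[simp]: "Dom C (T k) = P (Suc (Suc k))" "Cod C (T k) = P (Suc (Suc k))" unfolding T_def by simp_all
lemma tau_typ[simp]: "Dom C (tau k) = P (Suc k)" "Cod C (tau k) = P (Suc k)" unfolding tau_def by simp_all

lemma r13: "m \<bullet> W 1 sg 0 \<bullet> St \<bullet> St = m \<bullet> W 0 sg 1"
proof -
  have c: "W 1 sg 0 \<bullet> (St \<bullet> St) = W 0 (St \<bullet> St) 1 \<bullet> W 1 sg 0"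
    using W_comm[where f="St \<bullet> St" and p=1 and q=1 and g=sg and p'=0 and q'=1 and k=0 and j=0 and r=0] by simp
  have "m \<bullet> W 1 sg 0 \<bullet> St \<bullet> St = m \<bullet> W 0 (St \<bullet> St) 1 \<bullet> W 1 sg 0" using c by simp
  then show ?thesis using MPIW by simp
qed

lemma act0: "act 0 = m" unfolding act_def by (simp add: M1)

lemma claim2_0: "Q 0 \<bullet> T 0 = tau 0 \<bullet> Q 0"
proof -
  have c1: "W 0 St 1 \<bullet> W 1 sg 0 = W 1 sg 0 \<bullet> St"
    using W_comm[where f=St and p=1 and q=1 and g=sg and p'=0 and q'=1 and k=0 and j=0 and r=0] by simp
  have n: "BH \<bullet> W 0 St 1 = W 1 St 0 \<bullet> BH" using nat_B[of St 1 1 i1 1 1] by (simp add: W_def)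
  have c2: "W 1 sg 0 \<bullet> m = W 0 m 1 \<bullet> W 2 sg 0"
    using W_comm[where f=m and p=2 and q=1 and g=sg and p'=0 and q'=1 and k=0 and j=0 and r=0] by simp
  have c3: "W 2 sg 0 \<bullet> W 0 St 1 = W 0 St 2 \<bullet> W 2 sg 0"
    using W_comm[where f=St and p=1 and q=1 and g=sg and p'=0 and q'=1 and k=0 and j=1 and r=0] by simp
  have c4: "W 1 m 0 \<bullet> W 0 St 2 = W 0 St 1 \<bullet> W 1 m 0"
    using W_comm2[where f=St and p=1 and q=1 and g=m and p'=2 and q'=1 and k=0 and j=0 and r=0] by simp
  have mm: "W 1 m 0 \<bullet> W 2 sg 0 \<bullet> W 1 St 0 \<bullet> W 1 St 0 = W 1 (m \<bullet> W 0 sg 1) 0"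
  proof -
    have "W 1 m 0 \<bullet> W 2 sg 0 \<bullet> W 1 St 0 \<bullet> W 1 St 0 = W 1 (m \<bullet> W 1 sg 0 \<bullet> St \<bullet> St) 0" by (simp add: W_split W_nest)
    then show ?thesis using r13 by simp
  qed
  have "tau 0 \<bullet> Q 0 = m \<bullet> W 1 sg 0 \<bullet> St \<bullet> m \<bullet> W 0 St 1"
    unfolding tau_def Q_def act0 by (simp add: ctxE[OF c1] ctxT[OF c1])
  also have "\<dots> = m \<bullet> W 0 m 1 \<bullet> W 2 sg 0 \<bullet> W 0 St 1 \<bullet> W 1 St 0 \<bullet> W 1 St 0 \<bullet> BH"
    by (simp add: ctxE[OF St_anti] ctxT[OF n] ctxE[OF c2])
  also have "\<dots> = m \<bullet> W 0 St 1 \<bullet> W 1 m 0 \<bullet> W 2 sg 0 \<bullet> W 1 St 0 \<bullet> W 1 St 0 \<bullet> BH"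
    by (simp add: ctxE[OF m_assocW] ctxE[OF c3] ctxE[OF c4])
  also have "\<dots> = Q 0 \<bullet> T 0"
    unfolding Q_def T_def act0 by (simp add: ctx4E[OF mm] W_split W_nest)
  finally show ?thesis by simp
qed

lemma claim2_Suc: "Q (Suc j) \<bullet> T (Suc j) = tau (Suc j) \<bullet> Q (Suc j)"
proof -
  define Y where "Y = W (Suc j) sg 0 \<bullet> act j"
  have tY: "Dom C Y = P (Suc (Suc j))" "Cod C Y = P (Suc (Suc j))" unfolding Y_def by simp_all
  have r2: "W (Suc (Suc j)) sg 0 \<bullet> W 1 (act j) 0 = W 1 Y 0" unfolding Y_def by (simp add: W_split W_nest)
  have r3: "W 0 St (Suc (Suc j)) \<bullet> W 1 Y 0 = W 1 Y 0 \<bullet> W 0 St (Suc (Suc j))"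
    using W_comm[where f=St and p=1 and q=1 and g=Y and p'="Suc (Suc j)" and q'="Suc (Suc j)" and k=0 and j=0 and r=0] tY by simp
  have r4: "W 0 St (Suc (Suc j)) \<bullet> W 0 m (Suc (Suc j)) = W 0 m (Suc (Suc j)) \<bullet> W 0 St (Suc (Suc (Suc j))) \<bullet> W 1 St (Suc (Suc j)) \<bullet> W 0 BH (Suc (Suc j))"
  proof -
    have "W 0 St (Suc (Suc j)) \<bullet> W 0 m (Suc (Suc j)) = W 0 (St \<bullet> m) (Suc (Suc j))" by (simp add: W_merge)
    then show ?thesis unfolding St_anti by (simp add: W_split W_nest)
  qed
  have r5: "W 1 Y 0 \<bullet> W 0 m (Suc (Suc j)) = W 0 m (Suc (Suc j)) \<bullet> W 2 Y 0"
    using W_comm2[where f=m and p=2 and q=1 and g=Y and p'="Suc (Suc j)" and q'="Suc (Suc j)" and k=0 and j=0 and r=0] tY by simp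
  have r7: "W 2 Y 0 \<bullet> W 0 St (Suc (Suc (Suc j))) = W 0 St (Suc (Suc (Suc j))) \<bullet> W 2 Y 0"
    using W_comm[where f=St and p=1 and q=1 and g=Y and p'="Suc (Suc j)" and q'="Suc (Suc j)" and k=0 and j=1 and r=0] tY by simp
  have r8: "W 1 (act (Suc j)) 0 \<bullet> W 0 St (Suc (Suc (Suc j))) = W 0 St (Suc (Suc j)) \<bullet> W 1 (act (Suc j)) 0"
    using W_comm2[where f=St and p=1 and q=1 and g="act (Suc j)" and p'="Suc (Suc (Suc j))" and q'="Suc (Suc j)" and k=0 and j=0 and r=0] by simp
  have r9: "W 0 BH (Suc (Suc j)) \<bullet> W 1 BH (Suc j) \<bullet> W 0 Dl (Suc (Suc j)) = W 1 Dl (Suc j) \<bullet> W 0 BH (Suc j)"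
  proof -
    have n: "B 2 1 \<bullet> W 0 Dl 1 = W 1 Dl 0 \<bullet> BH" using nat_B[of Dl 1 2 i1 1 1] by (simp add: W_def)
    have "W 0 BH (Suc (Suc j)) \<bullet> W 1 BH (Suc j) \<bullet> W 0 Dl (Suc (Suc j)) = W 0 (B 2 1 \<bullet> W 0 Dl 1) (Suc j)"
      unfolding hexBH by (simp add: W_split W_nest)
    also have "\<dots> = W 1 Dl (Suc j) \<bullet> W 0 BH (Suc j)" unfolding n by (simp add: W_split W_nest)
    finally show ?thesis .
  qed
  have r10: "W 1 (act (Suc j)) 0 \<bullet> W 2 Y 0 \<bullet> W 1 St (Suc (Suc j)) \<bullet> W 1 Dl (Suc j) = W (Suc (Suc j)) (m \<bullet> W 1 sg 0 \<bullet> St) 0 \<bullet> W 1 (B 1 (Suc j)) 0"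
  proof -
    have "W 1 (act (Suc j)) 0 \<bullet> W 2 Y 0 \<bullet> W 1 St (Suc (Suc j)) \<bullet> W 1 Dl (Suc j) = W 1 (act (Suc j) \<bullet> W 1 Y 0 \<bullet> W 0 St (Suc (Suc j)) \<bullet> W 0 Dl (Suc j)) 0"
      using tY by (simp add: W_split W_nest)
    also have "\<dots> = W 1 (W (Suc j) (m \<bullet> W 1 sg 0 \<bullet> St) 0 \<bullet> B 1 (Suc j)) 0" unfolding Y_def using Z_lem[of j] by simp
    also have "\<dots> = W (Suc (Suc j)) (m \<bullet> W 1 sg 0 \<bullet> St) 0 \<bullet> W 1 (B 1 (Suc j)) 0" by (simp add: W_split W_nest)
    finally show ?thesis .
  qed
  have r11: "W 1 (B 1 (Suc j)) 0 \<bullet> W 0 BH (Suc j) = B 1 (Suc (Suc j))" using hex2W[of 1 1 "Suc j"] by simp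
  have r12: "B 1 (Suc (Suc j)) \<bullet> W 0 St (Suc (Suc j)) = W (Suc (Suc j)) St 0 \<bullet> B 1 (Suc (Suc j))"
    using nat_B[of St 1 1 "idn (Suc (Suc j))" "Suc (Suc j)" "Suc (Suc j)"] by (simp add: W_def)
  have r14: "W (Suc (Suc j)) (m \<bullet> W 1 sg 0 \<bullet> St) 0 \<bullet> W (Suc (Suc j)) St 0 = W (Suc (Suc j)) m 0 \<bullet> W (Suc (Suc j)) sg 1"
  proof -
    have "W (Suc (Suc j)) (m \<bullet> W 1 sg 0 \<bullet> St) 0 \<bullet> W (Suc (Suc j)) St 0 = W (Suc (Suc j)) (m \<bullet> W 1 sg 0 \<bullet> St \<bullet> St) 0" by (simp add: W_merge)
    also have "\<dots> = W (Suc (Suc j)) (m \<bullet> W 0 sg 1) 0" using r13 by simp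
    finally show ?thesis by (simp add: W_split W_nest)
  qed
  have "tau (Suc j) \<bullet> Q (Suc j) = act (Suc j) \<bullet> W 0 St (Suc (Suc j)) \<bullet> W (Suc (Suc j)) sg 0 \<bullet> W 1 (act j) 0 \<bullet> W 0 m (Suc (Suc j)) \<bullet> W 1 BH (Suc j) \<bullet> W 0 Dl (Suc (Suc j)) \<bullet> W 0 St (Suc (Suc j))"
  proof -
    have af: "W (Suc (Suc j)) sg 0 \<bullet> act (Suc j) = W (Suc (Suc j)) sg 0 \<bullet> (W 1 (act j) 0 \<bullet> W 0 m (Suc (Suc j)) \<bullet> W 1 BH (Suc j) \<bullet> W 0 Dl (Suc (Suc j)))"
      by (simp only: act_front)
    show ?thesis unfolding tau_def Q_def by (simp add: ctxE[OF af])
  qed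
  also have "\<dots> = act (Suc j) \<bullet> W 1 Y 0 \<bullet> W 0 m (Suc (Suc j)) \<bullet> W 0 St (Suc (Suc (Suc j))) \<bullet> W 1 St (Suc (Suc j)) \<bullet> W 0 BH (Suc (Suc j)) \<bullet> W 1 BH (Suc j) \<bullet> W 0 Dl (Suc (Suc j)) \<bullet> W 0 St (Suc (Suc j))"
    using tY by (simp add: ctxE[OF r2] ctxE[OF r3] ctxE[OF r4])
  also have "\<dots> = act (Suc j) \<bullet> W 1 (act (Suc j)) 0 \<bullet> W 2 Y 0 \<bullet> W 0 St (Suc (Suc (Suc j))) \<bullet> W 1 St (Suc (Suc j)) \<bullet> W 0 BH (Suc (Suc j)) \<bullet> W 1 BH (Suc j) \<bullet> W 0 Dl (Suc (Suc j)) \<bullet> W 0 St (Suc (Suc j))"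
    using tY by (simp add: ctxE[OF r5] ctxE[OF act_assoc])
  also have "\<dots> = act (Suc j) \<bullet> W 0 St (Suc (Suc j)) \<bullet> W 1 (act (Suc j)) 0 \<bullet> W 2 Y 0 \<bullet> W 1 St (Suc (Suc j)) \<bullet> W 1 Dl (Suc j) \<bullet> W 0 BH (Suc j) \<bullet> W 0 St (Suc (Suc j))"
    using tY by (simp add: ctxE[OF r7] ctxE[OF r8] ctx3E[OF r9])
  also have "\<dots> = act (Suc j) \<bullet> W 0 St (Suc (Suc j)) \<bullet> W (Suc (Suc j)) (m \<bullet> W 1 sg 0 \<bullet> St) 0 \<bullet> W 1 (B 1 (Suc j)) 0 \<bullet> W 0 BH (Suc j) \<bullet> W 0 St (Suc (Suc j))"
    using tY by (simp add: ctx4E[OF r10])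
  also have "\<dots> = act (Suc j) \<bullet> W 0 St (Suc (Suc j)) \<bullet> W (Suc (Suc j)) m 0 \<bullet> W (Suc (Suc j)) sg 1 \<bullet> B 1 (Suc (Suc j))"
    by (simp add: ctxE[OF r11] ctxT[OF r12] ctxE[OF r14] del: W_split)
  also have "\<dots> = Q (Suc j) \<bullet> T (Suc j)" unfolding Q_def T_def by simp
  finally show ?thesis by simp
qed


lemma act_eta: "act k \<bullet> W 0 eta (Suc k) = idn (Suc k)"
proof -
  have "act k \<bullet> W 0 eta (Suc k) = M (Suc k) \<bullet> W 0 (u (Suc k)) (Suc k)"
    unfolding act_def using D_eta[of k] by (simp add: W_merge del: tpowm.simps)
  then show ?thesis using M_unit1 by (simp del: tpowm.simps)
qed

lemma claim1: "Q k \<bullet> W 0 eta (Suc k) = idn (Suc k)"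
proof -
  have a: "W 0 St (Suc k) \<bullet> W 0 eta (Suc k) = W 0 eta (Suc k)" using St_eta by (simp add: W_merge)
  show ?thesis unfolding Q_def using act_eta a by simp
qed

lemma TE: "T k \<bullet> W 0 eta (Suc k) = W (Suc k) sg 0"
proof -
  have n: "B 1 (Suc k) \<bullet> W 0 eta (Suc k) = W (Suc k) eta 0"
    using nat_B[of eta 0 1 "idn (Suc k)" "Suc k" "Suc k"] by (simp add: W_def)
  have a: "m \<bullet> W 1 eta 0 \<bullet> sg = sg" by (simp add: ctxE[OF m_unitW(2)])
  have "W (Suc k) m 0 \<bullet> W (Suc k) sg 1 \<bullet> W (Suc k) eta 0 = W (Suc k) (m \<bullet> W 0 sg 1 \<bullet> eta) 0"
    by (simp add: W_split W_nest)
  also have "\<dots> = W (Suc k) sg 0" using pts[of sg "Suc 0" eta "Suc 0"] a by simp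
  finally show ?thesis unfolding T_def by (simp add: ctxT[OF n])
qed

lemma tau_QTE: "tau k = Q k \<bullet> T k \<bullet> W 0 eta (Suc k)"
  unfolding tau_def using TE by simp

lemma cpow_typ[simp]: "Dom C f = Ob \<Longrightarrow> Cod C f = Ob \<Longrightarrow> Dom C (cpow C Ob f i) = Ob \<and> Cod C (cpow C Ob f i) = Ob"
  by (induction i) simp_all

lemma pow_comm: "cpow C (P (Suc k)) (tau k) i \<bullet> Q k = Q k \<bullet> cpow C (P (Suc (Suc k))) (T k) i"
proof (induction i)
  case 0 then show ?case by simp
next
  case (Suc i)
  have t1: "Dom C (cpow C (P (Suc k)) (tau k) i) = P (Suc k) \<and> Cod C (cpow C (P (Suc k)) (tau k) i) = P (Suc k)" by simp
  have t2: "Dom C (cpow C (P (Suc (Suc k))) (T k) i) = P (Suc (Suc k)) \<and> Cod C (cpow C (P (Suc (Suc k))) (T k) i) = P (Suc (Suc k))" by simp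
  have "cpow C (P (Suc k)) (tau k) (Suc i) \<bullet> Q k = tau k \<bullet> (cpow C (P (Suc k)) (tau k) i \<bullet> Q k)" using t1 by simp
  also have "\<dots> = (tau k \<bullet> Q k) \<bullet> cpow C (P (Suc (Suc k))) (T k) i" unfolding Suc using t2 by simp
  also have "\<dots> = Q k \<bullet> cpow C (P (Suc (Suc k))) (T k) (Suc i)"
  proof (cases k)
    case 0 then show ?thesis using claim2_0 t2 by (simp flip: assoc)
  next
    case (Suc j) then show ?thesis using claim2_Suc[of j] t2 by (simp flip: assoc)
  qed
  finally show ?case .
qed

abbreviation lam where "lam \<equiv> m \<bullet> W 0 sg 1"
lemma lam_typ[simp]: "Dom C lam = P 1" "Cod C lam = P 1" by simp_all

lemma braid_step: "B 1 (r+i) \<bullet> B i (Suc r) = B (Suc i) r"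
proof -
  have h1: "B i (1+r) = W 1 (B i r) 0 \<bullet> W 0 (B i 1) r" using hex2W[of i 1 r] by simp
  have h2: "B 1 (i+r) = W i (B 1 r) 0 \<bullet> W 0 (B 1 i) r" using hex2W[of 1 i r] by simp
  have h3: "B (i+1) r = W 0 (B i r) 1 \<bullet> W i (B 1 r) 0" using hex1W[of i 1 r] by simp
  have n: "B 1 (r+i) \<bullet> W 1 (B i r) 0 = W 0 (B i r) 1 \<bullet> B 1 (i+r)"
    using nat_B[of i1 1 1 "B i r" "i+r" "r+i"] by (simp add: W_def)
  have sy: "W 0 (B 1 i) r \<bullet> W 0 (B i 1) r = idn (Suc (i+r))"
    using symB[of 1 i] by (simp add: W_merge)
  have "B 1 (r+i) \<bullet> B i (Suc r) = W 0 (B i r) 1 \<bullet> W i (B 1 r) 0 \<bullet> W 0 (B 1 i) r \<bullet> W 0 (B i 1) r"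
    using h1 h2 by (simp add: ctxE[OF n] ctxT[OF n])
  also have "\<dots> = B (Suc i) r" using h3 sy by (simp add: ctxT[OF sy])
  finally show ?thesis .
qed

lemma Tpow: "i + r = Suc (Suc k) \<Longrightarrow> cpow C (P (Suc (Suc k))) (T k) i = W r (tpowm C lam i) 0 \<bullet> B i r"
proof (induction i arbitrary: r)
  case 0 then show ?case by simp
next
  case (Suc i)
  have IH: "cpow C (P (Suc (Suc k))) (T k) i = W (Suc r) (tpowm C lam i) 0 \<bullet> B i (Suc r)" using Suc by simp
  have Td: "T k = W (r+i) lam 0 \<bullet> B 1 (r+i)"
    unfolding T_def using Suc.prems by (simp add: W_split W_nest)
  have n: "B 1 (r+i) \<bullet> W (Suc r) (tpowm C lam i) 0 = W r (tpowm C lam i) 1 \<bullet> B 1 (r+i)"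
    using nat_B[of i1 1 1 "W r (tpowm C lam i) 0" "r+i" "r+i"] by (simp add: W_def tidl)
  have mg: "W (r+i) lam 0 \<bullet> W r (tpowm C lam i) 1 = W r (tpowm C lam (Suc i)) 0"
  proof -
    have "tpowm C lam (Suc i) = tpowm C lam i \<otimes> lam" using tpowm_add[of lam i 1] by simp
    then show ?thesis using W_tensor'[of "tpowm C lam i" i i lam 1 1 r 0] by simp
  qed
  have "cpow C (P (Suc (Suc k))) (T k) (Suc i) = T k \<bullet> (W (Suc r) (tpowm C lam i) 0 \<bullet> B i (Suc r))"
    using IH by (simp del: tpowm.simps)
  also have "\<dots> = W (r+i) lam 0 \<bullet> B 1 (r+i) \<bullet> W (Suc r) (tpowm C lam i) 0 \<bullet> B i (Suc r)"
    unfolding Td by (simp del: tpowm.simps)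
  also have "\<dots> = W r (tpowm C lam (Suc i)) 0 \<bullet> B 1 (r+i) \<bullet> B i (Suc r)"
    by (simp add: ctxE[OF n] ctxE[OF mg] del: tpowm.simps)
  also have "\<dots> = W r (tpowm C lam (Suc i)) 0 \<bullet> B (Suc i) r" by (simp add: ctxT[OF braid_step] del: tpowm.simps)
  finally show ?case .
qed


lemma Msg: "M n \<bullet> W 0 (sgp n) n = tpowm C lam n"
proof (induction n)
  case 0 then show ?case by (simp add: M0)
next
  case (Suc n)
  have t: "W 0 (sgp (Suc n)) (Suc n) = W 0 sg (n + Suc n) \<bullet> W 0 (sgp n) (Suc n)"
    using W_tensor[of sg 0 1 "sgp n" 0 n 0 "Suc n"] by simp
  have c1: "W 1 (B n 1) n \<bullet> W 0 sg (Suc (n+n)) = W 0 sg (Suc (n+n)) \<bullet> W 0 (B n 1) n"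
    using W_comm2[where f=sg and p=0 and q=1 and g="B n 1" and p'="Suc n" and q'="Suc n" and k=0 and j=0 and r=n] by simp
  have n1: "W 0 (B n 1) n \<bullet> W 0 (sgp n) (Suc n) = W 1 (sgp n) n"
  proof -
    have "B n 1 \<bullet> W 0 (sgp n) 1 = W 1 (sgp n) 0" using nat_B[of "sgp n" 0 n i1 1 1] by (simp add: W_def)
    then have "W 0 (B n 1 \<bullet> W 0 (sgp n) 1) n = W 0 (W 1 (sgp n) 0) n" by simp
    then show ?thesis by (simp add: W_split W_nest)
  qed
  have c2: "W 2 (M n) 0 \<bullet> W 0 sg (Suc (n+n)) = W 0 sg (Suc n) \<bullet> W 1 (M n) 0"
    using W_comm2[where f=sg and p=0 and q=1 and g="M n" and p'="2*n" and q'=n and k=0 and j=1 and r=0] by simp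
  have m1: "W 0 m n \<bullet> W 0 sg (Suc n) = W 0 lam n" by (simp add: W_split W_nest)
  have m2: "W 1 (M n) 0 \<bullet> W 1 (sgp n) n = W 1 (tpowm C lam n) 0"
  proof -
    have "W 1 (M n) 0 \<bullet> W 1 (sgp n) n = W 1 (M n \<bullet> W 0 (sgp n) n) 0" by (simp add: W_split W_nest)
    then show ?thesis using Suc by simp
  qed
  have "M (Suc n) \<bullet> W 0 (sgp (Suc n)) (Suc n) = W 0 m n \<bullet> W 2 (M n) 0 \<bullet> W 1 (B n 1) n \<bullet> W 0 sg (n + Suc n) \<bullet> W 0 (sgp n) (Suc n)"
    unfolding M_front t by simp
  also have "\<dots> = W 0 lam n \<bullet> W 1 (tpowm C lam n) 0"
    by (simp add: ctxE[OF c1] ctxT[OF n1] ctxE[OF c2] ctxE[OF m1] ctxT[OF m2] del: tpowm.simps)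
  also have "\<dots> = tpowm C lam (Suc n)" using W_tensor[of lam 1 1 "tpowm C lam n" n n 0 0] by simp
  finally show ?case .
qed

lemma Lsig: "tpowm C lam (Suc k) = act k \<bullet> W 0 sg (Suc k)"
proof -
  have "act k \<bullet> W 0 sg (Suc k) = M (Suc k) \<bullet> W 0 (sgp (Suc k)) (Suc k)"
    unfolding act_def using D_sg[of k] by (simp add: W_merge del: tpowm.simps)
  then show ?thesis using Msg by (simp del: tpowm.simps)
qed

lemma St_lam: "St \<bullet> lam = m \<bullet> W 1 (S \<bullet> sg) 0 \<bullet> St"
proof -
  have n: "BH \<bullet> W 0 sg 1 = W 1 sg 0" using nat_B[of sg 0 1 i1 1 1] by (simp add: W_def)
  have a: "W 1 St 0 \<bullet> W 1 sg 0 = W 1 (S \<bullet> sg) 0" using St_sg by (simp add: W_merge)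
  have c: "W 0 St 1 \<bullet> W 1 (S \<bullet> sg) 0 = W 1 (S \<bullet> sg) 0 \<bullet> St"
    using W_comm[where f=St and p=1 and q=1 and g="S \<bullet> sg" and p'=0 and q'=1 and k=0 and j=0 and r=0] by simp
  show ?thesis by (simp add: ctxE[OF St_anti] ctxT[OF n] ctxT[OF a] ctxT[OF c])
qed

lemma act_inv: "act k \<bullet> W 0 (S \<bullet> sg) (Suc k) \<bullet> act k \<bullet> W 0 sg (Suc k) = idn (Suc k)"
proof -
  have c: "W 0 (S \<bullet> sg) (Suc k) \<bullet> act k = W 1 (act k) 0 \<bullet> W 0 (S \<bullet> sg) (Suc (Suc k))"
    using W_comm[where f="S \<bullet> sg" and p=0 and q=1 and g="act k" and p'="Suc (Suc k)" and q'="Suc k" and k=0 and j=0 and r=0] by simp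
  have i: "W 0 m (Suc k) \<bullet> W 0 (S \<bullet> sg) (Suc (Suc k)) \<bullet> W 0 sg (Suc k) = W 0 eta (Suc k)"
  proof -
    have "W 0 m (Suc k) \<bullet> W 0 (S \<bullet> sg) (Suc (Suc k)) \<bullet> W 0 sg (Suc k) = W 0 (m \<bullet> W 0 (S \<bullet> sg) 1 \<bullet> sg) (Suc k)"
      by (simp add: W_split W_nest)
    then show ?thesis using Ssg_inv by simp
  qed
  have "act k \<bullet> W 0 (S \<bullet> sg) (Suc k) \<bullet> act k \<bullet> W 0 sg (Suc k) = act k \<bullet> W 1 (act k) 0 \<bullet> W 0 (S \<bullet> sg) (Suc (Suc k)) \<bullet> W 0 sg (Suc k)"
    by (simp add: ctxE[OF c])
  also have "\<dots> = act k \<bullet> W 0 m (Suc k) \<bullet> W 0 (S \<bullet> sg) (Suc (Suc k)) \<bullet> W 0 sg (Suc k)"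
    by (simp add: ctxE[OF act_assoc[symmetric]])
  also have "\<dots> = idn (Suc k)" using act_eta by (simp add: ctx3T[OF i])
  finally show ?thesis .
qed

lemma claim4: "Q k \<bullet> tpowm C lam (Suc (Suc k)) = Q k"
proof -
  have t: "tpowm C lam (Suc (Suc k)) = W 0 lam (Suc k) \<bullet> W 1 (act k) 0 \<bullet> W 1 sg (Suc k)"
  proof -
    have e: "tpowm C lam (Suc (Suc k)) = lam \<otimes> tpowm C lam (Suc k)" by (simp only: tpowm.simps)
    have "tpowm C lam (Suc (Suc k)) = W 0 lam (Suc k) \<bullet> W 1 (tpowm C lam (Suc k)) 0"
      unfolding e using W_tensor[of lam 1 1 "tpowm C lam (Suc k)" "Suc k" "Suc k" 0 0] by (simp del: tpowm.simps)
    then show ?thesis unfolding Lsig by (simp add: W_split W_nest)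
  qed
  have a: "W 0 St (Suc k) \<bullet> W 0 lam (Suc k) = W 0 m (Suc k) \<bullet> W 1 (S \<bullet> sg) (Suc k) \<bullet> W 0 St (Suc k)"
  proof -
    have "W 0 St (Suc k) \<bullet> W 0 lam (Suc k) = W 0 (St \<bullet> lam) (Suc k)" by (simp add: W_merge)
    then show ?thesis unfolding St_lam by (simp add: W_split W_nest)
  qed
  have c1: "W 0 St (Suc k) \<bullet> W 1 (act k) 0 = W 1 (act k) 0 \<bullet> W 0 St (Suc (Suc k))"
    using W_comm[where f=St and p=1 and q=1 and g="act k" and p'="Suc (Suc k)" and q'="Suc k" and k=0 and j=0 and r=0] by simp
  have c2: "W 0 St (Suc (Suc k)) \<bullet> W 1 sg (Suc k) = W 1 sg (Suc k) \<bullet> W 0 St (Suc k)"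
    using W_comm[where f=St and p=1 and q=1 and g=sg and p'=0 and q'=1 and k=0 and j=0 and r="Suc k"] by simp
  have inv: "W 1 (act k) 0 \<bullet> W 1 (S \<bullet> sg) (Suc k) \<bullet> W 1 (act k) 0 \<bullet> W 1 sg (Suc k) = idn (Suc (Suc k))"
  proof -
    have "W 1 (act k) 0 \<bullet> W 1 (S \<bullet> sg) (Suc k) \<bullet> W 1 (act k) 0 \<bullet> W 1 sg (Suc k) = W 1 (act k \<bullet> W 0 (S \<bullet> sg) (Suc k) \<bullet> act k \<bullet> W 0 sg (Suc k)) 0"
      by (simp add: W_split W_nest)
    then show ?thesis using act_inv by simp
  qed
  have "Q k \<bullet> tpowm C lam (Suc (Suc k)) = act k \<bullet> W 0 m (Suc k) \<bullet> W 1 (S \<bullet> sg) (Suc k) \<bullet> W 1 (act k) 0 \<bullet> W 1 sg (Suc k) \<bullet> W 0 St (Suc k)"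
    unfolding Q_def t by (simp add: ctxE[OF a] ctxE[OF c1] ctxT[OF c2] del: tpowm.simps)
  also have "\<dots> = act k \<bullet> W 1 (act k) 0 \<bullet> W 1 (S \<bullet> sg) (Suc k) \<bullet> W 1 (act k) 0 \<bullet> W 1 sg (Suc k) \<bullet> W 0 St (Suc k)"
    by (simp add: ctxE[OF act_assoc])
  also have "\<dots> = Q k" unfolding Q_def by (simp add: ctx4E[OF inv])
  finally show ?thesis .
qed

lemma tau_pow: "cpow C (P (Suc k)) (tau k) (Suc (Suc k)) = idn (Suc k)"
proof -
  have tp: "Dom C (cpow C (P (Suc k)) (tau k) (Suc (Suc k))) = P (Suc k) \<and> Cod C (cpow C (P (Suc k)) (tau k) (Suc (Suc k))) = P (Suc k)" by simp
  have TN: "cpow C (P (Suc (Suc k))) (T k) (Suc (Suc k)) = tpowm C lam (Suc (Suc k))"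
    using Tpow[of "Suc (Suc k)" 0 k] by (simp del: tpowm.simps cpow.simps)
  have "cpow C (P (Suc k)) (tau k) (Suc (Suc k)) = cpow C (P (Suc k)) (tau k) (Suc (Suc k)) \<bullet> (Q k \<bullet> W 0 eta (Suc k))"
    using claim1 tp by (simp del: cpow.simps)
  also have "\<dots> = (cpow C (P (Suc k)) (tau k) (Suc (Suc k)) \<bullet> Q k) \<bullet> W 0 eta (Suc k)"
    using tp by (simp del: cpow.simps)
  also have "\<dots> = (Q k \<bullet> tpowm C lam (Suc (Suc k))) \<bullet> W 0 eta (Suc k)" unfolding pow_comm TN ..
  also have "\<dots> = idn (Suc k)" using claim4 claim1 by (simp del: tpowm.simps)
  finally show ?thesis .
qed

end

context bsetup begin

lemma act_slot:
  assumes am: "AM \<phi> (Suc k0) (Suc k1)" and dd: "\<phi> \<bullet> D k0 = D k1"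
  shows "\<phi> \<bullet> act k0 = act k1 \<bullet> W 1 \<phi> 0"
proof -
  have t: "Dom C \<phi> = P (Suc k0)" "Cod C \<phi> = P (Suc k1)" and mm: "\<phi> \<bullet> M (Suc k0) = M (Suc k1) \<bullet> (\<phi> \<otimes> \<phi>)"
    using am unfolding AM_def by auto
  have pp: "\<phi> \<otimes> \<phi> = W 0 \<phi> (Suc k1) \<bullet> W (Suc k0) \<phi> 0"
    using W_tensor[of \<phi> "Suc k0" "Suc k1" \<phi> "Suc k0" "Suc k1" 0 0] t by simp
  have c: "W (Suc k0) \<phi> 0 \<bullet> W 0 (D k0) (Suc k0) = W 0 (D k0) (Suc k1) \<bullet> W 1 \<phi> 0"
    using W_comm2[where f="D k0" and p=1 and q="Suc k0" and g=\<phi> and p'="Suc k0" and q'="Suc k1" and k=0 and j=0 and r=0] t by simp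
  have m2: "W 0 \<phi> (Suc k1) \<bullet> W 0 (D k0) (Suc k1) = W 0 (D k1) (Suc k1)" using dd t by (simp add: W_merge)
  have "\<phi> \<bullet> act k0 = M (Suc k1) \<bullet> (\<phi> \<otimes> \<phi>) \<bullet> W 0 (D k0) (Suc k0)"
    unfolding act_def using t by (simp add: ctxE[OF mm])
  also have "\<dots> = M (Suc k1) \<bullet> W 0 (D k1) (Suc k1) \<bullet> W 1 \<phi> 0"
    unfolding pp using t by (simp add: ctxE[OF c] ctxT[OF c] ctxE[OF m2] ctxT[OF m2])
  finally show ?thesis unfolding act_def using t by simp
qed

lemma act_slot_Dl: "W a Dl b \<bullet> act (a+b) = act (Suc (a+b)) \<bullet> W (Suc a) Dl b"
proof -
  have am: "AM (W a Dl b) (Suc (a+b)) (Suc (Suc (a+b)))" using AM_W[OF AM_Dl, of a b] by simp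
  have "W a Dl b \<bullet> act (a+b) = act (Suc (a+b)) \<bullet> W 1 (W a Dl b) 0" using act_slot[OF am D_slot] by simp
  then show ?thesis by (simp add: W_nest)
qed

lemma act_slot_eps: "W a eps (Suc b) \<bullet> act (Suc (a+b)) = act (a+b) \<bullet> W (Suc a) eps (Suc b)"
proof -
  have am: "AM (W a eps (Suc b)) (Suc (Suc (a+b))) (Suc (a+b))" using AM_W[OF AM_eps, of a "Suc b"] by simp
  have "W a eps (Suc b) \<bullet> act (Suc (a+b)) = act (a+b) \<bullet> W 1 (W a eps (Suc b)) 0" using act_slot[OF am D_eps] by simp
  then show ?thesis by (simp add: W_nest)
qed

lemma Q_Dl: "Q (Suc j) \<bullet> W 0 Dl (Suc j) = W 0 eta (Suc j) \<bullet> Q j"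
proof -
  have c: "W 1 (act j) 0 \<bullet> W 0 eta (Suc (Suc j)) = W 0 eta (Suc j) \<bullet> act j"
    using W_comm2[where f=eta and p=0 and q=1 and g="act j" and p'="Suc (Suc j)" and q'="Suc j" and k=0 and j=0 and r=0] by simp
  have kk: "W 0 m (Suc (Suc j)) \<bullet> W 1 BH (Suc j) \<bullet> W 0 Dl (Suc (Suc j)) \<bullet> W 0 St (Suc (Suc j)) \<bullet> W 0 Dl (Suc j) = W 0 eta (Suc (Suc j)) \<bullet> W 0 St (Suc j)"
  proof -
    have "W 0 m (Suc (Suc j)) \<bullet> W 1 BH (Suc j) \<bullet> W 0 Dl (Suc (Suc j)) \<bullet> W 0 St (Suc (Suc j)) \<bullet> W 0 Dl (Suc j)
      = W 0 (W 0 m 1 \<bullet> W 1 BH 0 \<bullet> W 0 (Dl \<bullet> St) 1 \<bullet> Dl) (Suc j)" by (simp add: W_split W_nest)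
    also have "\<dots> = W 0 (W 0 eta 1 \<bullet> St) (Suc j)" using K by simp
    finally show ?thesis by (simp add: W_split W_nest)
  qed
  have "Q (Suc j) \<bullet> W 0 Dl (Suc j) = W 1 (act j) 0 \<bullet> W 0 m (Suc (Suc j)) \<bullet> W 1 BH (Suc j) \<bullet> W 0 Dl (Suc (Suc j)) \<bullet> W 0 St (Suc (Suc j)) \<bullet> W 0 Dl (Suc j)"
    unfolding Q_def act_front by simp
  also have "\<dots> = W 0 eta (Suc j) \<bullet> act j \<bullet> W 0 St (Suc j)" by (simp add: ctxE[OF kk] ctxT[OF kk] ctxE[OF c])
  finally show ?thesis unfolding Q_def .
qed


lemma cyc0: "tau k \<bullet> W 0 eta k = W k sg 0"
proof -
  have c: "W (Suc k) sg 0 \<bullet> W 0 eta k = W 0 eta (Suc k) \<bullet> W k sg 0"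
    using W_comm[where f=eta and p=0 and q=1 and g=sg and p'=0 and q'=1 and k=0 and j=k and r=0] by simp
  show ?thesis unfolding tau_def by (simp add: ctxE[OF c] ctxT[OF c] ctxE[OF claim1])
qed

lemma cyc1_first: "tau (Suc j) \<bullet> W 0 Dl j = W 0 eta (Suc j) \<bullet> tau j"
proof -
  have c: "W (Suc (Suc j)) sg 0 \<bullet> W 0 Dl j = W 0 Dl (Suc j) \<bullet> W (Suc j) sg 0"
    using W_comm[where f=Dl and p=1 and q=2 and g=sg and p'=0 and q'=1 and k=0 and j=j and r=0] by simp
  show ?thesis unfolding tau_def using Q_Dl by (simp add: ctxT[OF c] ctxE[OF Q_Dl] ctxT[OF Q_Dl])
qed

lemma cyc1_11: "tau 0 \<bullet> sg = eta"
proof -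
  have "tau 0 \<bullet> sg = m \<bullet> W 0 St 1 \<bullet> W 1 sg 0 \<bullet> sg" unfolding tau_def Q_def act0 by simp
  also have "\<dots> = m \<bullet> W 0 (S \<bullet> sg) 1 \<bullet> sg"
  proof -
    have a: "W 1 sg 0 \<bullet> sg = W 0 sg 1 \<bullet> sg" using pts[of sg "Suc 0" sg "Suc 0"] by simp
    have b: "W 0 St 1 \<bullet> W 0 sg 1 = W 0 (S \<bullet> sg) 1" using St_sg by (simp add: W_merge)
    show ?thesis by (simp add: ctxT[OF a] ctxE[OF b])
  qed
  also have "\<dots> = eta" using Ssg_inv by simp
  finally show ?thesis .
qed

lemma cyc1_mid: "tau (Suc (Suc (a+b))) \<bullet> W (Suc a) Dl b = W a Dl (Suc b) \<bullet> tau (Suc (a+b))"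
proof -
  have c1: "W (Suc (Suc (Suc (a+b)))) sg 0 \<bullet> W (Suc a) Dl b = W (Suc a) Dl (Suc b) \<bullet> W (Suc (Suc (a+b))) sg 0"
    using W_comm[where f=Dl and p=1 and q=2 and g=sg and p'=0 and q'=1 and k="Suc a" and j=b and r=0] by simp
  have c2: "W 0 St (Suc (Suc (Suc (a+b)))) \<bullet> W (Suc a) Dl (Suc b) = W (Suc a) Dl (Suc b) \<bullet> W 0 St (Suc (Suc (a+b)))"
    using W_comm[where f=St and p=1 and q=1 and g=Dl and p'=1 and q'=2 and k=0 and j=a and r="Suc b"] by simp
  have s: "act (Suc (Suc (a+b))) \<bullet> W (Suc a) Dl (Suc b) = W a Dl (Suc b) \<bullet> act (Suc (a+b))"
    using act_slot_Dl[of a "Suc b"] by simp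
  show ?thesis unfolding tau_def Q_def by (simp add: ctxE[OF c1] ctxT[OF c1] ctxE[OF c2] ctxE[OF s])
qed

lemma cyc1_last: "tau (Suc j) \<bullet> W (Suc j) sg 0 = W j Dl 0 \<bullet> tau j"
proof -
  have s: "W j Dl 0 \<bullet> act j = act (Suc j) \<bullet> W (Suc j) Dl 0" using act_slot_Dl[of j 0] by simp
  have c: "W (Suc j) Dl 0 \<bullet> W 0 St (Suc j) = W 0 St (Suc (Suc j)) \<bullet> W (Suc j) Dl 0"
    using W_comm2[where f=St and p=1 and q=1 and g=Dl and p'=1 and q'=2 and k=0 and j=j and r=0] by simp
  have g: "W (Suc j) Dl 0 \<bullet> W (Suc j) sg 0 = W (Suc (Suc j)) sg 0 \<bullet> W (Suc j) sg 0"
  proof -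
    have "W (Suc j) Dl 0 \<bullet> W (Suc j) sg 0 = W (Suc j) (W 1 sg 0 \<bullet> sg) 0"
      using Dl_sgW pts[of sg "Suc 0" sg "Suc 0"] by (simp add: W_merge)
    then show ?thesis by (simp add: W_split W_nest)
  qed
  have "W j Dl 0 \<bullet> tau j = act (Suc j) \<bullet> W 0 St (Suc (Suc j)) \<bullet> W (Suc (Suc j)) sg 0 \<bullet> W (Suc j) sg 0"
    unfolding tau_def Q_def by (simp add: ctxE[OF s] ctxE[OF c] ctxT[OF g])
  then show ?thesis unfolding tau_def Q_def by simp
qed

lemma cyc2: "tau (a+b) \<bullet> W (Suc a) eps b = W a eps (Suc b) \<bullet> tau (Suc (a+b))"
proof -
  have s: "W a eps (Suc b) \<bullet> act (Suc (a+b)) = act (a+b) \<bullet> W (Suc a) eps (Suc b)" by (rule act_slot_eps)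
  have c1: "W (Suc a) eps (Suc b) \<bullet> W 0 St (Suc (Suc (a+b))) = W 0 St (Suc (a+b)) \<bullet> W (Suc a) eps (Suc b)"
    using W_comm[where f=St and p=1 and q=1 and g=eps and p'=1 and q'=0 and k=0 and j=a and r="Suc b"] by simp
  have c2: "W (Suc a) eps (Suc b) \<bullet> W (Suc (Suc (a+b))) sg 0 = W (Suc (a+b)) sg 0 \<bullet> W (Suc a) eps b"
    using W_comm[where f=eps and p=1 and q=0 and g=sg and p'=0 and q'=1 and k="Suc a" and j=b and r=0] by simp
  show ?thesis unfolding tau_def Q_def by (simp add: ctxE[OF s] ctxE[OF c1] ctxT[OF c2])
qed

end

context bsetup begin

abbreviation dd where "dd n i \<equiv> CH_coface C H eta Dl sg n i"
abbreviation ss where "ss n i \<equiv> CH_codeg C H eps n i"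
abbreviation tt where "tt n \<equiv> CH_cyc C H m Dl S dl sg n"

lemma CH_P: "CH C H n = P n" unfolding CH_def by simp

lemma d_0: "dd (Suc k) 0 = W 0 eta k" unfolding CH_coface_def W_def by simp
lemma d_last: "dd (Suc k) (Suc k) = W k sg 0" unfolding CH_coface_def W_def by simp
lemma d_mid: "dd (Suc (Suc (a+b))) (Suc a) = W a Dl b"
proof -
  have "Suc (Suc (a+b)) - 1 - Suc a = b" by simp
  then show ?thesis unfolding CH_coface_def W_def by simp
qed
lemma s_W: "i \<le> n \<Longrightarrow> ss n i = W i eps (n - i)" unfolding CH_codeg_def W_def by simp
lemma s_W': "ss (a+b) a = W a eps b" unfolding CH_codeg_def W_def by simp
lemma t_0: "tt 0 = idn 0" unfolding CH_cyc_def by simp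
lemma t_Suc: "tt (Suc k) = tau k"
proof -
  have "(D k \<bullet> St) \<otimes> (idn k \<otimes> sg) = W 0 (D k \<bullet> St) (Suc k) \<bullet> W (Suc k) sg 0"
    using W_tensor[of "D k \<bullet> St" 1 "Suc k" "idn k \<otimes> sg" k "Suc k" 0 0] by (simp add: W_def tidl)
  then show ?thesis unfolding CH_cyc_def tau_def Q_def act_def by (simp add: W_split)
qed

lemma d_cases:
  assumes "1 \<le> n" "i \<le> n"
  obtains (z) k where "n = Suc k" "i = 0" "dd n i = W 0 eta k"
    | (l) k where "n = Suc k" "i = Suc k" "dd n i = W k sg 0"
    | (mid) a b where "n = Suc (Suc (a+b))" "i = Suc a" "dd n i = W a Dl b"
proof -
  obtain k where n: "n = Suc k" using assms by (cases n) auto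
  show thesis
  proof (cases "i = 0")
    case True then show ?thesis using z[of k] n d_0 by simp
  next
    case False
    then obtain a where i: "i = Suc a" by (cases i) auto
    show ?thesis
    proof (cases "i = n")
      case True then show ?thesis using l[of k] n d_last by simp
    next
      case False
      then have "a < k" using assms n i by simp
      then obtain b where "k = Suc (a+b)" by (metis add_Suc_right less_iff_Suc_add)
      then show ?thesis using mid[of a b] n i d_mid by simp
    qed
  qed
qed

lemma d_typ: "1 \<le> n \<Longrightarrow> i \<le> n \<Longrightarrow> Dom C (dd n i) = P (n - 1) \<and> Cod C (dd n i) = P n"
  by (erule d_cases) auto

lemma s_typ: "i \<le> n \<Longrightarrow> Dom C (ss n i) = P (Suc n) \<and> Cod C (ss n i) = P n"
  by (simp add: s_W)

lemma t_typ: "Dom C (tt n) = P n \<and> Cod C (tt n) = P n"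
  by (cases n) (simp_all add: t_0 t_Suc)


lemma sgsg: "W (Suc k) sg 0 \<bullet> W k sg 0 = W k Dl 0 \<bullet> W k sg 0"
proof -
  have "W k Dl 0 \<bullet> W k sg 0 = W k (W 1 sg 0 \<bullet> sg) 0"
    using Dl_sgW pts[of sg "Suc 0" sg "Suc 0"] by (simp add: W_merge)
  then show ?thesis by (simp add: W_split W_nest)
qed

lemma ex_split: "a < k \<Longrightarrow> \<exists>b. k = Suc (a+b)" by (metis add_Suc_right less_iff_Suc_add)

lemma cofaces: assumes "1 \<le> n" "i < j" "j \<le> n+1"
  shows "dd (n+1) j \<bullet> dd n i = dd (n+1) i \<bullet> dd n (j-1)"
proof -
  obtain k where n: "n = Suc k" using assms by (cases n) auto
  show ?thesis
  proof (cases i)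
    case 0
    show ?thesis
    proof (cases "j = Suc (Suc k)")
      case True
      have c: "W (Suc k) sg 0 \<bullet> W 0 eta k = W 0 eta (Suc k) \<bullet> W k sg 0"
        using W_comm[where f=eta and p=0 and q=1 and g=sg and p'=0 and q'=1 and k=0 and j=k and r=0] by simp
      show ?thesis using True 0 n c d_last[of "Suc k"] d_last[of k] d_0[of k] d_0[of "Suc k"] by simp
    next
      case False
      show ?thesis
      proof (cases "j = 1")
        case True
        have e: "W 0 Dl k \<bullet> W 0 eta k = W 0 eta (Suc k) \<bullet> W 0 eta k"
        proof -
          have "W 0 Dl k \<bullet> W 0 eta k = W 0 (W 0 eta 1 \<bullet> eta) k" using Dl_etaW by (simp add: W_merge)
          then show ?thesis by (simp add: W_split W_nest)
        qed
        show ?thesis using True 0 n e d_mid[of 0 k] d_0[of k] d_0[of "Suc k"] by simp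
      next
        case False
        then obtain a' where j: "j = Suc (Suc a')" using `j \<noteq> Suc (Suc k)` assms 0 by (cases j; cases "j - 1") auto
        then have "a' < k" using assms n `j \<noteq> Suc (Suc k)` by simp
        then obtain b where k: "k = Suc (a'+b)" using ex_split by blast
        have c: "W 0 eta (a'+2+b) \<bullet> W a' Dl b = W (1+a') Dl b \<bullet> W 0 eta (a'+1+b)"
          using W_comm[where f=eta and p=0 and q=1 and g=Dl and p'=1 and q'=2 and k=0 and j=a' and r=b] by simp
        show ?thesis using j 0 n k c d_mid[of "Suc a'" b] d_mid[of a' b] d_0 by simp
      qed
    qed
  next
    case (Suc a)
    show ?thesis
    proof (cases "j = Suc (Suc k)")
      case True
      show ?thesis
      proof (cases "a = k")
        case True
        show ?thesis using `j = Suc (Suc k)` Suc True n sgsg d_last d_mid[of k 0] by simp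
      next
        case False
        then have "a < k" using assms n Suc `j = Suc (Suc k)` by simp
        then obtain b where k: "k = Suc (a+b)" using ex_split by blast
        have c: "W (Suc (Suc (a+b))) sg 0 \<bullet> W a Dl b = W a Dl (Suc b) \<bullet> W (Suc (a+b)) sg 0"
          using W_comm[where f=Dl and p=1 and q=2 and g=sg and p'=0 and q'=1 and k=a and j=b and r=0] by simp
        show ?thesis using `j = Suc (Suc k)` Suc k n c d_last d_mid[of a b] d_mid[of a "Suc b"] by simp
      qed
    next
      case False
      then have jle: "j \<le> Suc k" using assms n by simp
      obtain c where j0: "j = Suc (Suc a + c)" using assms(2) Suc less_iff_Suc_add by auto
      then have j: "j = Suc (Suc (a + c))" by simp
      then have "a + c < k" using jle by simp
      then obtain b where k: "k = Suc (a+c+b)" using ex_split by blast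
      have e1: "dd (n+1) j = W (Suc (a+c)) Dl b" using d_mid[of "Suc (a+c)" b] n k j by simp
      have e2: "dd n i = W a Dl (c+b)" using d_mid[of a "c+b"] n k Suc by simp
      have e3: "dd (n+1) i = W a Dl (Suc (c+b))" using d_mid[of a "Suc (c+b)"] n k Suc by simp
      have e4: "dd n (j-1) = W (a+c) Dl b" using d_mid[of "a+c" b] n k j by simp
      show ?thesis
      proof (cases c)
        case 0
        have "W (Suc a) Dl b \<bullet> W a Dl b = W a (W 1 Dl 0 \<bullet> Dl) b" by (simp add: W_split W_nest)
        also have "\<dots> = W a (W 0 Dl 1 \<bullet> Dl) b" using coassW by simp
        also have "\<dots> = W a Dl (Suc b) \<bullet> W a Dl b" by (simp add: W_split W_nest)
        finally show ?thesis unfolding e1 e2 e3 e4 using 0 by simp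
      next
        case (Suc c')
        have cm: "W (a+2+c') Dl b \<bullet> W a Dl (c'+1+b) = W a Dl (c'+2+b) \<bullet> W (a+1+c') Dl b"
          using W_comm2[where f=Dl and p=1 and q=2 and g=Dl and p'=1 and q'=2 and k=a and j=c' and r=b] by simp
        show ?thesis unfolding e1 e2 e3 e4 using Suc cm by simp
      qed
    qed
  qed
qed

lemma codegs: assumes "i \<le> j" "j \<le> n" shows "ss n j \<bullet> ss (n+1) i = ss n i \<bullet> ss (n+1) (j+1)"
proof -
  obtain c where j: "j = i + c" using assms by (metis le_add_diff_inverse)
  obtain r where n: "n = j + r" using assms by (metis le_add_diff_inverse)
  have cm: "W i eps (c+0+r) \<bullet> W (i+1+c) eps r = W (i+0+c) eps r \<bullet> W i eps (c+1+r)"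
    using W_comm[where f=eps and p=1 and q=0 and g=eps and p'=1 and q'=0 and k=i and j=c and r=r] by simp
  have "ss n j = W (i+c) eps r" "ss (n+1) i = W i eps (c+1+r)" "ss n i = W i eps (c+r)" "ss (n+1) (j+1) = W (i+1+c) eps r"
    using s_W j n by simp_all
  then show ?thesis using cm by simp
qed


lemma mixed: assumes "j \<le> n" "i \<le> n+1"
  shows "ss n j \<bullet> dd (n+1) i =
          (if i < j then dd n i \<bullet> ss (n-1) (j-1)
           else if i = j \<or> i = j + 1 then Id C (CH C H n)
           else dd n (i-1) \<bullet> ss (n-1) j)"
proof -
  consider (A) "i < j" | (B) "i = j" | (Cc) "i = j + 1" | (Dd) "j + 1 < i" by linarith
  then show ?thesis
  proof cases
    case A
    then obtain k where n: "n = Suc k" using assms by (cases n) auto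
    obtain a where ja: "j = Suc a" using A by (cases j) auto
    show ?thesis
    proof (cases i)
      case 0
      obtain b where k: "k = a + b" using assms n ja by (metis Suc_le_mono le_add_diff_inverse)
      have c: "W 0 eta (a+0+b) \<bullet> W (0+0+a) eps b = W (0+1+a) eps b \<bullet> W 0 eta (a+1+b)"
        using W_comm[where f=eta and p=0 and q=1 and g=eps and p'=1 and q'=0 and k=0 and j=a and r=b] by simp
      have "ss n j = W (Suc a) eps b" "ss (n-1) (j-1) = W a eps b" using s_W n k ja by simp_all
      then show ?thesis using A 0 n k c d_0 by simp
    next
      case (Suc a')
      obtain c where ja': "a = Suc (a' + c)" using A Suc ja by (metis Suc_less_eq less_iff_Suc_add)
      obtain b where k: "k = Suc (a'+c) + b" using assms n ja ja' by (metis Suc_le_mono le_add_diff_inverse)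
      have e1: "dd (n+1) i = W a' Dl (Suc (c+b))" using d_mid[of a' "Suc (c+b)"] n k Suc by simp
      have e2: "dd n i = W a' Dl (c+b)" using d_mid[of a' "c+b"] n k Suc by simp
      have e3: "ss n j = W (Suc (Suc (a'+c))) eps b" using s_W n k ja ja' by simp
      have e4: "ss (n-1) (j-1) = W (Suc (a'+c)) eps b" using s_W n k ja ja' by simp
      have cm: "W (a'+2+c) eps b \<bullet> W a' Dl (c+1+b) = W a' Dl (c+0+b) \<bullet> W (a'+1+c) eps b"
        using W_comm2[where f=Dl and p=1 and q=2 and g=eps and p'=1 and q'=0 and k=a' and j=c and r=b] by simp
      show ?thesis unfolding e1 e2 e3 e4 using A cm by simp
    qed
  next
    case B
    show ?thesis
    proof (cases j)
      case 0
      have "ss n j \<bullet> dd (n+1) i = W 0 (eps \<bullet> eta) n" using B 0 s_W d_0[of n] by (simp add: W_merge)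
      then show ?thesis using B 0 eps_eta CH_P by simp
    next
      case (Suc a)
      obtain b where n: "n = Suc (a+b)" using assms Suc by (metis Suc_le_D add_Suc_right le_add_diff_inverse Suc_le_mono)
      have "ss n j \<bullet> dd (n+1) i = W a (W 1 eps 0 \<bullet> Dl) b"
        using B Suc n s_W d_mid[of a b] by (simp add: W_split W_nest)
      then show ?thesis using B counitW CH_P n by simp
    qed
  next
    case Cc
    show ?thesis
    proof (cases "j = n")
      case True
      have "ss n j \<bullet> dd (n+1) i = W n (eps \<bullet> sg) 0" using Cc True s_W d_last[of n] by (simp add: W_merge)
      then show ?thesis using Cc eps_sg CH_P by simp
    next
      case False
      then obtain b where n: "n = Suc (j+b)" using assms by (metis add_Suc_right le_neq_implies_less less_iff_Suc_add)
      have "ss n j \<bullet> dd (n+1) i = W j (W 0 eps 1 \<bullet> Dl) b"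
        using Cc n s_W d_mid[of j b] by (simp add: W_split W_nest)
      then show ?thesis using Cc counitW CH_P n by simp
    qed
  next
    case Dd
    obtain c where i0: "i = Suc (Suc j + c)" using Dd less_iff_Suc_add by auto
    then have i: "i = Suc (Suc (j + c))" by simp
    show ?thesis
    proof (cases "i = n + 1")
      case True
      then obtain b where n: "n = Suc (j + c)" and b: "b = c" using i by simp
      have e1: "dd (n+1) i = W n sg 0" using True d_last[of n] by simp
      have e2: "dd n (i-1) = W (j+c) sg 0" using True n d_last[of "j+c"] by simp
      have cm: "W j eps (c+1+0) \<bullet> W (j+1+c) sg 0 = W (j+0+c) sg 0 \<bullet> W j eps (c+0+0)"
        using W_comm[where f=eps and p=1 and q=0 and g=sg and p'=0 and q'=1 and k=j and j=c and r=0] by simp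
      have "ss n j = W j eps (Suc c)" "ss (n-1) j = W j eps c" using s_W n by simp_all
      then show ?thesis unfolding e1 e2 using Dd cm n by simp
    next
      case False
      then have "Suc (Suc (j + c)) \<le> n" using assms i by simp
      then obtain b where n0: "n = Suc (Suc (j + c)) + b" by (metis le_add_diff_inverse)
      then have n: "n = Suc (Suc (j + c + b))" by simp
      have e1: "dd (n+1) i = W (Suc (j+c)) Dl b" using d_mid[of "Suc (j+c)" b] n i by simp
      have e2: "dd n (i-1) = W (j+c) Dl b" using d_mid[of "j+c" b] n i by simp
      have cm: "W j eps (c+2+b) \<bullet> W (j+1+c) Dl b = W (j+0+c) Dl b \<bullet> W j eps (c+1+b)"
        using W_comm[where f=eps and p=1 and q=0 and g=Dl and p'=1 and q'=2 and k=j and j=c and r=b] by simp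
      have "ss n j = W j eps (Suc (Suc (c+b)))" "ss (n-1) j = W j eps (Suc (c+b))" using s_W n by simp_all
      then show ?thesis unfolding e1 e2 using Dd cm by simp
    qed
  qed
qed


lemma cyc_d: assumes "1 \<le> i" "i \<le> n" shows "tt n \<bullet> dd n i = dd n (i-1) \<bullet> tt (n-1)"
proof -
  obtain k where n: "n = Suc k" using assms by (cases n) auto
  show ?thesis
  proof (cases "i = 1")
    case True
    show ?thesis
    proof (cases k)
      case 0
      then show ?thesis using True n cyc1_11 d_last[of 0] d_0[of 0] t_0 t_Suc by simp
    next
      case (Suc j)
      then show ?thesis using True n cyc1_first[of j] d_mid[of 0 j] d_0 t_Suc by simp
    qed
  next
    case False
    then have i2: "2 \<le> i" using assms by simp
    show ?thesis
    proof (cases "i = n")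
      case True
      obtain j where k: "k = Suc j" using i2 True n by (cases k) auto
      then show ?thesis using True n cyc1_last[of j] d_last d_mid[of j 0] t_Suc by simp
    next
      case False
      obtain a where i0: "i = (i - 2) + 2" and "a = i - 2" using i2 by simp
      then have i: "i = Suc (Suc a)" by simp
      then have "Suc (Suc a) < n" using assms False by simp
      then obtain b where n20: "n = Suc (Suc (Suc a) + b)" using less_iff_Suc_add by auto
      then have n2: "n = Suc (Suc (Suc (a + b)))" by simp
      have e1: "dd n i = W (Suc a) Dl b" using d_mid[of "Suc a" b] n2 i by simp
      have e2: "dd n (i-1) = W a Dl (Suc b)" using d_mid[of a "Suc b"] n2 i by simp
      show ?thesis unfolding e1 e2 using n2 cyc1_mid[of a b] t_Suc by simp
    qed
  qed
qed

lemma cyc_d0: "1 \<le> n \<Longrightarrow> tt n \<bullet> dd n 0 = dd n n"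
  by (cases n) (simp_all add: t_Suc d_0 d_last cyc0)

lemma cyc_s: assumes "1 \<le> i" "i \<le> n" shows "tt n \<bullet> ss n i = ss n (i-1) \<bullet> tt (n+1)"
proof -
  obtain a where i: "i = Suc a" using assms by (cases i) auto
  obtain b where n: "n = Suc (a+b)" using assms i by (metis Suc_le_D add_Suc le_add_diff_inverse Suc_le_mono)
  have "ss n i = W (Suc a) eps b" "ss n (i-1) = W a eps (Suc b)" using s_W n i by simp_all
  then show ?thesis using n cyc2[of a b] t_Suc by simp
qed

lemma cyc_pow: "cpow C (CH C H n) (tt n) (n+1) = Id C (CH C H n)"
proof (cases n)
  case 0 then show ?thesis by (simp add: CH_P t_0)
next
  case (Suc k)
  have "cpow C (P (Suc k)) (tau k) (Suc (Suc k)) = idn (Suc k)" by (rule tau_pow)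
  then show ?thesis using Suc by (simp add: CH_P t_Suc del: cpow.simps)
qed

lemma cp_Suc': "Dom C f = Ob \<Longrightarrow> Cod C f = Ob \<Longrightarrow> cpow C Ob f (Suc i) = cpow C Ob f i \<bullet> f"
proof (induction i)
  case 0 then show ?case by simp
next
  case (Suc i)
  have t: "Dom C (cpow C Ob f i) = Ob \<and> Cod C (cpow C Ob f i) = Ob" using Suc.prems by simp
  have "cpow C Ob f (Suc (Suc i)) = f \<bullet> (cpow C Ob f i \<bullet> f)" using Suc by simp
  also have "\<dots> = cpow C Ob f (Suc i) \<bullet> f" using t Suc.prems by simp
  finally show ?case .
qed

lemma cp_add: "Dom C f = Ob \<Longrightarrow> Cod C f = Ob \<Longrightarrow> cpow C Ob f (a+b) = cpow C Ob f a \<bullet> cpow C Ob f b"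
proof (induction a)
  case 0 then show ?case by simp
next
  case (Suc a)
  have t: "Dom C (cpow C Ob f a) = Ob \<and> Cod C (cpow C Ob f a) = Ob" "Dom C (cpow C Ob f b) = Ob \<and> Cod C (cpow C Ob f b) = Ob"
    using Suc.prems by simp_all
  show ?case using Suc t by simp
qed

lemma cyc_s0: "tt n \<bullet> ss n 0 = ss n n \<bullet> (tt (n+1) \<bullet> tt (n+1))"
proof -
  let ?f = "tt n" and ?g = "tt (Suc n)"
  have tf: "Dom C ?f = P n" "Cod C ?f = P n" using t_typ by simp_all
  have tg: "Dom C ?g = P (Suc n)" "Cod C ?g = P (Suc n)" using t_typ by simp_all
  have ts: "\<And>i. i \<le> n \<Longrightarrow> Dom C (ss n i) = P (Suc n) \<and> Cod C (ss n i) = P n" using s_typ by simp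
  have tfp: "\<And>j. Dom C (cpow C (P n) ?f j) = P n \<and> Cod C (cpow C (P n) ?f j) = P n" using tf by simp
  have tgp: "\<And>j. Dom C (cpow C (P (Suc n)) ?g j) = P (Suc n) \<and> Cod C (cpow C (P (Suc n)) ?g j) = P (Suc n)" using tg by simp
  have st1: "j \<le> n \<Longrightarrow> cpow C (P n) ?f j \<bullet> ss n n = ss n (n-j) \<bullet> cpow C (P (Suc n)) ?g j" for j
  proof (induction j)
    case 0 then show ?case using ts[of n] by simp
  next
    case (Suc j)
    have IH: "cpow C (P n) ?f j \<bullet> ss n n = ss n (n-j) \<bullet> cpow C (P (Suc n)) ?g j" using Suc by simp
    have c: "?f \<bullet> ss n (n-j) = ss n (n - Suc j) \<bullet> ?g" using cyc_s[of "n-j" n] Suc.prems by simp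
    have "cpow C (P n) ?f (Suc j) \<bullet> ss n n = ?f \<bullet> (cpow C (P n) ?f j \<bullet> ss n n)"
      using tf tfp ts[of n] by simp
    also have "\<dots> = (?f \<bullet> ss n (n-j)) \<bullet> cpow C (P (Suc n)) ?g j" unfolding IH using tf tgp ts[of "n-j"] by simp
    also have "\<dots> = ss n (n - Suc j) \<bullet> cpow C (P (Suc n)) ?g (Suc j)" unfolding c using tg tgp ts[of "n - Suc j"] by simp
    finally show ?case .
  qed
  have gid: "cpow C (P (Suc n)) ?g (Suc (Suc n)) = idn (Suc n)" using cyc_pow[of "Suc n"] CH_P by simp
  have fid: "cpow C (P n) ?f (Suc n) = idn n" using cyc_pow[of n] CH_P by simp
  have g2: "cpow C (P (Suc n)) ?g (Suc (Suc n)) = cpow C (P (Suc n)) ?g n \<bullet> (?g \<bullet> ?g)"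
    using cp_add[OF tg, of n 2] tg by simp
  have "?f \<bullet> ss n 0 = (?f \<bullet> ss n 0) \<bullet> cpow C (P (Suc n)) ?g (Suc (Suc n))"
    unfolding gid using tf ts[of 0] by simp
  also have "\<dots> = ?f \<bullet> ((ss n 0 \<bullet> cpow C (P (Suc n)) ?g n) \<bullet> (?g \<bullet> ?g))"
    unfolding g2 using tf tg tgp ts[of 0] by simp
  also have "\<dots> = ?f \<bullet> ((cpow C (P n) ?f n \<bullet> ss n n) \<bullet> (?g \<bullet> ?g))"
    using st1[of n] by simp
  also have "\<dots> = cpow C (P n) ?f (Suc n) \<bullet> ss n n \<bullet> (?g \<bullet> ?g)"
    using tf tg tfp ts[of n] by simp
  also have "\<dots> = ss n n \<bullet> (?g \<bullet> ?g)" unfolding fid using tg ts[of n] by simp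
  finally show ?thesis by simp
qed

lemma main: "cocyclic_object C (CH C H) (CH_coface C H eta Dl sg) (CH_codeg C H eps) (CH_cyc C H m Dl S dl sg)"
  unfolding cocyclic_object_def CH_P
  using d_typ s_typ t_typ cofaces codegs mixed[unfolded CH_P] cyc_d cyc_d0 cyc_s cyc_s0 cyc_pow[unfolded CH_P]
  by auto

end

theorem theorem2p2:
  fixes C :: "('o, 'm) bmcat"
    and H :: 'o
    and m eta Dl eps S dl sg :: 'm
  assumes "strict_braided_monoidal_cat C"
    and "hopf_algebra C H m eta Dl eps S"
    and "Comp C (Braid C H H) (Braid C H H) = Id C (TObj C H H)"
    and "bmpi C H m eta Dl eps S dl sg"
  shows "cocyclic_object C (CH C H) (CH_coface C H eta Dl sg) (CH_codeg C H eps)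
           (CH_cyc C H m Dl S dl sg)"
proof -
  interpret bsetup C H m eta Dl eps S dl sg
    using assms by (simp add: bsetup_def bsetup_axioms_def)
  show ?thesis by (rule main)
qed

end
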